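(* Let $\rho$ be an invariant state supported on $V\ominus W$. Then $\rho$ is invariant-extremal if and only if the state $\tau=\frac{1}{\operatorname{tr}(|Z|_1\rho)}|Z|_1\rho$ is extremal.
   Context: Fix integers $N\ge 2$ and $n_1\ge n_2\ge\dots\ge n_N\ge 1$. Let $\mathcal H$ be a finite-dimensional complex Hilbert space with orthonormal basis $\{|-\rangle,|+\rangle\}\cup\{|a_k\rangle:1\le k\le N,\ 0\le a\le n_k-1\}$. For vectors $x,y$, $|x\rangle\langle y|$ denotes the operator $u\mapsto\langle y,u\rangle x$. Put $E_k=\mathrm{span}\{|a_k\rangle:0\le a\le n_k-1\}$, $P_k$ the orthogonal projection onto $E_k$, $P_\pm=|\pm\rangle\langle\pm|$, $\zeta_k=e^{2\pi i/n_k}$, and $\varphi_{a_k}=n_k^{-1/2}\sum_{b=0}^{n_k-1}\zeta_k^{-ba}|b_k\rangle$ for $0\le a\le n_k-1$. For $1\le k\le N-1$ let $Z_k=n_k^{-1/2}\sum_{b=0}^{n_{k+1}-1}\sum_{a=0}^{n_k-1}\zeta_k^{ba}|b_{k+1}\rangle\langle a_k|$ (an operator on $\mathcal H$), $|Z|_k=Z_k^*Z_k$. The transport operator is $Z=\sum_{k=1}^{N-1}Z_k$. Let $\omega$ range over the set $\{\omega_+,\omega_-,\omega_1,\dots,\omega_{N-1}\}$ of (distinct) Bohr frequencies, and let $\Gamma_{\pm,\omega}>0$, $\gamma_{\pm,\omega}\in\mathbb R$ be constants. Kraus operators: $L_{-,\omega_+}=\sqrt{n_1\Gamma_{-,\omega_+}}|\varphi_{0_1}\rangle\langle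 +|$, $L_{+,\omega_+}=\sqrt{n_1\Gamma_{+,\omega_+}}|+\rangle\langle\varphi_{0_1}|$, $L_{-,\omega_k}=\sqrt{\Gamma_{-,\omega_k}}Z_k$, $L_{+,\omega_k}=\sqrt{\Gamma_{+,\omega_k}}Z_k^*$ ($1\le k\le N-1$), $L_{-,\omega_-}=\sqrt{\Gamma_{-,\omega_-}}|-\rangle\langle\varphi_{0_N}|$, $L_{+,\omega_-}=0$. Effective Hamiltonian $H_{\mathrm{eff}}=n_1\gamma_{-,\omega_+}P_+-n_1\gamma_{+,\omega_+}|\varphi_{0_1}\rangle\langle\varphi_{0_1}|+\gamma_{-,\omega_-}|\varphi_{0_N}\rangle\langle\varphi_{0_N}|-\gamma_{+,\omega_-}P_-+\sum_{k=1}^{N-1}(\gamma_{-,\omega_k}|Z|_k-\gamma_{+,\omega_k}P_{k+1})$. The generator is $\mathcal L(\rho)=-i[H_{\mathrm{eff}},\rho]+\sum_{\omega}\sum_{\epsilon=\pm}\big(L_{\epsilon,\omega}\rho L_{\epsilon,\omega}^*-\tfrac12\{L_{\epsilon,\omega}^*L_{\epsilon,\omega},\rho\}\big)$. A state is a positive operator of trace one; it is invariant if $\mathcal L(\rho)=0$; a state is extremal if it is not a nontrivial convex combination of two different states; it is invariant-extremal if it is invariant and is not a nontrivial convex combination of two different invariant states; an operator is supported on a subspace $E$ if its range is contained in $E$. The interaction-free subspace is $W=\bigcap_{\omega,\epsilon=\pm}(\ker L_{\epsilon,\omega}\cap\ker L_{\epsilon,\omega}^* )$. $V$ is the orthogonal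 complement of the set $\{|-\rangle,|+\rangle,Z^n\varphi_{0_1},Z^{*n}\varphi_{0_N},Z^{*s}\varphi_{0_{2m+1}}:0\le n\le N-1,\ 1\le m\le (N-1)/2,\ 1\le s\le 2m\}$. $A\ominus B$ denotes $A\cap B^\perp$. *)

theory Defs
  imports Complex_Main
begin

text \<open>Basis labels: Mn = |->, Pl = |+>, St k a = |a_k> (1 <= k <= N, 0 <= a <= n_k - 1).\<close>
datatype bidx = Mn | Pl | St nat nat

type_synonym cvec = "bidx \<Rightarrow> complex"
type_synonym cop = "bidx \<Rightarrow> bidx \<Rightarrow> complex"

definition basis :: "nat \<Rightarrow> (nat \<Rightarrow> nat) \<Rightarrow> bidx set" where
  "basis N n = {Mn, Pl} \<union> {St k a | k a. 1 \<le> k \<and> k \<le> N \<and> a < n k}"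

definition hvecs :: "bidx set \<Rightarrow> cvec set" where
  "hvecs B = {v. \<forall>i. i \<notin> B \<longrightarrow> v i = 0}"

definition hops :: "bidx set \<Rightarrow> cop set" where
  "hops B = {A. \<forall>i j. i \<notin> B \<or> j \<notin> B \<longrightarrow> A i j = 0}"

definition inner_h :: "bidx set \<Rightarrow> cvec \<Rightarrow> cvec \<Rightarrow> complex" where
  "inner_h B u v = (\<Sum>i\<in>B. cnj (u i) * v i)"

definition app :: "bidx set \<Rightarrow> cop \<Rightarrow> cvec \<Rightarrow> cvec" where
  "app B A v = (\<lambda>i. \<Sum>j\<in>B. A i j * v j)"

definition mmul :: "bidx set \<Rightarrow> cop \<Rightarrow> cop \<Rightarrow> cop" where
  "mmul B A C = (\<lambda>i j. \<Sum>l\<in>B. A i l * C l j)"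

definition adj :: "cop \<Rightarrow> cop" where
  "adj A = (\<lambda>i j. cnj (A j i))"

definition opadd :: "cop \<Rightarrow> cop \<Rightarrow> cop" where
  "opadd A C = (\<lambda>i j. A i j + C i j)"

definition opsub :: "cop \<Rightarrow> cop \<Rightarrow> cop" where
  "opsub A C = (\<lambda>i j. A i j - C i j)"

definition opscale :: "complex \<Rightarrow> cop \<Rightarrow> cop" where
  "opscale c A = (\<lambda>i j. c * A i j)"

definition trace_h :: "bidx set \<Rightarrow> cop \<Rightarrow> complex" where
  "trace_h B A = (\<Sum>i\<in>B. A i i)"

definition ket :: "bidx \<Rightarrow> cvec" where
  "ket b = (\<lambda>j. if j = b then 1 else 0)"

definition ketbra :: "cvec \<Rightarrow> cvec \<Rightarrow> cop" where
  "ketbra x y = (\<lambda>i j. x i * cnj (y j))"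

definition op_range :: "bidx set \<Rightarrow> cop \<Rightarrow> cvec set" where
  "op_range B A = {app B A v | v. v \<in> hvecs B}"

definition supported_on :: "bidx set \<Rightarrow> cop \<Rightarrow> cvec set \<Rightarrow> bool" where
  "supported_on B A E \<longleftrightarrow> op_range B A \<subseteq> E"

definition kernel_h :: "bidx set \<Rightarrow> cop \<Rightarrow> cvec set" where
  "kernel_h B A = {v \<in> hvecs B. app B A v = (\<lambda>_. 0)}"

definition ortho_compl :: "bidx set \<Rightarrow> cvec set \<Rightarrow> cvec set" where
  "ortho_compl B S = {v \<in> hvecs B. \<forall>u\<in>S. inner_h B u v = 0}"

definition is_state :: "bidx set \<Rightarrow> cop \<Rightarrow> bool" where
  "is_state B \<rho> \<longleftrightarrow> \<rho> \<in> hops B \<and>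
     (\<forall>v\<in>hvecs B. Im (inner_h B v (app B \<rho> v)) = 0 \<and> Re (inner_h B v (app B \<rho> v)) \<ge> 0) \<and>
     trace_h B \<rho> = 1"

definition convex_comb :: "real \<Rightarrow> cop \<Rightarrow> cop \<Rightarrow> cop" where
  "convex_comb t A C = (\<lambda>i j. complex_of_real t * A i j + complex_of_real (1 - t) * C i j)"

definition extremal_state :: "bidx set \<Rightarrow> cop \<Rightarrow> bool" where
  "extremal_state B \<rho> \<longleftrightarrow> is_state B \<rho> \<and>
     \<not> (\<exists>\<sigma>1 \<sigma>2 t. is_state B \<sigma>1 \<and> is_state B \<sigma>2 \<and> \<sigma>1 \<noteq> \<sigma>2 \<and> 0 < t \<and> t < 1 \<and>
          \<rho> = convex_comb t \<sigma>1 \<sigma>2)"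

datatype sgn = Neg | Pos
datatype freq = WPlus | WMinus | W nat

definition freqs :: "nat \<Rightarrow> freq set" where
  "freqs N = {WPlus, WMinus} \<union> {W k | k. 1 \<le> k \<and> k \<le> N - 1}"

definition zeta :: "(nat \<Rightarrow> nat) \<Rightarrow> nat \<Rightarrow> complex" where
  "zeta n k = cis (2 * pi / real (n k))"

definition phi :: "(nat \<Rightarrow> nat) \<Rightarrow> nat \<Rightarrow> nat \<Rightarrow> cvec" where
  "phi n k a = (\<lambda>i. case i of
      St k' b \<Rightarrow> if k' = k \<and> b < n k
                 then inverse (zeta n k ^ (b * a)) / complex_of_real (sqrt (real (n k))) else 0
    | _ \<Rightarrow> 0)"

definition Zk :: "(nat \<Rightarrow> nat) \<Rightarrow> nat \<Rightarrow> cop" where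
  "Zk n k = (\<lambda>i j. case (i, j) of
      (St k1 b, St k2 a) \<Rightarrow>
        if k1 = k + 1 \<and> k2 = k \<and> b < n (k + 1) \<and> a < n k
        then zeta n k ^ (b * a) / complex_of_real (sqrt (real (n k))) else 0
    | _ \<Rightarrow> 0)"

definition Zabs :: "nat \<Rightarrow> (nat \<Rightarrow> nat) \<Rightarrow> nat \<Rightarrow> cop" where
  "Zabs N n k = mmul (basis N n) (adj (Zk n k)) (Zk n k)"

definition Ztot :: "nat \<Rightarrow> (nat \<Rightarrow> nat) \<Rightarrow> cop" where
  "Ztot N n = (\<lambda>i j. \<Sum>k\<in>{1..N-1}. Zk n k i j)"

definition Pk :: "(nat \<Rightarrow> nat) \<Rightarrow> nat \<Rightarrow> cop" where
  "Pk n k = (\<lambda>i j. case i of St k' a \<Rightarrow> if i = j \<and> k' = k \<and> a < n k then 1 else 0 | _ \<Rightarrow> 0)"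

definition Kraus :: "nat \<Rightarrow> (nat \<Rightarrow> nat) \<Rightarrow> (sgn \<Rightarrow> freq \<Rightarrow> real) \<Rightarrow> sgn \<Rightarrow> freq \<Rightarrow> cop" where
  "Kraus N n \<Gamma> e w = (case (e, w) of
      (Neg, WPlus) \<Rightarrow> opscale (complex_of_real (sqrt (real (n 1) * \<Gamma> Neg WPlus))) (ketbra (phi n 1 0) (ket Pl))
    | (Pos, WPlus) \<Rightarrow> opscale (complex_of_real (sqrt (real (n 1) * \<Gamma> Pos WPlus))) (ketbra (ket Pl) (phi n 1 0))
    | (Neg, W k) \<Rightarrow> opscale (complex_of_real (sqrt (\<Gamma> Neg (W k)))) (Zk n k)
    | (Pos, W k) \<Rightarrow> opscale (complex_of_real (sqrt (\<Gamma> Pos (W k)))) (adj (Zk n k))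
    | (Neg, WMinus) \<Rightarrow> opscale (complex_of_real (sqrt (\<Gamma> Neg WMinus))) (ketbra (ket Mn) (phi n N 0))
    | (Pos, WMinus) \<Rightarrow> (\<lambda>_ _. 0))"

definition Heff :: "nat \<Rightarrow> (nat \<Rightarrow> nat) \<Rightarrow> (sgn \<Rightarrow> freq \<Rightarrow> real) \<Rightarrow> cop" where
  "Heff N n \<gamma> = (\<lambda>i j.
      complex_of_real (real (n 1) * \<gamma> Neg WPlus) * ketbra (ket Pl) (ket Pl) i j
    - complex_of_real (real (n 1) * \<gamma> Pos WPlus) * ketbra (phi n 1 0) (phi n 1 0) i j
    + complex_of_real (\<gamma> Neg WMinus) * ketbra (phi n N 0) (phi n N 0) i j
    - complex_of_real (\<gamma> Pos WMinus) * ketbra (ket Mn) (ket Mn) i j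
    + (\<Sum>k\<in>{1..N-1}. complex_of_real (\<gamma> Neg (W k)) * Zabs N n k i j
                     - complex_of_real (\<gamma> Pos (W k)) * Pk n (k + 1) i j))"

definition Lgen :: "nat \<Rightarrow> (nat \<Rightarrow> nat) \<Rightarrow> (sgn \<Rightarrow> freq \<Rightarrow> real) \<Rightarrow> (sgn \<Rightarrow> freq \<Rightarrow> real) \<Rightarrow> cop \<Rightarrow> cop" where
  "Lgen N n \<Gamma> \<gamma> \<rho> = (let B = basis N n; H = Heff N n \<gamma> in
     (\<lambda>i j. - \<i> * (mmul B H \<rho> i j - mmul B \<rho> H i j)
       + (\<Sum>w\<in>freqs N. \<Sum>e\<in>{Neg, Pos}. (let L = Kraus N n \<Gamma> e w; LL = mmul B (adj L) L in
            mmul B (mmul B L \<rho>) (adj L) i j - (1/2) * (mmul B LL \<rho> i j + mmul B \<rho> LL i j)))))"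

definition invariant_state :: "nat \<Rightarrow> (nat \<Rightarrow> nat) \<Rightarrow> (sgn \<Rightarrow> freq \<Rightarrow> real) \<Rightarrow> (sgn \<Rightarrow> freq \<Rightarrow> real) \<Rightarrow> cop \<Rightarrow> bool" where
  "invariant_state N n \<Gamma> \<gamma> \<rho> \<longleftrightarrow> is_state (basis N n) \<rho> \<and> Lgen N n \<Gamma> \<gamma> \<rho> = (\<lambda>_ _. 0)"

definition invariant_extremal :: "nat \<Rightarrow> (nat \<Rightarrow> nat) \<Rightarrow> (sgn \<Rightarrow> freq \<Rightarrow> real) \<Rightarrow> (sgn \<Rightarrow> freq \<Rightarrow> real) \<Rightarrow> cop \<Rightarrow> bool" where
  "invariant_extremal N n \<Gamma> \<gamma> \<rho> \<longleftrightarrow> invariant_state N n \<Gamma> \<gamma> \<rho> \<and>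
     \<not> (\<exists>\<sigma>1 \<sigma>2 t. invariant_state N n \<Gamma> \<gamma> \<sigma>1 \<and> invariant_state N n \<Gamma> \<gamma> \<sigma>2 \<and> \<sigma>1 \<noteq> \<sigma>2 \<and>
          0 < t \<and> t < 1 \<and> \<rho> = convex_comb t \<sigma>1 \<sigma>2)"

definition Wfree :: "nat \<Rightarrow> (nat \<Rightarrow> nat) \<Rightarrow> (sgn \<Rightarrow> freq \<Rightarrow> real) \<Rightarrow> cvec set" where
  "Wfree N n \<Gamma> = (\<Inter>w\<in>freqs N. \<Inter>e\<in>{Neg, Pos}.
      kernel_h (basis N n) (Kraus N n \<Gamma> e w) \<inter> kernel_h (basis N n) (adj (Kraus N n \<Gamma> e w)))"

definition Vsub :: "nat \<Rightarrow> (nat \<Rightarrow> nat) \<Rightarrow> cvec set" where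
  "Vsub N n = (let B = basis N n; Z = app B (Ztot N n); Zs = app B (adj (Ztot N n)) in
     ortho_compl B ({ket Mn, ket Pl}
       \<union> {(Z ^^ m) (phi n 1 0) | m. m \<le> N - 1}
       \<union> {(Zs ^^ m) (phi n N 0) | m. m \<le> N - 1}
       \<union> {(Zs ^^ s) (phi n (2 * m + 1) 0) | m s. 1 \<le> m \<and> 2 * m \<le> N - 1 \<and> 1 \<le> s \<and> s \<le> 2 * m}))"

end

theory Submission
  imports Defs "HOL-Library.Function_Algebras"
begin

lemma sum_apply2: "(\<Sum>x\<in>S. (F x :: cop)) i j = (\<Sum>x\<in>S. F x i j)"
  by (induction S rule: infinite_finite_induct) auto

lemma sum_apply1: "(\<Sum>x\<in>S. (F x :: cvec)) i = (\<Sum>x\<in>S. F x i)"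
  by (induction S rule: infinite_finite_induct) auto

lemma mmul_assoc: "mmul B (mmul B X Y) Z = mmul B X (mmul B Y Z)"
  unfolding mmul_def
  by (rule ext, rule ext) (simp add: sum_distrib_left sum_distrib_right mult.assoc, rule sum.swap)

lemma mmul_add_left: "mmul B (X + Y) Z = mmul B X Z + mmul B Y Z"
  unfolding mmul_def by (intro ext) (simp add: algebra_simps sum.distrib)
lemma mmul_add_right: "mmul B Z (X + Y) = mmul B Z X + mmul B Z Y"
  unfolding mmul_def by (intro ext) (simp add: algebra_simps sum.distrib)
lemma mmul_diff_left: "mmul B (X - Y) Z = mmul B X Z - mmul B Y Z"
  unfolding mmul_def by (intro ext) (simp add: algebra_simps sum_subtractf)
lemma mmul_diff_right: "mmul B Z (X - Y) = mmul B Z X - mmul B Z Y"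
  unfolding mmul_def by (intro ext) (simp add: algebra_simps sum_subtractf)
lemma mmul_zero_left[simp]: "mmul B 0 Z = 0"
  unfolding mmul_def by (intro ext) auto
lemma mmul_zero_right[simp]: "mmul B Z 0 = 0"
  unfolding mmul_def by (intro ext) auto
lemma mmul_scale_left: "mmul B (opscale c X) Z = opscale c (mmul B X Z)"
  unfolding mmul_def opscale_def by (intro ext) (auto simp: sum_distrib_left mult.assoc)
lemma mmul_scale_right: "mmul B Z (opscale c X) = opscale c (mmul B Z X)"
  unfolding mmul_def opscale_def by (intro ext) (auto simp: sum_distrib_left algebra_simps)
lemma mmul_sum_left: "mmul B (\<Sum>x\<in>S. F x) Z = (\<Sum>x\<in>S. mmul B (F x) Z)"
  unfolding mmul_def by (intro ext) (auto simp: sum_apply2 sum_distrib_right intro!: sum.swap)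
lemma mmul_sum_right: "mmul B Z (\<Sum>x\<in>S. F x) = (\<Sum>x\<in>S. mmul B Z (F x))"
  unfolding mmul_def by (intro ext) (auto simp: sum_apply2 sum_distrib_left intro!: sum.swap)

lemma opscale_add: "opscale c (X + Y) = opscale c X + opscale c Y"
  unfolding opscale_def by (intro ext) (auto simp: algebra_simps)
lemma opscale_diff: "opscale c (X - Y) = opscale c X - opscale c Y"
  unfolding opscale_def by (intro ext) (auto simp: algebra_simps)
lemma opscale_scale[simp]: "opscale c (opscale d X) = opscale (c * d) X"
  unfolding opscale_def by (intro ext) (auto simp: algebra_simps)
lemma opscale_one[simp]: "opscale 1 X = X"
  unfolding opscale_def by (intro ext) auto
lemma opscale_zero[simp]: "opscale 0 X = 0" "opscale c 0 = 0"
  unfolding opscale_def by (auto intro!: ext)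
lemma opscale_addc: "opscale (c + d) X = opscale c X + opscale d X"
  unfolding opscale_def by (intro ext) (auto simp: algebra_simps)
lemma opscale_diffc: "opscale (c - d) X = opscale c X - opscale d X"
  unfolding opscale_def by (intro ext) (auto simp: algebra_simps)
lemma opscale_sum: "opscale c (\<Sum>x\<in>S. F x) = (\<Sum>x\<in>S. opscale c (F x))"
  unfolding opscale_def by (intro ext) (auto simp: sum_apply2 sum_distrib_left)
lemma opscale_apply[simp]: "opscale c X i j = c * X i j"
  unfolding opscale_def by simp

lemma adj_adj[simp]: "adj (adj X) = X"
  unfolding adj_def by simp
lemma adj_add: "adj (X + Y) = adj X + adj Y"
  unfolding adj_def by (intro ext) auto
lemma adj_diff: "adj (X - Y) = adj X - adj Y"
  unfolding adj_def by (intro ext) auto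
lemma adj_zero[simp]: "adj 0 = 0"
  unfolding adj_def by (intro ext) auto
lemma adj_scale: "adj (opscale c X) = opscale (cnj c) (adj X)"
  unfolding adj_def opscale_def by (intro ext) auto
lemma adj_sum: "adj (\<Sum>x\<in>S. F x) = (\<Sum>x\<in>S. adj (F x))"
  unfolding adj_def by (intro ext) (auto simp: sum_apply2)
lemma adj_mmul: "adj (mmul B X Y) = mmul B (adj Y) (adj X)"
  unfolding adj_def mmul_def by (intro ext) (auto simp: mult.commute)
lemma adj_apply: "adj X i j = cnj (X j i)"
  unfolding adj_def by simp

lemma trace_add: "trace_h B (X + Y) = trace_h B X + trace_h B Y"
  unfolding trace_h_def by (simp add: sum.distrib)
lemma trace_diff: "trace_h B (X - Y) = trace_h B X - trace_h B Y"
  unfolding trace_h_def by (simp add: sum_subtractf)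
lemma trace_scale: "trace_h B (opscale c X) = c * trace_h B X"
  unfolding trace_h_def by (simp add: sum_distrib_left)
lemma trace_sum: "trace_h B (\<Sum>x\<in>S. F x) = (\<Sum>x\<in>S. trace_h B (F x))"
  unfolding trace_h_def by (simp add: sum_apply2, rule sum.swap)
lemma trace_zero[simp]: "trace_h B 0 = 0"
  unfolding trace_h_def by simp
lemma trace_comm: "trace_h B (mmul B X Y) = trace_h B (mmul B Y X)"
  unfolding trace_h_def mmul_def by (simp add: mult.commute, rule sum.swap)
lemma trace_adj: "trace_h B (adj X) = cnj (trace_h B X)"
  unfolding trace_h_def adj_def by simp

lemma app_mmul: "app B (mmul B X Y) v = app B X (app B Y v)"
  unfolding app_def mmul_def
  by (rule ext) (simp add: sum_distrib_left sum_distrib_right mult.assoc, rule sum.swap)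
lemma app_add: "app B (X + Y) v = app B X v + app B Y v"
  unfolding app_def by (intro ext) (simp add: algebra_simps sum.distrib)
lemma app_diff: "app B (X - Y) v = app B X v - app B Y v"
  unfolding app_def by (intro ext) (simp add: algebra_simps sum_subtractf)
lemma app_scale: "app B (opscale c X) v = (\<lambda>i. c * app B X v i)"
  unfolding app_def by (intro ext) (auto simp: sum_distrib_left mult.assoc)
lemma app_sum: "app B (\<Sum>x\<in>S. F x) v = (\<Sum>x\<in>S. app B (F x) v)"
  unfolding app_def by (intro ext) (auto simp: sum_apply2 sum_apply1 sum_distrib_right intro!: sum.swap)
lemma app_zero[simp]: "app B 0 v = 0"
  unfolding app_def by (intro ext) auto
lemma app_vzero[simp]: "app B X 0 = 0"
  unfolding app_def by (intro ext) auto
lemma app_vadd: "app B X (u + v) = app B X u + app B X v"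
  unfolding app_def by (intro ext) (simp add: algebra_simps sum.distrib)
lemma app_vscale: "app B X (\<lambda>i. c * v i) = (\<lambda>i. c * app B X v i)"
  unfolding app_def by (intro ext) (auto simp: sum_distrib_left algebra_simps)

lemma inner_adj: "inner_h B u (app B X v) = inner_h B (app B (adj X) u) v"
  unfolding inner_h_def app_def adj_def
  by (simp add: sum_distrib_left sum_distrib_right mult.assoc mult.left_commute, rule sum.swap)

lemma inner_add_left: "inner_h B (u + w) v = inner_h B u v + inner_h B w v"
  unfolding inner_h_def by (simp add: algebra_simps sum.distrib)
lemma inner_add_right: "inner_h B v (u + w) = inner_h B v u + inner_h B v w"
  unfolding inner_h_def by (simp add: algebra_simps sum.distrib)
lemma inner_scale_left: "inner_h B (\<lambda>i. c * u i) v = cnj c * inner_h B u v"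
  unfolding inner_h_def by (simp add: sum_distrib_left algebra_simps)
lemma inner_scale_right: "inner_h B v (\<lambda>i. c * u i) = c * inner_h B v u"
  unfolding inner_h_def by (simp add: sum_distrib_left algebra_simps)
lemma inner_cnj: "cnj (inner_h B u v) = inner_h B v u"
  unfolding inner_h_def by (simp add: mult.commute)
lemma inner_self: "inner_h B v v = complex_of_real (\<Sum>i\<in>B. (cmod (v i))\<^sup>2)"
  unfolding inner_h_def of_real_sum by (intro sum.cong refl) (metis complex_norm_square mult.commute)
lemma inner_self_zero:
  assumes "finite B" "inner_h B v v = 0" "i \<in> B" shows "v i = 0"
proof -
  have "complex_of_real (\<Sum>i\<in>B. (cmod (v i))\<^sup>2) = 0" using assms(2) by (simp only: inner_self)
  then have "(\<Sum>i\<in>B. (cmod (v i))\<^sup>2) = 0" by (metis of_real_eq_0_iff)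
  then have "\<forall>i\<in>B. (cmod (v i))\<^sup>2 = 0" using assms(1) by (subst (asm) sum_nonneg_eq_0_iff) auto
  then show ?thesis using assms(3) by auto
qed

lemma hopsI: "(\<And>i j. i \<notin> B \<or> j \<notin> B \<Longrightarrow> A i j = 0) \<Longrightarrow> A \<in> hops B"
  unfolding hops_def by auto
lemma hopsD: "A \<in> hops B \<Longrightarrow> i \<notin> B \<or> j \<notin> B \<Longrightarrow> A i j = 0"
  unfolding hops_def by auto
lemma hops_rowD: "A \<in> hops B \<Longrightarrow> i \<notin> B \<Longrightarrow> A i j = 0"
  unfolding hops_def by auto
lemma hops_colD: "A \<in> hops B \<Longrightarrow> j \<notin> B \<Longrightarrow> A i j = 0"
  unfolding hops_def by auto
lemma hops_mmul: "X \<in> hops B \<Longrightarrow> Y \<in> hops B \<Longrightarrow> mmul B X Y \<in> hops B"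
  unfolding hops_def mmul_def by (auto intro!: sum.neutral)
lemma hops_add: "X \<in> hops B \<Longrightarrow> Y \<in> hops B \<Longrightarrow> X + Y \<in> hops B"
  unfolding hops_def by auto
lemma hops_diff: "X \<in> hops B \<Longrightarrow> Y \<in> hops B \<Longrightarrow> X - Y \<in> hops B"
  unfolding hops_def by auto
lemma hops_scale: "X \<in> hops B \<Longrightarrow> opscale c X \<in> hops B"
  unfolding hops_def by auto
lemma hops_adj: "X \<in> hops B \<Longrightarrow> adj X \<in> hops B"
  unfolding hops_def adj_def by auto
lemma hops_zero[simp]: "0 \<in> hops B"
  unfolding hops_def by auto
lemma hops_sum: "(\<And>x. x \<in> S \<Longrightarrow> F x \<in> hops B) \<Longrightarrow> (\<Sum>x\<in>S. F x) \<in> hops B"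
  unfolding hops_def by (auto simp: sum_apply2 intro!: sum.neutral)
lemma hvecs_app: "X \<in> hops B \<Longrightarrow> app B X v \<in> hvecs B"
  unfolding hops_def hvecs_def app_def by (auto intro!: sum.neutral)

lemma hops_eqI:
  assumes "X \<in> hops B" "Y \<in> hops B" "\<And>i j. i \<in> B \<Longrightarrow> j \<in> B \<Longrightarrow> X i j = Y i j"
  shows "X = Y"
proof (intro ext)
  fix i j show "X i j = Y i j"
    by (cases "i \<in> B \<and> j \<in> B") (use assms in \<open>auto simp: hops_def\<close>)
qed

definition psd :: "bidx set \<Rightarrow> cop \<Rightarrow> bool" where
  "psd B X \<longleftrightarrow> (\<forall>v\<in>hvecs B. Im (inner_h B v (app B X v)) = 0 \<and> Re (inner_h B v (app B X v)) \<ge> 0)"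

lemma is_state_alt: "is_state B X \<longleftrightarrow> X \<in> hops B \<and> psd B X \<and> trace_h B X = 1"
  unfolding is_state_def psd_def by auto

lemma ket_hvecs: "i \<in> B \<Longrightarrow> ket i \<in> hvecs B"
  unfolding ket_def hvecs_def by auto
lemma app_ket: "finite B \<Longrightarrow> j \<in> B \<Longrightarrow> app B X (ket j) = (\<lambda>i. X i j)"
  unfolding app_def ket_def by (intro ext) (simp add: if_distrib sum.delta cong: if_cong)
lemma inner_ket: "finite B \<Longrightarrow> i \<in> B \<Longrightarrow> inner_h B (ket i) w = w i"
proof -
  assume "finite B" "i \<in> B"
  have "\<And>ia. cnj (ket i ia) * w ia = (if ia = i then w i else 0)" by (simp add: ket_def)
  then show ?thesis unfolding inner_h_def using \<open>finite B\<close> \<open>i \<in> B\<close> by (simp add: sum.delta)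
qed
lemma hvecs_add: "u \<in> hvecs B \<Longrightarrow> v \<in> hvecs B \<Longrightarrow> u + v \<in> hvecs B"
  unfolding hvecs_def by auto
lemma hvecs_scale: "u \<in> hvecs B \<Longrightarrow> (\<lambda>i. c * u i) \<in> hvecs B"
  unfolding hvecs_def by auto

lemma quad_expand:
  "inner_h B (u + v) (app B X (u + v)) =
   inner_h B u (app B X u) + inner_h B u (app B X v) + inner_h B v (app B X u) + inner_h B v (app B X v)"
  by (simp add: app_vadd inner_add_left inner_add_right)

lemma psd_herm:
  assumes X: "X \<in> hops B" and P: "psd B X" and fin: "finite B"
  shows "adj X = X"
proof (rule hops_eqI[OF hops_adj[OF X] X])
  fix i j assume i: "i \<in> B" and j: "j \<in> B"
  have q: "Im (inner_h B v (app B X v)) = 0" if "v \<in> hvecs B" for v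
    using P that unfolding psd_def by auto
  let ?ci = "(\<lambda>k. \<i> * ket j k)"
  have e1: "inner_h B (ket a) (app B X (ket b)) = X a b" if "a \<in> B" "b \<in> B" for a b
    using that fin by (simp add: app_ket inner_ket)
  have hii: "Im (X i i) = 0" using q[OF ket_hvecs[OF i]] e1[OF i i] by simp
  have hjj: "Im (X j j) = 0" using q[OF ket_hvecs[OF j]] e1[OF j j] by simp
  have s1: "Im (X i i + X i j + X j i + X j j) = 0"
    using q[OF hvecs_add[OF ket_hvecs[OF i] ket_hvecs[OF j]]]
    by (simp add: quad_expand e1 i j)
  have s2: "Im (X i i + \<i> * X i j - \<i> * X j i + X j j) = 0"
    using q[OF hvecs_add[OF ket_hvecs[OF i] hvecs_scale[where c="\<i>", OF ket_hvecs[OF j]]]]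
    by (simp add: quad_expand e1 i j app_vscale inner_scale_left inner_scale_right)
  have "Im (X i j) = - Im (X j i)" using s1 hii hjj by simp
  moreover have "Re (X i j) = Re (X j i)" using s2 hii hjj by simp
  ultimately show "adj X i j = X i j" unfolding adj_def by (simp add: complex_eq_iff)
qed

lemma herm_inner_real:
  assumes "adj X = X"
  shows "cnj (inner_h B v (app B X w)) = inner_h B w (app B X v)"
  by (metis assms inner_adj inner_cnj)

lemma quad_nonneg_zero:
  fixes a b :: real
  assumes "\<And>t. a * t\<^sup>2 + b * t \<ge> 0" "a \<ge> 0"
  shows "b = 0"
proof (rule ccontr)
  assume b: "b \<noteq> 0"
  define t where "t = - b / (a + 1)"
  have d: "a + 1 \<noteq> 0" using assms(2) by simp
  have e1: "a * t + b = b / (a + 1)" using d unfolding t_def by (simp add: field_simps)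
  have "a * t\<^sup>2 + b * t = t * (a * t + b)" by (simp add: power2_eq_square algebra_simps)
  also have "\<dots> = t * (b / (a + 1))" using e1 by simp
  also have "\<dots> = - (b\<^sup>2 / (a + 1)\<^sup>2)" by (simp add: t_def power2_eq_square)
  also have "\<dots> < 0" using b assms(2) by (simp add: divide_pos_pos)
  finally show False using assms(1)[of t] by simp
qed

lemma psd_kernel:
  assumes X: "X \<in> hops B" and P: "psd B X" and fin: "finite B"
    and v: "v \<in> hvecs B" and z: "inner_h B v (app B X v) = 0"
  shows "app B X v = 0"
proof -
  have H: "adj X = X" by (rule psd_herm[OF X P fin])
  define w where "w = app B X v"
  have wv: "w \<in> hvecs B" unfolding w_def by (rule hvecs_app[OF X])
  have key: "Re (inner_h B w w) = 0"
  proof -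
    define a where "a = Re (inner_h B w (app B X w))"
    define b where "b = 2 * Re (inner_h B w w)"
    have a0: "a \<ge> 0" using P wv unfolding psd_def a_def by auto
    have "a * t\<^sup>2 + b * t \<ge> 0" for t :: real
    proof -
      let ?u = "v + (\<lambda>i. complex_of_real t * w i)"
      have "?u \<in> hvecs B" by (intro hvecs_add v hvecs_scale wv)
      then have ge: "Re (inner_h B ?u (app B X ?u)) \<ge> 0" using P unfolding psd_def by auto
      have c1: "inner_h B v (app B X w) = inner_h B w w"
        unfolding w_def by (metis H inner_adj)
      have c2: "inner_h B w (app B X v) = inner_h B w w" unfolding w_def ..
      have "Re (inner_h B ?u (app B X ?u)) = a * t\<^sup>2 + b * t"
        by (simp add: quad_expand app_vscale inner_scale_left inner_scale_right z c1 c2 a_def b_def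
            power2_eq_square algebra_simps)
      then show ?thesis using ge by simp
    qed
    then have "b = 0" using quad_nonneg_zero a0 by blast
    then show ?thesis unfolding b_def by simp
  qed
  have "inner_h B w w = 0"
    using key by (simp add: inner_self)
  then have "\<forall>i\<in>B. w i = 0" using inner_self_zero[OF fin] by blast
  then show ?thesis using wv unfolding w_def hvecs_def by (intro ext) auto
qed

lemma psd_add: "psd B X \<Longrightarrow> psd B Y \<Longrightarrow> psd B (X + Y)"
  unfolding psd_def by (auto simp: app_add inner_add_right)

lemma psd_scale: "psd B X \<Longrightarrow> c \<ge> 0 \<Longrightarrow> psd B (opscale (complex_of_real c) X)"
  unfolding psd_def by (auto simp: app_scale inner_scale_right)

lemma psd_zero: "psd B 0"
  unfolding psd_def inner_h_def by simp

lemma psd_sum: "(\<And>x. x \<in> S \<Longrightarrow> psd B (F x)) \<Longrightarrow> psd B (\<Sum>x\<in>S. F x)"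
  by (induction S rule: infinite_finite_induct) (auto intro: psd_add psd_zero)

lemma psd_conj:
  assumes "psd B X" "A \<in> hops B"
  shows "psd B (mmul B (mmul B A X) (adj A))"
  unfolding psd_def
proof
  fix v assume "v \<in> hvecs B"
  have e: "inner_h B v (app B (mmul B (mmul B A X) (adj A)) v) =
        inner_h B (app B (adj A) v) (app B X (app B (adj A) v))"
    by (simp add: app_mmul inner_adj)
  have "app B (adj A) v \<in> hvecs B" by (rule hvecs_app[OF hops_adj[OF assms(2)]])
  then show "Im (inner_h B v (app B (mmul B (mmul B A X) (adj A)) v)) = 0 \<and>
        0 \<le> Re (inner_h B v (app B (mmul B (mmul B A X) (adj A)) v))"
    using assms(1) unfolding e psd_def by auto
qed

lemma trace_as_inner: "finite B \<Longrightarrow> trace_h B X = (\<Sum>i\<in>B. inner_h B (ket i) (app B X (ket i)))"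
  unfolding trace_h_def by (intro sum.cong refl) (simp add: app_ket inner_ket)

lemma psd_trace_real: "finite B \<Longrightarrow> psd B X \<Longrightarrow> Im (trace_h B X) = 0 \<and> Re (trace_h B X) \<ge> 0"
  by (simp add: trace_as_inner) (auto simp: psd_def ket_hvecs intro!: sum_nonneg)

lemma psd_trace_zero:
  assumes X: "X \<in> hops B" and P: "psd B X" and fin: "finite B" and t: "trace_h B X = 0"
  shows "X = 0"
proof -
  have nn: "\<forall>i\<in>B. Re (inner_h B (ket i) (app B X (ket i))) \<ge> 0"
    using P unfolding psd_def by (auto simp: ket_hvecs)
  have "Re (trace_h B X) = (\<Sum>i\<in>B. Re (inner_h B (ket i) (app B X (ket i))))"
    using fin by (simp add: trace_as_inner)
  then have "(\<Sum>i\<in>B. Re (inner_h B (ket i) (app B X (ket i)))) = 0" using t by simp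
  then have "\<forall>i\<in>B. Re (inner_h B (ket i) (app B X (ket i))) = 0"
    using nn fin by (subst (asm) sum_nonneg_eq_0_iff) auto
  moreover have "\<forall>i\<in>B. Im (inner_h B (ket i) (app B X (ket i))) = 0"
    using P unfolding psd_def by (auto simp: ket_hvecs)
  ultimately have "\<forall>i\<in>B. inner_h B (ket i) (app B X (ket i)) = 0"
    by (simp add: complex_eq_iff)
  then have "\<forall>i\<in>B. app B X (ket i) = 0"
    using psd_kernel[OF X P fin] ket_hvecs by blast
  then have "\<forall>i\<in>B. \<forall>j. X j i = 0" using fin by (auto simp: app_ket fun_eq_iff)
  then show ?thesis using X by (intro hops_eqI) auto
qed

lemma fro_eq: "trace_h B (mmul B (adj X) X) = complex_of_real (\<Sum>i\<in>B. \<Sum>l\<in>B. (cmod (X l i))\<^sup>2)"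
  unfolding trace_h_def mmul_def adj_def of_real_sum
  by (intro sum.cong refl) (metis complex_norm_square mult.commute)

lemma fro_real: "Im (trace_h B (mmul B (adj X) X)) = 0" "Re (trace_h B (mmul B (adj X) X)) \<ge> 0"
  unfolding fro_eq by (auto intro!: sum_nonneg)

lemma fro_zero:
  assumes "finite B" "X \<in> hops B" "Re (trace_h B (mmul B (adj X) X)) = 0"
  shows "X = 0"
proof -
  have "(\<Sum>i\<in>B. \<Sum>l\<in>B. (cmod (X l i))\<^sup>2) = 0" using assms(3) unfolding fro_eq by simp
  then have "\<forall>i\<in>B. (\<Sum>l\<in>B. (cmod (X l i))\<^sup>2) = 0"
    using assms(1) by (subst (asm) sum_nonneg_eq_0_iff) (auto intro: sum_nonneg)
  then have "\<forall>i\<in>B. \<forall>l\<in>B. (cmod (X l i))\<^sup>2 = 0"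
    using assms(1) by (subst (asm) sum_nonneg_eq_0_iff) auto
  then show ?thesis using assms(2) by (intro hops_eqI) auto
qed

lemma ketbra_mmul: "mmul B (ketbra x y) (ketbra u v) = opscale (inner_h B y u) (ketbra x v)"
  unfolding mmul_def ketbra_def inner_h_def opscale_def
  by (intro ext) (simp add: sum_distrib_left sum_distrib_right algebra_simps)
lemma mmul_ketbra_right: "mmul B A (ketbra x y) = ketbra (app B A x) y"
  unfolding mmul_def ketbra_def app_def
  by (intro ext) (simp add: sum_distrib_right sum_distrib_left mult_ac)
lemma mmul_ketbra_left: "mmul B (ketbra x y) A = ketbra x (app B (adj A) y)"
  unfolding mmul_def ketbra_def app_def adj_def
  by (intro ext) (simp add: sum_distrib_left algebra_simps)
lemma adj_ketbra: "adj (ketbra x y) = ketbra y x"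
  unfolding adj_def ketbra_def by (intro ext) simp
lemma app_ketbra: "app B (ketbra x y) v = (\<lambda>i. x i * inner_h B y v)"
  unfolding app_def ketbra_def inner_h_def by (intro ext) (simp add: sum_distrib_left algebra_simps)
lemma hops_ketbra: "x \<in> hvecs B \<Longrightarrow> y \<in> hvecs B \<Longrightarrow> ketbra x y \<in> hops B"
  unfolding hops_def hvecs_def ketbra_def by auto
lemma ketbra_zero_left[simp]: "ketbra 0 y = 0" unfolding ketbra_def by (intro ext) simp
lemma ketbra_zero_right[simp]: "ketbra x 0 = 0" unfolding ketbra_def by (intro ext) simp

lemma root_sum:
  fixes m b b' :: nat
  assumes "b < m" "b' < m"
  shows "(\<Sum>a<m. cis (2 * pi / real m) ^ (b * a) * cnj (cis (2 * pi / real m) ^ (b' * a)))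
         = (if b = b' then of_nat m else 0)"
proof -
  have m0: "m > 0" using assms by simp
  define d :: real where "d = real b - real b'"
  define w where "w = cis (2 * pi * d / real m)"
  have tm: "cis (2 * pi / real m) ^ (b * a) * cnj (cis (2 * pi / real m) ^ (b' * a)) = w ^ a" for a
  proof -
    have "cis (2 * pi / real m) ^ (b * a) * cnj (cis (2 * pi / real m) ^ (b' * a))
          = cis (real (b * a) * (2 * pi / real m)) * cis (- (real (b' * a) * (2 * pi / real m)))"
      by (simp add: DeMoivre cis_cnj)
    also have "\<dots> = cis (real a * (2 * pi * d / real m))"
      by (simp add: cis_mult d_def algebra_simps diff_divide_distrib)
    also have "\<dots> = w ^ a" by (simp add: w_def DeMoivre)
    finally show ?thesis .
  qed
  have S: "(\<Sum>a<m. cis (2 * pi / real m) ^ (b * a) * cnj (cis (2 * pi / real m) ^ (b' * a)))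
     = (\<Sum>a<m. w ^ a)" by (intro sum.cong refl) (rule tm)
  show ?thesis unfolding S
  proof (cases "b = b'")
    case True
    then have "w = 1" by (simp add: w_def d_def)
    then show "(\<Sum>a<m. w ^ a) = (if b = b' then of_nat m else 0)" using True by simp
  next
    case False
    have wm: "w ^ m = 1"
    proof -
      have "w ^ m = cis (real m * (2 * pi * d / real m))" by (simp add: w_def DeMoivre)
      also have "\<dots> = cis (2 * pi * d)" using m0 by simp
      also have "\<dots> = 1" unfolding d_def
        by (rule cis_multiple_2pi) (metis Ints_diff Ints_of_nat)
      finally show ?thesis .
    qed
    have w1: "w \<noteq> 1"
    proof
      assume "w = 1"
      then have "cos (2 * pi * d / real m) = 1" unfolding w_def by (simp add: complex_eq_iff)
      then obtain k :: int where k: "2 * pi * d / real m = real_of_int k * 2 * pi"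
        by (auto simp: cos_one_2pi_int)
      then have "d = real_of_int k * real m" using m0 by (simp add: field_simps)
      then have dk: "real b - real b' = real_of_int k * real m" by (simp add: d_def)
      show False
      proof (cases "k = 0")
        case True then show False using dk False by simp
      next
        case False
        then have "\<bar>real_of_int k\<bar> \<ge> 1" by linarith
        then have "\<bar>real_of_int k * real m\<bar> \<ge> real m"
          by (simp add: abs_mult mult_le_cancel_right1)
        moreover have "\<bar>real b - real b'\<bar> < real m" using assms by linarith
        ultimately show False using dk by simp
      qed
    qed
    have "(\<Sum>a<m. w ^ a) = 0" using w1 wm by (simp add: sum_gp_strict)
    then show "(\<Sum>a<m. w ^ a) = (if b = b' then of_nat m else 0)" using False by simp
  qed
qed

definition Eb :: "(nat \<Rightarrow> nat) \<Rightarrow> nat \<Rightarrow> bidx set" where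
  "Eb n k = {St k a | a. a < n k}"

definition rowsin :: "bidx set \<Rightarrow> cop \<Rightarrow> bool" where
  "rowsin S X \<longleftrightarrow> (\<forall>i j. i \<notin> S \<longrightarrow> X i j = 0)"
definition colsin :: "bidx set \<Rightarrow> cop \<Rightarrow> bool" where
  "colsin S X \<longleftrightarrow> (\<forall>i j. j \<notin> S \<longrightarrow> X i j = 0)"

lemma rowsin_mmul: "rowsin S X \<Longrightarrow> rowsin S (mmul B X Y)"
  unfolding rowsin_def mmul_def by auto
lemma colsin_mmul: "colsin S Y \<Longrightarrow> colsin S (mmul B X Y)"
  unfolding colsin_def mmul_def by auto
lemma rowsin_adj: "rowsin S (adj X) \<longleftrightarrow> colsin S X"
  unfolding rowsin_def colsin_def adj_def by auto
lemma colsin_adj: "colsin S (adj X) \<longleftrightarrow> rowsin S X"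
  unfolding rowsin_def colsin_def adj_def by auto
lemma rowsin_add: "rowsin S X \<Longrightarrow> rowsin S Y \<Longrightarrow> rowsin S (X + Y)"
  unfolding rowsin_def by auto
lemma colsin_add: "colsin S X \<Longrightarrow> colsin S Y \<Longrightarrow> colsin S (X + Y)"
  unfolding colsin_def by auto
lemma rowsin_diff: "rowsin S X \<Longrightarrow> rowsin S Y \<Longrightarrow> rowsin S (X - Y)"
  unfolding rowsin_def by auto
lemma colsin_diff: "colsin S X \<Longrightarrow> colsin S Y \<Longrightarrow> colsin S (X - Y)"
  unfolding colsin_def by auto
lemma rowsin_scale: "rowsin S X \<Longrightarrow> rowsin S (opscale c X)"
  unfolding rowsin_def by auto
lemma colsin_scale: "colsin S X \<Longrightarrow> colsin S (opscale c X)"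
  unfolding colsin_def by auto
lemma rowsin_zero[simp]: "rowsin S 0" unfolding rowsin_def by auto
lemma colsin_zero[simp]: "colsin S 0" unfolding colsin_def by auto
lemma rowsin_sum: "(\<And>x. x \<in> T \<Longrightarrow> rowsin S (F x)) \<Longrightarrow> rowsin S (\<Sum>x\<in>T. F x)"
  unfolding rowsin_def by (auto simp: sum_apply2 intro!: sum.neutral)
lemma colsin_sum: "(\<And>x. x \<in> T \<Longrightarrow> colsin S (F x)) \<Longrightarrow> colsin S (\<Sum>x\<in>T. F x)"
  unfolding colsin_def by (auto simp: sum_apply2 intro!: sum.neutral)
lemma mmul_disj: "colsin S X \<Longrightarrow> rowsin T Y \<Longrightarrow> S \<inter> T = {} \<Longrightarrow> mmul B X Y = 0"
proof (intro ext)
  fix i j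
  assume a: "colsin S X" "rowsin T Y" "S \<inter> T = {}"
  have h: "\<And>l. X i l * Y l j = 0"
  proof -
    fix l show "X i l * Y l j = 0"
    proof (cases "l \<in> S")
      case True then have "l \<notin> T" using a(3) by blast
      then show ?thesis using a(2) unfolding rowsin_def by simp
    next
      case False then show ?thesis using a(1) unfolding colsin_def by simp
    qed
  qed
  show "mmul B X Y i j = 0 i j" unfolding mmul_def zero_fun_apply by (rule sum.neutral) (simp add: h)
qed

lemma Eb_disj: "k \<noteq> k' \<Longrightarrow> Eb n k \<inter> Eb n k' = {}"
  unfolding Eb_def by auto

lemma Pk_apply: "Pk n k i j = (if i = j \<and> i \<in> Eb n k then 1 else 0)"
  unfolding Pk_def Eb_def by (cases i) auto

lemma rowsin_Pk: "rowsin (Eb n k) (Pk n k)" unfolding rowsin_def by (simp add: Pk_apply)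
lemma colsin_Pk: "colsin (Eb n k) (Pk n k)" unfolding colsin_def by (simp add: Pk_apply)
lemma adj_Pk: "adj (Pk n k) = Pk n k" unfolding adj_def by (intro ext) (auto simp: Pk_apply)

lemma Zk_nz: "Zk n k i j \<noteq> 0 \<Longrightarrow> i \<in> Eb n (k + 1) \<and> j \<in> Eb n k"
  unfolding Zk_def Eb_def by (cases i; cases j) (auto split: if_splits)
lemma Zk_col0: "l \<notin> Eb n k \<Longrightarrow> Zk n k i l = 0" using Zk_nz by blast
lemma Zk_row0: "i \<notin> Eb n (k + 1) \<Longrightarrow> Zk n k i l = 0" using Zk_nz by blast
lemma rowsin_Zk: "rowsin (Eb n (k + 1)) (Zk n k)" unfolding rowsin_def using Zk_nz by blast
lemma colsin_Zk: "colsin (Eb n k) (Zk n k)" unfolding colsin_def using Zk_nz by blast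

lemma Pk_left:
  assumes "Eb n k \<subseteq> B" "finite B"
  shows "mmul B (Pk n k) X i j = (if i \<in> Eb n k then X i j else 0)"
proof -
  have "mmul B (Pk n k) X i j = (\<Sum>l\<in>B. if l = i then (if i \<in> Eb n k then X i j else 0) else 0)"
    unfolding mmul_def by (intro sum.cong refl) (auto simp: Pk_apply)
  also have "\<dots> = (if i \<in> B then (if i \<in> Eb n k then X i j else 0) else 0)"
    using assms(2) by (simp add: sum.delta)
  finally show ?thesis using assms by auto
qed

lemma Pk_right:
  assumes "Eb n k \<subseteq> B" "finite B"
  shows "mmul B X (Pk n k) i j = (if j \<in> Eb n k then X i j else 0)"
proof -
  have "mmul B X (Pk n k) i j = (\<Sum>l\<in>B. if l = j then (if j \<in> Eb n k then X i j else 0) else 0)"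
    unfolding mmul_def by (intro sum.cong refl) (auto simp: Pk_apply)
  also have "\<dots> = (if j \<in> B then (if j \<in> Eb n k then X i j else 0) else 0)"
    using assms(2) by (simp add: sum.delta)
  finally show ?thesis using assms by auto
qed

lemma Pk_left_id: "Eb n k \<subseteq> B \<Longrightarrow> finite B \<Longrightarrow> rowsin (Eb n k) X \<Longrightarrow> mmul B (Pk n k) X = X"
  by (intro ext) (auto simp: Pk_left rowsin_def)
lemma Pk_right_id: "Eb n k \<subseteq> B \<Longrightarrow> finite B \<Longrightarrow> colsin (Eb n k) X \<Longrightarrow> mmul B X (Pk n k) = X"
  by (intro ext) (auto simp: Pk_right colsin_def)
lemma Pk_left_zero: "k \<noteq> k' \<Longrightarrow> rowsin (Eb n k') X \<Longrightarrow> mmul B (Pk n k) X = 0"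
  by (rule mmul_disj[OF colsin_Pk _ Eb_disj])
lemma Pk_right_zero: "k \<noteq> k' \<Longrightarrow> colsin (Eb n k') X \<Longrightarrow> mmul B X (Pk n k) = 0"
  apply (rule mmul_disj) apply assumption apply (rule rowsin_Pk) using Eb_disj by blast

lemma sum_Eb:
  assumes "\<And>l. l \<notin> Eb n k \<Longrightarrow> f l = 0" "Eb n k \<subseteq> B" "finite B"
  shows "(\<Sum>l\<in>B. f l) = (\<Sum>a<n k. f (St k a))"
proof -
  have "(\<Sum>l\<in>B. f l) = (\<Sum>l\<in>Eb n k. f l)"
    using assms by (intro sum.mono_neutral_right) auto
  also have "Eb n k = St k ` {..<n k}" unfolding Eb_def by auto
  also have "(\<Sum>l\<in>St k ` {..<n k}. f l) = (\<Sum>a<n k. f (St k a))"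
    by (rule sum.reindex_cong[where l="St k"]) (auto simp: inj_on_def)
  finally show ?thesis .
qed

locale model =
  fixes N :: nat and n :: "nat \<Rightarrow> nat" and \<Gamma> \<gamma> :: "sgn \<Rightarrow> freq \<Rightarrow> real"
  assumes N2: "N \<ge> 2"
    and dec: "\<forall>k. 1 \<le> k \<and> k < N \<longrightarrow> n (k + 1) \<le> n k"
    and nN: "n N \<ge> 1"
    and Gpos: "\<forall>w\<in>freqs N. \<forall>e. \<Gamma> e w > 0"
begin

abbreviation "B \<equiv> basis N n"
abbreviation "Z k \<equiv> Zk n k"
abbreviation "P k \<equiv> Pk n k"
abbreviation "R k \<equiv> Zabs N n k"
abbreviation "E k \<equiv> Eb n k"
abbreviation "mm \<equiv> mmul B"

lemma n_mono: assumes "1 \<le> k" "k \<le> j" "j \<le> N" shows "n j \<le> n k"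
  using assms(2,3)
proof (induction j rule: dec_induct)
  case base then show ?case by simp
next
  case (step j)
  then have "n (j + 1) \<le> n j" using dec assms(1) by auto
  then show ?case using step by simp
qed

lemma npos: "1 \<le> k \<Longrightarrow> k \<le> N \<Longrightarrow> n k \<ge> 1"
  using n_mono[of k N] nN by simp

lemma inB_St: "St k a \<in> B \<longleftrightarrow> 1 \<le> k \<and> k \<le> N \<and> a < n k"
  unfolding basis_def by auto
lemma inB_Pl[simp]: "Pl \<in> B" unfolding basis_def by auto
lemma inB_Mn[simp]: "Mn \<in> B" unfolding basis_def by auto

lemma finB: "finite B"
proof -
  have "B \<subseteq> {Mn, Pl} \<union> (\<lambda>(k, a). St k a) ` ({1..N} \<times> {..<n 1})"
  proof
    fix x assume "x \<in> B"
    then show "x \<in> {Mn, Pl} \<union> (\<lambda>(k, a). St k a) ` ({1..N} \<times> {..<n 1})"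
    proof (cases x)
      case (St k a)
      then have "1 \<le> k" "k \<le> N" "a < n k" using \<open>x \<in> B\<close> inB_St by auto
      then have "a < n 1" using n_mono[of 1 k] by simp
      then show ?thesis using St \<open>1 \<le> k\<close> \<open>k \<le> N\<close> by force
    qed auto
  qed
  then show ?thesis by (rule finite_subset) auto
qed

lemma E_sub: "1 \<le> k \<Longrightarrow> k \<le> N \<Longrightarrow> E k \<subseteq> B"
  unfolding Eb_def using inB_St by auto

lemma hops_P: "1 \<le> k \<Longrightarrow> k \<le> N \<Longrightarrow> P k \<in> hops B"
  using E_sub by (intro hopsI) (auto simp: Pk_apply)

lemma hops_Z: "1 \<le> k \<Longrightarrow> k < N \<Longrightarrow> Z k \<in> hops B"
proof (intro hopsI)
  fix i j assume k: "1 \<le> k" "k < N" and ij: "i \<notin> B \<or> j \<notin> B"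
  show "Z k i j = 0"
  proof (rule ccontr)
    assume "Z k i j \<noteq> 0"
    then have "i \<in> E (k + 1)" "j \<in> E k" using Zk_nz by auto
    then show False using ij E_sub[of "k+1"] E_sub[of k] k by auto
  qed
qed

lemma ZZadj: assumes k: "1 \<le> k" "k < N" shows "mm (Z k) (adj (Z k)) = P (k + 1)"
proof (rule hops_eqI[OF hops_mmul[OF hops_Z[OF k] hops_adj[OF hops_Z[OF k]]] hops_P])
  show "1 \<le> k + 1" "k + 1 \<le> N" using k by auto
  fix i j assume i: "i \<in> B" and j: "j \<in> B"
  have sub: "E k \<subseteq> B" using E_sub k by auto
  have nle: "n (k + 1) \<le> n k" using dec k by auto
  show "mm (Z k) (adj (Z k)) i j = P (k + 1) i j"
  proof (cases "i \<in> E (k + 1) \<and> j \<in> E (k + 1)")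
    case False
    then have h: "\<forall>l. Z k i l * cnj (Z k j l) = 0" using Zk_row0 by auto
    have "mm (Z k) (adj (Z k)) i j = 0" unfolding mmul_def adj_def using h by (intro sum.neutral) auto
    moreover have "P (k + 1) i j = 0" using False by (auto simp: Pk_apply)
    ultimately show ?thesis by simp
  next
    case True
    then obtain b b' where b: "i = St (k + 1) b" "b < n (k + 1)" and b': "j = St (k + 1) b'" "b' < n (k + 1)"
      unfolding Eb_def by auto
    have "mm (Z k) (adj (Z k)) i j = (\<Sum>a<n k. Z k i (St k a) * cnj (Z k j (St k a)))"
      unfolding mmul_def adj_def
      by (rule sum_Eb[OF _ sub finB]) (simp add: Zk_col0)
    also have "\<dots> = (\<Sum>a<n k. (zeta n k ^ (b * a) * cnj (zeta n k ^ (b' * a))) / of_real (real (n k)))"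
    proof (intro sum.cong refl)
      fix a assume a: "a \<in> {..<n k}"
      have s: "complex_of_real (sqrt (real (n k))) * complex_of_real (sqrt (real (n k))) = of_real (real (n k))"
      proof -
        have "sqrt (real (n k)) * sqrt (real (n k)) = real (n k)" by simp
        then show ?thesis by (simp only: of_real_mult[symmetric])
      qed
      define sq where "sq = complex_of_real (sqrt (real (n k)))"
      have zi: "Z k i (St k a) = zeta n k ^ (b * a) / sq" using a b nle by (simp add: Zk_def sq_def)
      have zj: "Z k j (St k a) = zeta n k ^ (b' * a) / sq" using a b' nle by (simp add: Zk_def sq_def)
      have "Z k i (St k a) * cnj (Z k j (St k a)) = zeta n k ^ (b * a) / sq * (cnj (zeta n k ^ (b' * a)) / sq)"
        unfolding zi zj by (simp add: sq_def)
      also have "\<dots> = zeta n k ^ (b * a) * cnj (zeta n k ^ (b' * a)) / (sq * sq)"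
        by (rule times_divide_times_eq)
      also have "sq * sq = of_real (real (n k))" using s unfolding sq_def .
      finally show "Z k i (St k a) * cnj (Z k j (St k a)) = zeta n k ^ (b * a) * cnj (zeta n k ^ (b' * a)) / of_real (real (n k))" .
    qed
    also have "\<dots> = (\<Sum>a<n k. zeta n k ^ (b * a) * cnj (zeta n k ^ (b' * a))) / of_real (real (n k))"
      by (simp add: sum_divide_distrib)
    also have "\<dots> = (if b = b' then 1 else 0)"
      using root_sum[of b "n k" b'] b b' nle npos[of k] k unfolding zeta_def by auto
    also have "\<dots> = P (k + 1) i j" using b b' by (auto simp: Pk_apply Eb_def)
    finally show ?thesis .
  qed
qed

end

definition Dis :: "bidx set \<Rightarrow> cop \<Rightarrow> cop \<Rightarrow> cop" where
  "Dis B L \<rho> = mmul B (mmul B L \<rho>) (adj L)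
     - opscale (1/2) (mmul B (mmul B (adj L) L) \<rho> + mmul B \<rho> (mmul B (adj L) L))"

lemma Lgen_op: "Lgen N n \<Gamma> \<gamma> \<rho> =
   opscale (- \<i>) (mmul (basis N n) (Heff N n \<gamma>) \<rho> - mmul (basis N n) \<rho> (Heff N n \<gamma>))
   + (\<Sum>w\<in>freqs N. \<Sum>e\<in>{Neg, Pos}. Dis (basis N n) (Kraus N n \<Gamma> e w) \<rho>)"
  unfolding Lgen_def Let_def Dis_def by (intro ext) (simp add: sum_apply2)

lemma Heff_op: "Heff N n \<gamma> =
    opscale (complex_of_real (real (n 1) * \<gamma> Neg WPlus)) (ketbra (ket Pl) (ket Pl))
  - opscale (complex_of_real (real (n 1) * \<gamma> Pos WPlus)) (ketbra (phi n 1 0) (phi n 1 0))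
  + opscale (complex_of_real (\<gamma> Neg WMinus)) (ketbra (phi n N 0) (phi n N 0))
  - opscale (complex_of_real (\<gamma> Pos WMinus)) (ketbra (ket Mn) (ket Mn))
  + (\<Sum>k\<in>{1..N-1}. opscale (complex_of_real (\<gamma> Neg (W k))) (Zabs N n k)
                   - opscale (complex_of_real (\<gamma> Pos (W k))) (Pk n (k + 1)))"
  unfolding Heff_def by (intro ext) (simp add: sum_apply2)

lemma freqs_eq: "freqs N = insert WPlus (insert WMinus (W ` {1..N-1}))"
  unfolding freqs_def by auto

lemma freqs_sum: "(\<Sum>w\<in>freqs N. F w) = F WPlus + F WMinus + (\<Sum>k\<in>{1..N-1}. F (W k))"
proof -
  have "(\<Sum>w\<in>freqs N. F w) = F WPlus + (F WMinus + (\<Sum>w\<in>W ` {1..N-1}. F w))"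
    unfolding freqs_eq by (simp add: image_iff)
  also have "(\<Sum>w\<in>W ` {1..N-1}. F w) = (\<Sum>k\<in>{1..N-1}. F (W k))"
    by (subst sum.reindex) (auto simp: inj_on_def)
  finally show ?thesis by (simp add: add.assoc)
qed

lemma finite_freqs: "finite (freqs N)"
  unfolding freqs_eq by simp

lemma sgn_sum: "(\<Sum>e\<in>{Neg, Pos}. F e) = F Neg + F Pos"
  by simp

lemma Dis_zero:
  assumes "mmul B L \<rho> = 0" "adj \<rho> = \<rho>"
  shows "Dis B L \<rho> = 0"
proof -
  have a: "mmul B \<rho> (adj L) = 0" by (metis adj_mmul adj_zero assms)
  have b: "mmul B \<rho> (mmul B (adj L) L) = 0" using mmul_assoc[of B \<rho> "adj L" L] a by simp
  have c: "mmul B (mmul B (adj L) L) \<rho> = 0" using mmul_assoc[of B "adj L" L \<rho>] assms(1) by simp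
  show ?thesis unfolding Dis_def using assms(1) b c by simp
qed

lemma inner_sum_right: "inner_h B e (\<Sum>x\<in>S. F x) = (\<Sum>x\<in>S. inner_h B e (F x))"
  unfolding inner_h_def by (simp add: sum_apply1 sum_distrib_left) (rule sum.swap)
lemma inner_diff_right: "inner_h B v (u - w) = inner_h B v u - inner_h B v w"
  unfolding inner_h_def by (simp add: algebra_simps sum_subtractf)
lemma inner_zero_right[simp]: "inner_h B v 0 = 0"
  unfolding inner_h_def by simp
lemma inner_zero_left[simp]: "inner_h B 0 v = 0"
  unfolding inner_h_def by simp

lemma inner_app_scale: "inner_h B v (app B (opscale c X) w) = c * inner_h B v (app B X w)"
  unfolding app_scale by (rule inner_scale_right)

lemma sandwich_Dis:
  assumes "adj \<rho> = \<rho>" "app B \<rho> e = 0"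
  shows "inner_h B e (app B (Dis B L \<rho>) e) = inner_h B (app B (adj L) e) (app B \<rho> (app B (adj L) e))"
proof -
  have t1: "inner_h B e (app B (mmul B (mmul B L \<rho>) (adj L)) e) = inner_h B (app B (adj L) e) (app B \<rho> (app B (adj L) e))"
    by (simp add: app_mmul inner_adj)
  have t2: "inner_h B e (app B (mmul B (mmul B (adj L) L) \<rho>) e) = 0"
    using assms by (simp add: app_mmul)
  have t3: "inner_h B e (app B (mmul B \<rho> (mmul B (adj L) L)) e) = 0"
    using assms by (simp add: app_mmul inner_adj[of B e \<rho>])
  show ?thesis unfolding Dis_def app_diff inner_diff_right inner_app_scale app_add inner_add_right t1 t2 t3
    by simp
qed

lemma sandwich_comm:
  assumes "adj \<rho> = \<rho>" "app B \<rho> e = 0"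
  shows "inner_h B e (app B (mmul B H \<rho> - mmul B \<rho> H) e) = 0"
proof -
  have "inner_h B e (app B \<rho> (app B H e)) = inner_h B (app B (adj \<rho>) e) (app B H e)"
    by (rule inner_adj)
  also have "\<dots> = 0" using assms by simp
  finally have a: "inner_h B e (app B \<rho> (app B H e)) = 0" .
  show ?thesis unfolding app_diff app_mmul inner_diff_right a using assms by simp
qed

lemma Re_sum_zero:
  assumes "finite S" "\<And>x. x \<in> S \<Longrightarrow> Re (g x) \<ge> 0" "Re (\<Sum>x\<in>S. g x) = 0" "y \<in> S"
  shows "Re (g y) = 0"
proof -
  have "(\<Sum>x\<in>S. Re (g x)) = 0" using assms(3) by (simp add: Re_sum)
  then show ?thesis using assms by (subst (asm) sum_nonneg_eq_0_iff) auto
qed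

context model begin

abbreviation "f1 \<equiv> phi n 1 0"
abbreviation "fN \<equiv> phi n N 0"

lemma phi_nz: "phi n k a i \<noteq> 0 \<Longrightarrow> i \<in> E k"
  unfolding phi_def Eb_def by (cases i) (auto split: if_splits)

lemma hvecs_phi: "1 \<le> k \<Longrightarrow> k \<le> N \<Longrightarrow> phi n k a \<in> hvecs B"
  unfolding hvecs_def using phi_nz E_sub by blast

lemma hvecs_f1: "f1 \<in> hvecs B" using hvecs_phi N2 by auto
lemma hvecs_fN: "fN \<in> hvecs B" using hvecs_phi N2 by auto

lemma ket_Pl_hv: "ket Pl \<in> hvecs B" by (simp add: ket_hvecs)
lemma ket_Mn_hv: "ket Mn \<in> hvecs B" by (simp add: ket_hvecs)

lemma hops_R: "1 \<le> k \<Longrightarrow> k < N \<Longrightarrow> R k \<in> hops B"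
  unfolding Zabs_def by (intro hops_mmul hops_adj hops_Z)

lemma rowsin_R: "rowsin (E k) (R k)"
  unfolding Zabs_def by (intro rowsin_mmul) (simp add: rowsin_adj colsin_Zk)
lemma colsin_R: "colsin (E k) (R k)"
  unfolding Zabs_def by (intro colsin_mmul colsin_Zk)
lemma rowsin_adjZ: "rowsin (E k) (adj (Z k))" by (simp add: rowsin_adj colsin_Zk)
lemma colsin_adjZ: "colsin (E (k + 1)) (adj (Z k))" unfolding colsin_adj by (rule rowsin_Zk)

lemma adj_R: "adj (R k) = R k"
  unfolding Zabs_def by (simp add: adj_mmul)

lemma PZ: assumes "1 \<le> k" "k < N" shows "mm (P (k + 1)) (Z k) = Z k"
proof -
  have "E (k + 1) \<subseteq> B" using E_sub[of "k+1"] assms by simp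
  then show ?thesis by (intro Pk_left_id finB rowsin_Zk)
qed
lemma ZP: assumes "1 \<le> k" "k < N" shows "mm (Z k) (P k) = Z k"
proof -
  have "E k \<subseteq> B" using E_sub[of k] assms by simp
  then show ?thesis by (intro Pk_right_id finB colsin_Zk)
qed

lemma ZR: assumes "1 \<le> k" "k < N" shows "mm (Z k) (R k) = Z k"
proof -
  have "mm (Z k) (R k) = mm (mm (Z k) (adj (Z k))) (Z k)" unfolding Zabs_def by (simp add: mmul_assoc)
  also have "\<dots> = mm (P (k + 1)) (Z k)" using ZZadj[OF assms] by simp
  also have "\<dots> = Z k" by (rule PZ[OF assms])
  finally show ?thesis .
qed

lemma RZadj: assumes "1 \<le> k" "k < N" shows "mm (R k) (adj (Z k)) = adj (Z k)"
  using ZR[OF assms] by (metis adj_R adj_adj adj_mmul)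

lemma RR: assumes "1 \<le> k" "k < N" shows "mm (R k) (R k) = R k"
  using ZR[OF assms] unfolding Zabs_def by (simp add: mmul_assoc)

lemma adjZ_ket: "app B (adj (Z 1)) (ket (St 2 0)) = f1"
proof -
  have n2: "n 2 \<ge> 1" using npos[of 2] N2 by auto
  have m: "St 2 0 \<in> B" using inB_St N2 n2 by auto
  show ?thesis
  proof (rule ext)
    fix i
    have "app B (adj (Z 1)) (ket (St 2 0)) i = cnj (Z 1 (St 2 0) i)"
      using m finB by (simp add: app_ket adj_def)
    also have "\<dots> = f1 i"
      using n2 by (cases i) (auto simp: Zk_def phi_def numeral_2_eq_2)
    finally show "app B (adj (Z 1)) (ket (St 2 0)) i = f1 i" .
  qed
qed

lemma R1f1: "app B (R 1) f1 = f1"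
proof -
  have n2: "n 2 \<ge> 1" using npos[of 2] N2 by auto
  have m: "St 2 0 \<in> B" using inB_St N2 n2 by auto
  have N1: "1 < N" using N2 by simp
  have "app B (R 1) f1 = app B (mm (adj (Z 1)) (mm (Z 1) (adj (Z 1)))) (ket (St 2 0))"
    unfolding Zabs_def adjZ_ket[symmetric] by (simp add: app_mmul)
  also have "\<dots> = app B (adj (Z 1)) (app B (P 2) (ket (St 2 0)))"
    using ZZadj[of 1] N1 by (simp add: app_mmul numeral_2_eq_2)
  also have "app B (P 2) (ket (St 2 0)) = ket (St 2 0)"
    unfolding app_ket[OF finB m] using n2 by (intro ext) (auto simp: Pk_apply ket_def Eb_def)
  finally show ?thesis using adjZ_ket by simp
qed

lemma Kraus_simps:
  "Kraus N n \<Gamma> Neg WPlus = opscale (complex_of_real (sqrt (real (n 1) * \<Gamma> Neg WPlus))) (ketbra f1 (ket Pl))"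
  "Kraus N n \<Gamma> Pos WPlus = opscale (complex_of_real (sqrt (real (n 1) * \<Gamma> Pos WPlus))) (ketbra (ket Pl) f1)"
  "Kraus N n \<Gamma> Neg (W k) = opscale (complex_of_real (sqrt (\<Gamma> Neg (W k)))) (Z k)"
  "Kraus N n \<Gamma> Pos (W k) = opscale (complex_of_real (sqrt (\<Gamma> Pos (W k)))) (adj (Z k))"
  "Kraus N n \<Gamma> Neg WMinus = opscale (complex_of_real (sqrt (\<Gamma> Neg WMinus))) (ketbra (ket Mn) fN)"
  "Kraus N n \<Gamma> Pos WMinus = 0"
  unfolding Kraus_def by (auto intro!: ext)

lemma hops_Kraus: "w \<in> freqs N \<Longrightarrow> Kraus N n \<Gamma> e w \<in> hops B"
  using hvecs_f1 unfolding freqs_eq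
  by (cases e) (auto simp: Kraus_simps intro!: hops_scale hops_ketbra hvecs_f1 hvecs_fN ket_Pl_hv ket_Mn_hv
      hops_Z hops_adj)

end

lemma Dis_scale: "Dis B (opscale c L) \<rho> = opscale (cnj c * c) (Dis B L \<rho>)"
  unfolding Dis_def
  by (simp add: mmul_scale_left mmul_scale_right adj_scale opscale_diff opscale_add mult.commute)

lemma mmul_scale_ketbra_left: "mmul B (opscale c (ketbra x y)) \<rho> = opscale c (ketbra x (app B (adj \<rho>) y))"
  by (simp add: mmul_scale_left mmul_ketbra_left)

lemma sum3_lemma: fixes c :: complex shows "c * ((\<Sum>k\<in>S. a k) - (\<Sum>k\<in>S. b k)) + (\<Sum>k\<in>S. d k) = (\<Sum>k\<in>S. c * (a k - b k) + d k)"
proof -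
  have e1: "(\<Sum>k\<in>S. c * (a k - b k)) = (\<Sum>k\<in>S. c * a k - c * b k)"
    by (simp add: right_diff_distrib)
  have e2: "(\<Sum>k\<in>S. c * a k - c * b k) = (\<Sum>k\<in>S. c * a k) - (\<Sum>k\<in>S. c * b k)"
    by (rule sum_subtractf)
  show ?thesis unfolding sum.distrib e1 e2 by (simp add: sum_distrib_left right_diff_distrib)
qed

context model begin

lemma Gp: "w \<in> freqs N \<Longrightarrow> \<Gamma> e w > 0" using Gpos by auto
lemma Wk_freqs: "1 \<le> k \<Longrightarrow> k \<le> N - 1 \<Longrightarrow> W k \<in> freqs N" unfolding freqs_def by auto

lemma kill_lemma:
  assumes H: "\<rho> \<in> hops B" "psd B \<rho>" "Lgen N n \<Gamma> \<gamma> \<rho> = 0" and e: "app B \<rho> (ket i) = 0" "i \<in> B"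
    and w: "w \<in> freqs N"
  shows "inner_h B (app B (adj (Kraus N n \<Gamma> ep w)) (ket i)) (app B \<rho> (app B (adj (Kraus N n \<Gamma> ep w)) (ket i))) = 0"
proof -
  have herm: "adj \<rho> = \<rho>" using psd_herm[OF H(1,2) finB] .
  let ?g = "\<lambda>w ep. inner_h B (app B (adj (Kraus N n \<Gamma> ep w)) (ket i)) (app B \<rho> (app B (adj (Kraus N n \<Gamma> ep w)) (ket i)))"
  have hv: "\<And>w ep. w \<in> freqs N \<Longrightarrow> app B (adj (Kraus N n \<Gamma> ep w)) (ket i) \<in> hvecs B"
    by (intro hvecs_app hops_adj hops_Kraus)
  have nn: "\<And>w ep. w \<in> freqs N \<Longrightarrow> Re (?g w ep) \<ge> 0 \<and> Im (?g w ep) = 0"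
    using H(2) hv unfolding psd_def by blast
  have "0 = inner_h B (ket i) (app B (Lgen N n \<Gamma> \<gamma> \<rho>) (ket i))" using H(3) by simp
  also have "\<dots> = (\<Sum>w\<in>freqs N. \<Sum>ep\<in>{Neg, Pos}. ?g w ep)"
    unfolding Lgen_op app_add inner_add_right inner_app_scale app_sum inner_sum_right
    by (simp add: sandwich_comm[OF herm e(1)] sandwich_Dis[OF herm e(1)])
  finally have s0: "(\<Sum>w\<in>freqs N. \<Sum>ep\<in>{Neg, Pos}. ?g w ep) = 0" by simp
  have "Re (\<Sum>ep\<in>{Neg, Pos}. ?g w ep) = 0"
    using s0 w nn by (intro Re_sum_zero[OF finite_freqs, where g="\<lambda>w. \<Sum>ep\<in>{Neg, Pos}. ?g w ep"])
      (auto simp: Re_sum intro!: sum_nonneg)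
  then have "Re (?g w ep) = 0"
    using nn w by (intro Re_sum_zero[where S="{Neg, Pos}" and g="?g w"]) (auto, cases ep, auto)
  then show ?thesis using nn[OF w, of ep] by (simp add: complex_eq_iff)
qed

lemma f_kernel:
  assumes H: "\<rho> \<in> hops B" "psd B \<rho>" "Lgen N n \<Gamma> \<gamma> \<rho> = 0"
    and e: "app B \<rho> (ket Pl) = 0" "app B \<rho> (ket Mn) = 0"
  shows "app B \<rho> f1 = 0" "app B \<rho> fN = 0"
proof -
  have wp: "WPlus \<in> freqs N" "WMinus \<in> freqs N" unfolding freqs_def by auto
  have one: "inner_h B (ket Pl) (ket Pl) = 1" "inner_h B (ket Mn) (ket Mn) = 1"
    by (subst inner_ket[OF finB], simp, simp add: ket_def)+
  let ?c = "sqrt (real (n 1) * \<Gamma> Pos WPlus)"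
  have cpos: "?c > 0" using Gp[OF wp(1), of Pos] npos[of 1] N2 by simp
  have "app B (adj (Kraus N n \<Gamma> Pos WPlus)) (ket Pl) = (\<lambda>i. complex_of_real ?c * f1 i)"
    by (simp add: Kraus_simps adj_scale adj_ketbra app_scale app_ketbra one)
  then have "inner_h B (\<lambda>i. complex_of_real ?c * f1 i) (app B \<rho> (\<lambda>i. complex_of_real ?c * f1 i)) = 0"
    using kill_lemma[OF H e(1) inB_Pl wp(1), of Pos] by simp
  moreover have "inner_h B (\<lambda>i. complex_of_real ?c * f1 i) (app B \<rho> (\<lambda>i. complex_of_real ?c * f1 i))
      = complex_of_real ?c * complex_of_real ?c * inner_h B f1 (app B \<rho> f1)"
    unfolding app_vscale inner_scale_left inner_scale_right by simp
  ultimately have "complex_of_real ?c * complex_of_real ?c * inner_h B f1 (app B \<rho> f1) = 0"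
    by simp
  moreover have "complex_of_real ?c * complex_of_real ?c \<noteq> 0"
  proof -
    have "?c \<noteq> 0" using cpos by linarith
    then show ?thesis by (metis mult_eq_0_iff of_real_eq_0_iff)
  qed
  ultimately have "inner_h B f1 (app B \<rho> f1) = 0" using mult_eq_0_iff by blast
  then show "app B \<rho> f1 = 0" by (rule psd_kernel[OF H(1,2) finB hvecs_f1])
  let ?d = "sqrt (\<Gamma> Neg WMinus)"
  have dpos: "?d > 0" using Gp[OF wp(2), of Neg] by simp
  have "app B (adj (Kraus N n \<Gamma> Neg WMinus)) (ket Mn) = (\<lambda>i. complex_of_real ?d * fN i)"
    by (simp add: Kraus_simps adj_scale adj_ketbra app_scale app_ketbra one)
  then have "inner_h B (\<lambda>i. complex_of_real ?d * fN i) (app B \<rho> (\<lambda>i. complex_of_real ?d * fN i)) = 0"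
    using kill_lemma[OF H e(2) inB_Mn wp(2), of Neg] by simp
  moreover have "inner_h B (\<lambda>i. complex_of_real ?d * fN i) (app B \<rho> (\<lambda>i. complex_of_real ?d * fN i))
      = complex_of_real ?d * complex_of_real ?d * inner_h B fN (app B \<rho> fN)"
    unfolding app_vscale inner_scale_left inner_scale_right by simp
  ultimately have "complex_of_real ?d * complex_of_real ?d * inner_h B fN (app B \<rho> fN) = 0"
    by simp
  moreover have "complex_of_real ?d * complex_of_real ?d \<noteq> 0"
  proof -
    have "?d \<noteq> 0" using dpos by linarith
    then show ?thesis by (metis mult_eq_0_iff of_real_eq_0_iff)
  qed
  ultimately have "inner_h B fN (app B \<rho> fN) = 0" using mult_eq_0_iff by blast
  then show "app B \<rho> fN = 0" by (rule psd_kernel[OF H(1,2) finB hvecs_fN])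
qed

end

context model begin

definition ak :: "nat \<Rightarrow> complex" where
  "ak k = - \<i> * complex_of_real (\<gamma> Neg (W k)) - complex_of_real (\<Gamma> Neg (W k)) / 2"
definition bk :: "nat \<Rightarrow> complex" where
  "bk k = \<i> * complex_of_real (\<gamma> Pos (W k)) - complex_of_real (\<Gamma> Pos (W k)) / 2"

definition Tk :: "nat \<Rightarrow> cop \<Rightarrow> cop" where
  "Tk k \<sigma> = opscale (ak k) (mm (R k) \<sigma>) + opscale (cnj (ak k)) (mm \<sigma> (R k))
     + opscale (complex_of_real (\<Gamma> Neg (W k))) (mm (mm (Z k) \<sigma>) (adj (Z k)))
     + opscale (bk k) (mm (P (k + 1)) \<sigma>) + opscale (cnj (bk k)) (mm \<sigma> (P (k + 1)))
     + opscale (complex_of_real (\<Gamma> Pos (W k))) (mm (mm (adj (Z k)) \<sigma>) (Z k))"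

lemma sqrt_sq_c: "x \<ge> 0 \<Longrightarrow> cnj (complex_of_real (sqrt x)) * complex_of_real (sqrt x) = complex_of_real x"
  by (metis complex_cnj_complex_of_real of_real_mult real_sqrt_mult_self abs_of_nonneg)

lemma sqrt_sq_c2: "x \<ge> 0 \<Longrightarrow> complex_of_real (sqrt x) * complex_of_real (sqrt x) = complex_of_real x"
  by (metis of_real_mult real_sqrt_mult_self abs_of_nonneg)

lemma clean:
  assumes S: "\<sigma> \<in> hops B" "adj \<sigma> = \<sigma>" "app B \<sigma> (ket Pl) = 0" "app B \<sigma> (ket Mn) = 0"
    "app B \<sigma> f1 = 0" "app B \<sigma> fN = 0"
  shows "Lgen N n \<Gamma> \<gamma> \<sigma> = (\<Sum>k\<in>{1..N-1}. Tk k \<sigma>)"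
proof -
  let ?K = "{1..N-1}"
  have H1: "mm (Heff N n \<gamma>) \<sigma> = (\<Sum>k\<in>?K. opscale (complex_of_real (\<gamma> Neg (W k))) (mm (R k) \<sigma>)
              - opscale (complex_of_real (\<gamma> Pos (W k))) (mm (P (k + 1)) \<sigma>))"
    unfolding Heff_op mmul_add_left mmul_diff_left mmul_scale_left mmul_ketbra_left mmul_sum_left
    using S by simp
  have H2: "mm \<sigma> (Heff N n \<gamma>) = (\<Sum>k\<in>?K. opscale (complex_of_real (\<gamma> Neg (W k))) (mm \<sigma> (R k))
              - opscale (complex_of_real (\<gamma> Pos (W k))) (mm \<sigma> (P (k + 1))))"
    unfolding Heff_op mmul_add_right mmul_diff_right mmul_scale_right mmul_ketbra_right mmul_sum_right
    using S by simp
  have z1: "Dis B (Kraus N n \<Gamma> Neg WPlus) \<sigma> = 0" "Dis B (Kraus N n \<Gamma> Pos WPlus) \<sigma> = 0"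
     "Dis B (Kraus N n \<Gamma> Neg WMinus) \<sigma> = 0" "Dis B (Kraus N n \<Gamma> Pos WMinus) \<sigma> = 0"
  proof -
    have s5: "app B \<sigma> (phi n (Suc 0) 0) = 0" using S(5) by simp
    show "Dis B (Kraus N n \<Gamma> Neg WPlus) \<sigma> = 0"
      by (rule Dis_zero[OF _ S(2)]) (simp add: Kraus_simps mmul_scale_ketbra_left S s5)
    show "Dis B (Kraus N n \<Gamma> Pos WPlus) \<sigma> = 0"
      by (rule Dis_zero[OF _ S(2)]) (simp add: Kraus_simps mmul_scale_ketbra_left S s5)
    show "Dis B (Kraus N n \<Gamma> Neg WMinus) \<sigma> = 0"
      by (rule Dis_zero[OF _ S(2)]) (simp add: Kraus_simps mmul_scale_ketbra_left S s5)
    show "Dis B (Kraus N n \<Gamma> Pos WMinus) \<sigma> = 0"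
      by (rule Dis_zero[OF _ S(2)]) (simp add: Kraus_simps)
  qed
  have DN: "Dis B (Kraus N n \<Gamma> Neg (W k)) \<sigma> = opscale (complex_of_real (\<Gamma> Neg (W k)))
      (mm (mm (Z k) \<sigma>) (adj (Z k)) - opscale (1/2) (mm (R k) \<sigma> + mm \<sigma> (R k)))"
    if k: "k \<in> ?K" for k
  proof -
    have "\<Gamma> Neg (W k) > 0" using Gp[OF Wk_freqs] k by auto
    then show ?thesis unfolding Kraus_simps Dis_scale
      by (simp add: sqrt_sq_c sqrt_sq_c2 Dis_def Zabs_def)
  qed
  have DP: "Dis B (Kraus N n \<Gamma> Pos (W k)) \<sigma> = opscale (complex_of_real (\<Gamma> Pos (W k)))
      (mm (mm (adj (Z k)) \<sigma>) (Z k) - opscale (1/2) (mm (P (k + 1)) \<sigma> + mm \<sigma> (P (k + 1))))"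
    if k: "k \<in> ?K" for k
  proof -
    have "\<Gamma> Pos (W k) > 0" using Gp[OF Wk_freqs] k by auto
    moreover have "mm (Z k) (adj (Z k)) = P (k + 1)" using k N2 by (intro ZZadj) auto
    ultimately show ?thesis unfolding Kraus_simps Dis_scale
      by (simp add: sqrt_sq_c sqrt_sq_c2 Dis_def)
  qed
  have D: "(\<Sum>w\<in>freqs N. \<Sum>e\<in>{Neg, Pos}. Dis B (Kraus N n \<Gamma> e w) \<sigma>)
     = (\<Sum>k\<in>?K. Dis B (Kraus N n \<Gamma> Neg (W k)) \<sigma> + Dis B (Kraus N n \<Gamma> Pos (W k)) \<sigma>)"
    unfolding freqs_sum sgn_sum z1 by simp
  show ?thesis
  proof (rule ext, rule ext)
    fix i j
    have "Lgen N n \<Gamma> \<gamma> \<sigma> i j = - \<i> * ((\<Sum>k\<in>?K. (opscale (complex_of_real (\<gamma> Neg (W k))) (mm (R k) \<sigma>)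
              - opscale (complex_of_real (\<gamma> Pos (W k))) (mm (P (k + 1)) \<sigma>)) i j)
          - (\<Sum>k\<in>?K. (opscale (complex_of_real (\<gamma> Neg (W k))) (mm \<sigma> (R k))
              - opscale (complex_of_real (\<gamma> Pos (W k))) (mm \<sigma> (P (k + 1)))) i j))
        + (\<Sum>k\<in>?K. (Dis B (Kraus N n \<Gamma> Neg (W k)) \<sigma> + Dis B (Kraus N n \<Gamma> Pos (W k)) \<sigma>) i j)"
      unfolding Lgen_op D H1 H2 by (simp add: sum_apply2)
    also have "\<dots> = (\<Sum>k\<in>?K. - \<i> * ((opscale (complex_of_real (\<gamma> Neg (W k))) (mm (R k) \<sigma>)
              - opscale (complex_of_real (\<gamma> Pos (W k))) (mm (P (k + 1)) \<sigma>)) i j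
          - (opscale (complex_of_real (\<gamma> Neg (W k))) (mm \<sigma> (R k))
              - opscale (complex_of_real (\<gamma> Pos (W k))) (mm \<sigma> (P (k + 1)))) i j)
        + (Dis B (Kraus N n \<Gamma> Neg (W k)) \<sigma> + Dis B (Kraus N n \<Gamma> Pos (W k)) \<sigma>) i j)"
      by (rule sum3_lemma)
    also have "\<dots> = (\<Sum>k\<in>?K. Tk k \<sigma> i j)"
    proof (rule sum.cong[OF refl])
      fix k assume k: "k \<in> ?K"
      show "- \<i> * ((opscale (complex_of_real (\<gamma> Neg (W k))) (mm (R k) \<sigma>)
              - opscale (complex_of_real (\<gamma> Pos (W k))) (mm (P (k + 1)) \<sigma>)) i j
          - (opscale (complex_of_real (\<gamma> Neg (W k))) (mm \<sigma> (R k))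
              - opscale (complex_of_real (\<gamma> Pos (W k))) (mm \<sigma> (P (k + 1)))) i j)
        + (Dis B (Kraus N n \<Gamma> Neg (W k)) \<sigma> + Dis B (Kraus N n \<Gamma> Pos (W k)) \<sigma>) i j = Tk k \<sigma> i j"
        unfolding DN[OF k] DP[OF k] Tk_def ak_def bk_def
        by (simp add: algebra_simps)
    qed
    also have "\<dots> = (\<Sum>k\<in>?K. Tk k \<sigma>) i j" by (simp add: sum_apply2)
    finally show "Lgen N n \<Gamma> \<gamma> \<sigma> i j = (\<Sum>k\<in>?K. Tk k \<sigma>) i j" .
  qed
qed

end

lemma lyap:
  fixes r1 r2 r3 r4 :: "nat \<Rightarrow> real" and a b :: "nat \<Rightarrow> complex"
  assumes fin: "finite K"
    and ra: "\<And>j. j \<in> K \<Longrightarrow> Re (a j) < 0" and rb: "\<And>j. j \<in> K \<Longrightarrow> Re (b j) < 0"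
    and nn: "\<And>j. j \<in> K \<Longrightarrow> r1 j \<ge> 0 \<and> r2 j \<ge> 0 \<and> r3 j \<ge> 0 \<and> r4 j \<ge> 0"
    and s: "(\<Sum>j\<in>K. a j * r1 j + cnj (a j) * r2 j + b j * r3 j + cnj (b j) * r4 j) = 0"
    and j: "j \<in> K"
  shows "r3 j = 0 \<and> r4 j = 0"
proof -
  let ?t = "\<lambda>j. Re (a j) * (r1 j + r2 j) + Re (b j) * (r3 j + r4 j)"
  have "Re (\<Sum>j\<in>K. a j * r1 j + cnj (a j) * r2 j + b j * r3 j + cnj (b j) * r4 j) = (\<Sum>j\<in>K. ?t j)"
    by (simp add: Re_sum algebra_simps)
  then have "(\<Sum>j\<in>K. ?t j) = 0" using s by simp
  then have s0: "(\<Sum>j\<in>K. - ?t j) = 0" by (simp only: sum_negf)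
  have tn: "\<And>j. j \<in> K \<Longrightarrow> - ?t j \<ge> 0"
  proof -
    fix j assume j: "j \<in> K"
    have "Re (a j) * (r1 j + r2 j) \<le> 0" using ra[OF j] nn[OF j] by (simp add: mult_nonpos_nonneg)
    moreover have "Re (b j) * (r3 j + r4 j) \<le> 0" using rb[OF j] nn[OF j] by (simp add: mult_nonpos_nonneg)
    ultimately show "- ?t j \<ge> 0" by simp
  qed
  have "- ?t j = 0" using s0 tn fin j by (subst (asm) sum_nonneg_eq_0_iff) auto
  moreover have "Re (a j) * (r1 j + r2 j) \<le> 0" using ra[OF j] nn[OF j] by (simp add: mult_nonpos_nonneg)
  ultimately have "Re (b j) * (r3 j + r4 j) \<ge> 0" by simp
  then have "r3 j + r4 j \<le> 0" using rb[OF j] by (simp add: mult_le_0_iff zero_le_mult_iff)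
  then show ?thesis using nn[OF j] by simp
qed

definition fro :: "bidx set \<Rightarrow> cop \<Rightarrow> real" where
  "fro B X = (\<Sum>i\<in>B. \<Sum>l\<in>B. (cmod (X l i))\<^sup>2)"

lemma fro_trace: "trace_h B (mmul B (adj X) X) = complex_of_real (fro B X)"
  unfolding fro_def by (rule fro_eq)
lemma fro_nonneg: "fro B X \<ge> 0"
  unfolding fro_def by (intro sum_nonneg) auto
lemma fro_zero': "finite B \<Longrightarrow> X \<in> hops B \<Longrightarrow> fro B X = 0 \<Longrightarrow> X = 0"
  by (rule fro_zero) (auto simp: fro_eq fro_def)

context model begin

lemma inK_E: "j \<in> {1..N-1} \<Longrightarrow> E j \<subseteq> B \<and> E (j + 1) \<subseteq> B"
proof -
  assume "j \<in> {1..N-1}"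
  then have "1 \<le> j" "j \<le> N" "1 \<le> j + 1" "j + 1 \<le> N" by auto
  then show ?thesis using E_sub[of j] E_sub[of "j+1"] by blast
qed

lemma PP_same: "1 \<le> k \<Longrightarrow> k \<le> N \<Longrightarrow> mm (P k) (P k) = P k"
  by (intro Pk_left_id E_sub finB rowsin_Pk)
lemma PP_diff: "k \<noteq> l \<Longrightarrow> mm (P k) (P l) = 0"
  by (rule Pk_left_zero[OF _ rowsin_Pk])

lemma PR_comm:
  assumes "1 \<le> k" "k \<le> N" "1 \<le> j" "j < N"
  shows "mm (P k) (R j) = mm (R j) (P k)"
proof (cases "k = j")
  case True
  have s: "E k \<subseteq> B" using E_sub assms by auto
  show ?thesis using True Pk_left_id[OF s finB rowsin_R] Pk_right_id[OF s finB colsin_R] by simp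
next
  case False
  then show ?thesis using Pk_left_zero[OF False rowsin_R] Pk_right_zero[OF False colsin_R] by simp
qed

lemma PP_comm: "mm (P k) (P l) = mm (P l) (P k)"
  by (cases "k = l") (auto simp: PP_diff)

lemma PZ_gen: assumes "1 \<le> j" "j < N" shows "mm (P k) (Z j) = (if k = j + 1 then Z j else 0)"
  using PZ[OF assms] Pk_left_zero[OF _ rowsin_Zk] by auto
lemma ZP_gen: assumes "1 \<le> j" "j < N" shows "mm (Z j) (P k) = (if k = j then Z j else 0)"
  using ZP[OF assms] Pk_right_zero[OF _ colsin_Zk] by auto
lemma PZa_gen: assumes "1 \<le> j" "j < N" shows "mm (P k) (adj (Z j)) = (if k = j then adj (Z j) else 0)"
proof -
  have "mm (P j) (adj (Z j)) = adj (Z j)" using ZP[OF assms] by (metis adj_Pk adj_mmul)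
  then show ?thesis using Pk_left_zero[OF _ rowsin_adjZ] by auto
qed
lemma ZaP_gen: assumes "1 \<le> j" "j < N" shows "mm (adj (Z j)) (P k) = (if k = j + 1 then adj (Z j) else 0)"
proof -
  have "mm (adj (Z j)) (P (j + 1)) = adj (Z j)" using PZ[OF assms] by (metis adj_Pk adj_mmul)
  then show ?thesis using Pk_right_zero[OF _ colsin_adjZ] by auto
qed

end

context model begin

lemma Re_ak: "Re (ak k) = - \<Gamma> Neg (W k) / 2" unfolding ak_def by simp
lemma Re_bk: "Re (bk k) = - \<Gamma> Pos (W k) / 2" unfolding bk_def by simp

lemma sandwich_T:
  fixes \<sigma> :: cop
  assumes j: "j \<in> {1..N-1}" and k: "1 \<le> k" "k \<le> N" and l: "1 \<le> l" "l \<le> N" and kl: "k \<noteq> l"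
  defines "X \<equiv> mm (P k) (mm \<sigma> (P l))"
  shows "mm (P k) (mm (Tk j \<sigma>) (P l)) = opscale (ak j) (mm (R j) X) + opscale (cnj (ak j)) (mm X (R j))
           + opscale (bk j) (mm (P (j + 1)) X) + opscale (cnj (bk j)) (mm X (P (j + 1)))"
proof -
  have j1: "1 \<le> j" "j < N" using j by auto
  have t1: "mm (P k) (mm (mm (R j) \<sigma>) (P l)) = mm (R j) X"
    unfolding X_def by (metis PR_comm[OF k j1] mmul_assoc)
  have t2: "mm (P k) (mm (mm \<sigma> (R j)) (P l)) = mm X (R j)"
    unfolding X_def by (metis PR_comm[OF l j1] mmul_assoc)
  have t3: "mm (P k) (mm (mm (P (j + 1)) \<sigma>) (P l)) = mm (P (j + 1)) X"
    unfolding X_def by (metis PP_comm mmul_assoc)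
  have t4: "mm (P k) (mm (mm \<sigma> (P (j + 1))) (P l)) = mm X (P (j + 1))"
    unfolding X_def by (metis PP_comm mmul_assoc)
  have t5: "mm (P k) (mm (mm (mm (Z j) \<sigma>) (adj (Z j))) (P l)) = 0"
  proof -
    have "mm (P k) (mm (mm (mm (Z j) \<sigma>) (adj (Z j))) (P l)) = mm (mm (P k) (Z j)) (mm \<sigma> (mm (adj (Z j)) (P l)))"
      by (simp add: mmul_assoc)
    then show ?thesis using kl by (simp add: PZ_gen[OF j1] ZaP_gen[OF j1])
  qed
  have t6: "mm (P k) (mm (mm (mm (adj (Z j)) \<sigma>) (Z j)) (P l)) = 0"
  proof -
    have "mm (P k) (mm (mm (mm (adj (Z j)) \<sigma>) (Z j)) (P l)) = mm (mm (P k) (adj (Z j))) (mm \<sigma> (mm (Z j) (P l)))"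
      by (simp add: mmul_assoc)
    then show ?thesis using kl by (simp add: PZa_gen[OF j1] ZP_gen[OF j1])
  qed
  show ?thesis unfolding Tk_def
    by (simp add: mmul_add_left mmul_add_right mmul_scale_left mmul_scale_right t1 t2 t3[simplified] t4[simplified] t5 t6)
qed

lemma tr_R1: "trace_h B (mm (adj X) (mm (R j) X)) = complex_of_real (fro B (mm (Z j) X))"
proof -
  have "mm (adj (mm (Z j) X)) (mm (Z j) X) = mm (adj X) (mm (R j) X)"
    unfolding Zabs_def by (simp add: adj_mmul mmul_assoc)
  then show ?thesis by (metis fro_trace)
qed

lemma tr_R2: "trace_h B (mm (adj X) (mm X (R j))) = complex_of_real (fro B (mm X (adj (Z j))))"
proof -
  have "trace_h B (mm (adj (mm X (adj (Z j)))) (mm X (adj (Z j))))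
      = trace_h B (mm (Z j) (mm (adj X) (mm X (adj (Z j)))))"
    by (simp add: adj_mmul mmul_assoc)
  also have "\<dots> = trace_h B (mm (mm (adj X) (mm X (adj (Z j)))) (Z j))" by (rule trace_comm)
  also have "\<dots> = trace_h B (mm (adj X) (mm X (R j)))" unfolding Zabs_def by (simp add: mmul_assoc)
  finally show ?thesis by (metis fro_trace)
qed

lemma tr_P1: assumes "1 \<le> m" "m \<le> N"
  shows "trace_h B (mm (adj X) (mm (P m) X)) = complex_of_real (fro B (mm (P m) X))"
proof -
  have "mm (adj (mm (P m) X)) (mm (P m) X) = mm (adj X) (mm (mm (P m) (P m)) X)"
    by (simp add: adj_mmul adj_Pk mmul_assoc)
  then show ?thesis using PP_same[OF assms] by (metis fro_trace)
qed

lemma tr_P2: assumes "1 \<le> m" "m \<le> N"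
  shows "trace_h B (mm (adj X) (mm X (P m))) = complex_of_real (fro B (mm X (P m)))"
proof -
  have "trace_h B (mm (adj (mm X (P m))) (mm X (P m))) = trace_h B (mm (P m) (mm (adj X) (mm X (P m))))"
    by (simp add: adj_mmul adj_Pk mmul_assoc)
  also have "\<dots> = trace_h B (mm (mm (adj X) (mm X (P m))) (P m))" by (rule trace_comm)
  also have "\<dots> = trace_h B (mm (adj X) (mm X (mm (P m) (P m))))" by (simp add: mmul_assoc)
  finally show ?thesis using PP_same[OF assms] by (metis fro_trace)
qed

definition cleanc :: "cop \<Rightarrow> bool" where
  "cleanc \<sigma> \<longleftrightarrow> \<sigma> \<in> hops B \<and> adj \<sigma> = \<sigma> \<and> app B \<sigma> (ket Pl) = 0 \<and> app B \<sigma> (ket Mn) = 0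
     \<and> app B \<sigma> f1 = 0 \<and> app B \<sigma> fN = 0"

lemma offdiag:
  assumes C: "cleanc \<sigma>" and L: "Lgen N n \<Gamma> \<gamma> \<sigma> = 0"
    and k: "1 \<le> k" "k \<le> N" and l: "1 \<le> l" "l \<le> N" and kl: "k \<noteq> l"
  shows "mm (P k) (mm \<sigma> (P l)) = 0"
proof -
  let ?K = "{1..N-1}"
  define X where "X = mm (P k) (mm \<sigma> (P l))"
  have Xh: "X \<in> hops B" unfolding X_def using C k l unfolding cleanc_def by (intro hops_mmul hops_P) auto
  have "0 = mm (P k) (mm (Lgen N n \<Gamma> \<gamma> \<sigma>) (P l))" using L by simp
  also have "\<dots> = (\<Sum>j\<in>?K. mm (P k) (mm (Tk j \<sigma>) (P l)))"
    using C unfolding cleanc_def by (simp add: clean mmul_sum_left mmul_sum_right)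
  also have "\<dots> = (\<Sum>j\<in>?K. opscale (ak j) (mm (R j) X) + opscale (cnj (ak j)) (mm X (R j))
           + opscale (bk j) (mm (P (j + 1)) X) + opscale (cnj (bk j)) (mm X (P (j + 1))))"
    by (intro sum.cong refl) (simp add: sandwich_T[OF _ k l kl] X_def)
  finally have z: "(\<Sum>j\<in>?K. opscale (ak j) (mm (R j) X) + opscale (cnj (ak j)) (mm X (R j))
           + opscale (bk j) (mm (P (j + 1)) X) + opscale (cnj (bk j)) (mm X (P (j + 1)))) = 0" by simp
  have "0 = trace_h B (mm (adj X) (\<Sum>j\<in>?K. opscale (ak j) (mm (R j) X) + opscale (cnj (ak j)) (mm X (R j))
           + opscale (bk j) (mm (P (j + 1)) X) + opscale (cnj (bk j)) (mm X (P (j + 1)))))"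
    unfolding z by simp
  also have "\<dots> = (\<Sum>j\<in>?K. ak j * fro B (mm (Z j) X) + cnj (ak j) * fro B (mm X (adj (Z j)))
       + bk j * fro B (mm (P (j + 1)) X) + cnj (bk j) * fro B (mm X (P (j + 1))))"
  proof -
    have "\<And>j. j \<in> ?K \<Longrightarrow> 1 \<le> j + 1 \<and> j + 1 \<le> N" by auto
    then show ?thesis
      by (simp add: mmul_sum_right trace_sum mmul_add_right mmul_scale_right trace_add trace_scale
          tr_R1 tr_R2 tr_P1 tr_P2 del: One_nat_def)
  qed
  finally have s: "(\<Sum>j\<in>?K. ak j * fro B (mm (Z j) X) + cnj (ak j) * fro B (mm X (adj (Z j)))
       + bk j * fro B (mm (P (j + 1)) X) + cnj (bk j) * fro B (mm X (P (j + 1)))) = 0" by simp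
  have r: "fro B (mm (P (j + 1)) X) = 0 \<and> fro B (mm X (P (j + 1))) = 0" if j: "j \<in> ?K" for j
  proof (rule lyap[OF _ _ _ _ s j])
    show "finite ?K" by simp
    show "\<And>j. j \<in> ?K \<Longrightarrow> Re (ak j) < 0" using Gp[OF Wk_freqs] by (auto simp: Re_ak)
    show "\<And>j. j \<in> ?K \<Longrightarrow> Re (bk j) < 0" using Gp[OF Wk_freqs] by (auto simp: Re_bk)
  qed (auto simp: fro_nonneg)
  show ?thesis
  proof (cases "k \<ge> 2")
    case True
    then have jk: "k - 1 \<in> ?K" "k - 1 + 1 = k" using k by auto
    have "mm (P k) X = X" unfolding X_def using PP_same[OF k] by (simp flip: mmul_assoc)
    then have "fro B X = 0" using r[OF jk(1)] jk(2) by simp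
    then show ?thesis using fro_zero'[OF finB Xh] X_def by simp
  next
    case False
    then have "l \<ge> 2" using k l kl by auto
    then have jl: "l - 1 \<in> ?K" "l - 1 + 1 = l" using l by auto
    have "mm X (P l) = X" unfolding X_def using PP_same[OF l] by (simp add: mmul_assoc)
    then have "fro B X = 0" using r[OF jl(1)] jl(2) by simp
    then show ?thesis using fro_zero'[OF finB Xh] X_def by simp
  qed
qed

end

context model begin

definition bl :: "cop \<Rightarrow> nat \<Rightarrow> cop" where
  "bl \<sigma> k = mm (P k) (mm \<sigma> (P k))"

lemma RP_gen: assumes "1 \<le> j" "j < N" shows "mm (R j) (P k) = (if k = j then R j else 0)"
proof -
  have "mm (R j) (P j) = R j" using E_sub[of j] assms by (intro Pk_right_id finB colsin_R) auto
  then show ?thesis using Pk_right_zero[OF _ colsin_R] by auto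
qed
lemma PR_gen: assumes "1 \<le> j" "j < N" shows "mm (P k) (R j) = (if k = j then R j else 0)"
proof -
  have "mm (P j) (R j) = R j" using E_sub[of j] assms by (intro Pk_left_id finB rowsin_R) auto
  then show ?thesis using Pk_left_zero[OF _ rowsin_R] by auto
qed

lemma sandwich_T_diag:
  assumes j: "j \<in> {1..N-1}" and k: "1 \<le> k" "k \<le> N"
  shows "mm (P k) (mm (Tk j \<sigma>) (P k)) =
     (if j = k then opscale (ak k) (mm (R k) (bl \<sigma> k)) + opscale (cnj (ak k)) (mm (bl \<sigma> k) (R k))
        + opscale (complex_of_real (\<Gamma> Pos (W k))) (mm (adj (Z k)) (mm (bl \<sigma> (k + 1)) (Z k))) else 0)
   + (if k = j + 1 then opscale (bk j + cnj (bk j)) (bl \<sigma> k)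
        + opscale (complex_of_real (\<Gamma> Neg (W j))) (mm (Z j) (mm (bl \<sigma> j) (adj (Z j)))) else 0)"
proof -
  have j1: "1 \<le> j" "j < N" using j by auto
  have t1: "mm (P k) (mm (mm (R j) \<sigma>) (P k)) = (if j = k then mm (R k) (bl \<sigma> k) else 0)"
  proof -
    have "mm (P k) (mm (mm (R j) \<sigma>) (P k)) = mm (mm (P k) (R j)) (mm \<sigma> (P k))" by (simp add: mmul_assoc)
    moreover have "mm (R k) (bl \<sigma> k) = mm (mm (R k) (P k)) (mm \<sigma> (P k))" by (simp add: mmul_assoc bl_def)
    moreover have "mm (P k) (R j) = (if j = k then R k else 0)" "j = k \<longrightarrow> mm (R k) (P k) = R k"
      using PR_gen[OF j1, of k] RP_gen[OF j1, of j] by auto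
    ultimately show ?thesis by (cases "j = k") simp_all
  qed
  have t2: "mm (P k) (mm (mm \<sigma> (R j)) (P k)) = (if j = k then mm (bl \<sigma> k) (R k) else 0)"
  proof -
    have "mm (P k) (mm (mm \<sigma> (R j)) (P k)) = mm (mm (P k) \<sigma>) (mm (R j) (P k))" by (simp add: mmul_assoc)
    moreover have "mm (bl \<sigma> k) (R k) = mm (mm (P k) \<sigma>) (mm (P k) (R k))" by (simp add: mmul_assoc bl_def)
    moreover have "mm (R j) (P k) = (if j = k then R k else 0)" "j = k \<longrightarrow> mm (P k) (R k) = R k"
      using PR_gen[OF j1, of j] RP_gen[OF j1, of k] by auto
    ultimately show ?thesis by (cases "j = k") simp_all
  qed
  have t3: "mm (P k) (mm (mm (P (j + 1)) \<sigma>) (P k)) = (if k = j + 1 then bl \<sigma> k else 0)"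
  proof -
    have "mm (P k) (mm (mm (P (j + 1)) \<sigma>) (P k)) = mm (mm (P k) (P (j + 1))) (mm \<sigma> (P k))" by (simp add: mmul_assoc)
    then show ?thesis using PP_same[OF k] PP_diff[of k "j+1"] by (auto simp: bl_def)
  qed
  have t4: "mm (P k) (mm (mm \<sigma> (P (j + 1))) (P k)) = (if k = j + 1 then bl \<sigma> k else 0)"
  proof -
    have "mm (P k) (mm (mm \<sigma> (P (j + 1))) (P k)) = mm (mm (P k) \<sigma>) (mm (P (j + 1)) (P k))" by (simp add: mmul_assoc)
    then show ?thesis using PP_same[OF k] PP_diff[of "j+1" k] by (auto simp: bl_def mmul_assoc)
  qed
  have t5: "mm (P k) (mm (mm (mm (Z j) \<sigma>) (adj (Z j))) (P k)) = (if k = j + 1 then mm (Z j) (mm (bl \<sigma> j) (adj (Z j))) else 0)"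
  proof -
    have "mm (P k) (mm (mm (mm (Z j) \<sigma>) (adj (Z j))) (P k)) = mm (mm (P k) (Z j)) (mm \<sigma> (mm (adj (Z j)) (P k)))"
      by (simp add: mmul_assoc)
    moreover have "mm (Z j) (mm (bl \<sigma> j) (adj (Z j))) = mm (mm (Z j) (P j)) (mm \<sigma> (mm (P j) (adj (Z j))))"
      by (simp add: mmul_assoc bl_def)
    ultimately show ?thesis using ZP[OF j1] PZa_gen[OF j1, of j] by (simp add: PZ_gen[OF j1] ZaP_gen[OF j1])
  qed
  have t6: "mm (P k) (mm (mm (mm (adj (Z j)) \<sigma>) (Z j)) (P k)) = (if j = k then mm (adj (Z k)) (mm (bl \<sigma> (k + 1)) (Z k)) else 0)"
  proof -
    have "mm (P k) (mm (mm (mm (adj (Z j)) \<sigma>) (Z j)) (P k)) = mm (mm (P k) (adj (Z j))) (mm \<sigma> (mm (Z j) (P k)))"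
      by (simp add: mmul_assoc)
    moreover have "mm (adj (Z j)) (mm (bl \<sigma> (j + 1)) (Z j)) = mm (mm (adj (Z j)) (P (j + 1))) (mm \<sigma> (mm (P (j + 1)) (Z j)))"
      by (simp add: mmul_assoc bl_def)
    ultimately show ?thesis using PZ[OF j1] ZaP_gen[OF j1, of "j+1"] by (auto simp: PZa_gen[OF j1] ZP_gen[OF j1])
  qed
  show ?thesis unfolding Tk_def
    by (simp only: mmul_add_left mmul_add_right mmul_scale_left mmul_scale_right t1 t2 t3 t4 t5 t6)
       (auto simp: opscale_add opscale_addc)
qed

end

lemma sum_if_eq: "finite S \<Longrightarrow> (\<Sum>j\<in>S. (if j = k then F j else 0)) = (if k \<in> S then F k else (0::'a::comm_monoid_add))"
  by (simp add: sum.delta')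

context model begin

lemma diag_eq:
  assumes C: "cleanc \<sigma>" and L: "Lgen N n \<Gamma> \<gamma> \<sigma> = 0" and k: "k \<in> {1..N-1}"
  shows "opscale (ak k) (mm (R k) (bl \<sigma> k)) + opscale (cnj (ak k)) (mm (bl \<sigma> k) (R k))
        + opscale (complex_of_real (\<Gamma> Pos (W k))) (mm (adj (Z k)) (mm (bl \<sigma> (k + 1)) (Z k)))
     + (if 2 \<le> k then opscale (bk (k - 1) + cnj (bk (k - 1))) (bl \<sigma> k)
        + opscale (complex_of_real (\<Gamma> Neg (W (k - 1)))) (mm (Z (k - 1)) (mm (bl \<sigma> (k - 1)) (adj (Z (k - 1))))) else 0) = 0"
proof -
  let ?K = "{1..N-1}"
  have k1: "1 \<le> k" "k \<le> N" using k by auto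
  define A where "A = opscale (ak k) (mm (R k) (bl \<sigma> k)) + opscale (cnj (ak k)) (mm (bl \<sigma> k) (R k))
        + opscale (complex_of_real (\<Gamma> Pos (W k))) (mm (adj (Z k)) (mm (bl \<sigma> (k + 1)) (Z k)))"
  define Cf where "Cf = (\<lambda>j. opscale (bk j + cnj (bk j)) (bl \<sigma> k)
        + opscale (complex_of_real (\<Gamma> Neg (W j))) (mm (Z j) (mm (bl \<sigma> j) (adj (Z j)))))"
  have "0 = mm (P k) (mm (Lgen N n \<Gamma> \<gamma> \<sigma>) (P k))" using L by simp
  also have "\<dots> = (\<Sum>j\<in>?K. mm (P k) (mm (Tk j \<sigma>) (P k)))"
    using C unfolding cleanc_def by (simp add: clean mmul_sum_left mmul_sum_right)
  also have "\<dots> = (\<Sum>j\<in>?K. (if j = k then A else 0) + (if j = k - 1 then Cf j else 0))"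
  proof (intro sum.cong refl)
    fix j assume j: "j \<in> ?K"
    have "(k = j + 1) = (j = k - 1)" using k1 by auto
    then show "mm (P k) (mm (Tk j \<sigma>) (P k)) = (if j = k then A else 0) + (if j = k - 1 then Cf j else 0)"
      unfolding sandwich_T_diag[OF j k1] A_def Cf_def by simp
  qed
  also have "\<dots> = A + (if k - 1 \<in> ?K then Cf (k - 1) else 0)"
    using k by (simp add: sum.distrib sum_if_eq del: One_nat_def)
  also have "(k - 1 \<in> ?K) = (2 \<le> k)" using k by auto
  finally have "A + (if 2 \<le> k then Cf (k - 1) else 0) = 0" by (rule sym)
  then show ?thesis unfolding A_def Cf_def .
qed

fun zp :: "nat \<Rightarrow> cop" where
  "zp 0 = P 1"
| "zp (Suc m) = mm (Z (Suc m)) (zp m)"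

fun cc :: "nat \<Rightarrow> real" where
  "cc 0 = 1"
| "cc (Suc m) = cc m * \<Gamma> Neg (W (Suc m)) / \<Gamma> Pos (W (Suc m))"

lemma zp_hops: "m < N \<Longrightarrow> zp m \<in> hops B"
proof (induction m)
  case 0 then show ?case using N2 by (simp add: hops_P)
next
  case (Suc m) then show ?case by (simp add: hops_mmul hops_Z)
qed

lemma zp_rows: "rowsin (E (m + 1)) (zp m)"
proof (induction m)
  case 0 then show ?case by (simp add: rowsin_Pk)
next
  case (Suc m) then show ?case using rowsin_Zk[of n "Suc m"] by (simp add: rowsin_mmul)
qed

lemma zp_P1: "mm (zp m) (P 1) = zp m"
proof (induction m)
  case 0 then show ?case using PP_same N2 by simp
next
  case (Suc m) then show ?case by (simp add: mmul_assoc)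
qed

lemma zp_co: "m < N \<Longrightarrow> mm (zp m) (adj (zp m)) = P (m + 1)"
proof (induction m)
  case 0 then show ?case using PP_same[of 1] N2 by (simp add: adj_Pk)
next
  case (Suc m)
  have m1: "1 \<le> Suc m" "Suc m < N" using Suc by auto
  have "mm (zp (Suc m)) (adj (zp (Suc m))) = mm (Z (Suc m)) (mm (mm (zp m) (adj (zp m))) (adj (Z (Suc m))))"
    by (simp add: adj_mmul mmul_assoc)
  also have "\<dots> = mm (mm (Z (Suc m)) (P (Suc m))) (adj (Z (Suc m)))" using Suc by (simp add: mmul_assoc)
  also have "\<dots> = P (Suc m + 1)" using ZP[OF m1] ZZadj[OF m1] by simp
  finally show ?case by simp
qed

lemma zp_step: "1 \<le> k \<Longrightarrow> zp k = mm (Z k) (zp (k - 1))"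
  by (cases k) auto

lemma cc_pos: "m < N \<Longrightarrow> cc m > 0"
proof (induction m)
  case 0 then show ?case by simp
next
  case (Suc m)
  have "W (Suc m) \<in> freqs N" using Suc by (intro Wk_freqs) auto
  then show ?case using Suc Gp by simp
qed

lemma cc_step: "1 \<le> k \<Longrightarrow> cc k = cc (k - 1) * \<Gamma> Neg (W k) / \<Gamma> Pos (W k)"
  by (cases k) auto

end

context model begin

definition Mz :: "cop \<Rightarrow> nat \<Rightarrow> cop" where
  "Mz X m = mm (zp m) (mm X (adj (zp m)))"

lemma M_step: "1 \<le> k \<Longrightarrow> mm (Z k) (mm (Mz X (k - 1)) (adj (Z k))) = Mz X k"
  unfolding Mz_def by (simp add: zp_step adj_mmul mmul_assoc)

lemma bl_herm: "adj \<sigma> = \<sigma> \<Longrightarrow> adj (bl \<sigma> k) = bl \<sigma> k"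
  unfolding bl_def by (simp add: adj_mmul adj_Pk mmul_assoc)

lemma bl_P: "1 \<le> k \<Longrightarrow> k \<le> N \<Longrightarrow> mm (P k) (bl \<sigma> k) = bl \<sigma> k"
  unfolding bl_def using PP_same by (simp flip: mmul_assoc)
lemma bl_P': "1 \<le> k \<Longrightarrow> k \<le> N \<Longrightarrow> mm (bl \<sigma> k) (P k) = bl \<sigma> k"
  unfolding bl_def using PP_same by (simp add: mmul_assoc)

lemma ak_nz: "k \<in> {1..N-1} \<Longrightarrow> cnj (ak k) \<noteq> 0"
proof
  assume "k \<in> {1..N-1}" "cnj (ak k) = 0"
  then have "Re (ak k) = 0" by (metis complex_cnj_zero_iff zero_complex.sel(1))
  moreover have "\<Gamma> Neg (W k) > 0" using Gp[OF Wk_freqs] \<open>k \<in> {1..N-1}\<close> by auto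
  ultimately show False by (simp add: Re_ak)
qed

lemma ak_sum: "ak k + cnj (ak k) = - complex_of_real (\<Gamma> Neg (W k))"
  unfolding ak_def by (simp add: complex_eq_iff)
lemma bk_sum: "bk k + cnj (bk k) = - complex_of_real (\<Gamma> Pos (W k))"
  unfolding bk_def by (simp add: complex_eq_iff)

lemma step:
  assumes C: "cleanc \<sigma>" and L: "Lgen N n \<Gamma> \<gamma> \<sigma> = 0" and k: "k \<in> {1..N-1}"
    and hk: "bl \<sigma> k = opscale (complex_of_real (cc (k - 1))) (Mz (bl \<sigma> 1) (k - 1))"
    and hk1: "2 \<le> k \<Longrightarrow> bl \<sigma> (k - 1) = opscale (complex_of_real (cc (k - 2))) (Mz (bl \<sigma> 1) (k - 2))"
    and h1: "k = 1 \<Longrightarrow> mm (R 1) (bl \<sigma> 1) = bl \<sigma> 1"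
  shows "mm (R k) (bl \<sigma> k) = mm (bl \<sigma> k) (R k)"
    and "bl \<sigma> (k + 1) = opscale (complex_of_real (cc k)) (Mz (bl \<sigma> 1) k)"
proof -
  have k1: "1 \<le> k" "k < N" "k \<le> N" using k by auto
  have herm: "adj \<sigma> = \<sigma>" using C unfolding cleanc_def by simp
  define X where "X = bl \<sigma> k"
  define Y where "Y = bl \<sigma> (k + 1)"
  have Xh: "adj X = X" unfolding X_def using bl_herm[OF herm] .
  have GpN: "\<Gamma> Neg (W k) > 0" "\<Gamma> Pos (W k) > 0" using Gp[OF Wk_freqs] k by auto
  have ifz: "(if 2 \<le> k then opscale (bk (k - 1) + cnj (bk (k - 1))) (bl \<sigma> k)
        + opscale (complex_of_real (\<Gamma> Neg (W (k - 1)))) (mm (Z (k - 1)) (mm (bl \<sigma> (k - 1)) (adj (Z (k - 1))))) else 0) = 0"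
  proof (cases "2 \<le> k")
    case True
    have km: "1 \<le> k - 1" "k - 1 - 1 = k - 2" "k - 1 \<in> {1..N-1}" using True k by auto
    have G2: "\<Gamma> Pos (W (k - 1)) > 0" using Gp[OF Wk_freqs] km k by auto
    have e1: "mm (Z (k - 1)) (mm (bl \<sigma> (k - 1)) (adj (Z (k - 1))))
        = opscale (complex_of_real (cc (k - 2))) (Mz (bl \<sigma> 1) (k - 1))"
      unfolding hk1[OF True] mmul_scale_left mmul_scale_right
      using M_step[OF km(1), of "bl \<sigma> 1"] km(2) by simp
    have e2: "cc (k - 1) = cc (k - 2) * \<Gamma> Neg (W (k - 1)) / \<Gamma> Pos (W (k - 1))"
      using cc_step[OF km(1)] km(2) by simp
    show ?thesis using True G2 unfolding e1 hk e2 bk_sum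
      by (intro ext) (simp add: field_simps)
  qed simp
  have star: "opscale (ak k) (mm (R k) X) + opscale (cnj (ak k)) (mm X (R k))
        + opscale (complex_of_real (\<Gamma> Pos (W k))) (mm (adj (Z k)) (mm Y (Z k))) = 0"
    using diag_eq[OF C L k] ifz unfolding X_def Y_def by simp
  have comm: "mm (R k) X = mm X (R k)"
  proof (cases "k = 1")
    case True
    then have a: "mm (R k) X = X" using h1 X_def by simp
    then have "mm X (R k) = X" using Xh adj_R by (metis adj_mmul)
    then show ?thesis using a by simp
  next
    case False
    define F where "F = (\<lambda>W. mm (P k - R k) (mm W (R k)))"
    have F0: "F 0 = 0" unfolding F_def by simp
    have Fadd: "F (A + B) = F A + F B" for A B unfolding F_def by (simp add: mmul_add_left mmul_add_right)
    have Fsc: "F (opscale c A) = opscale c (F A)" for c A unfolding F_def by (simp add: mmul_scale_left mmul_scale_right)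
    have PRk: "mm (P k) (R k) = R k" using PR_gen[OF k1(1,2)] by simp
    have f1: "F (mm (R k) X) = 0"
    proof -
      have z: "mm (P k - R k) (R k) = 0" by (simp add: mmul_diff_left PRk RR[OF k1(1,2)])
      have "F (mm (R k) X) = mm (mm (P k - R k) (R k)) (mm X (R k))" unfolding F_def by (simp add: mmul_assoc)
      then show ?thesis unfolding z by simp
    qed
    have f2: "F (mm X (R k)) = mm (P k - R k) (mm X (R k))"
      unfolding F_def by (simp add: mmul_assoc RR[OF k1(1,2)])
    have f3: "F (mm (adj (Z k)) (mm Y (Z k))) = 0"
    proof -
      have z: "mm (P k - R k) (adj (Z k)) = 0"
        by (simp add: mmul_diff_left PZa_gen[OF k1(1,2)] RZadj[OF k1(1,2)])
      have "F (mm (adj (Z k)) (mm Y (Z k))) = mm (mm (P k - R k) (adj (Z k))) (mm Y (mm (Z k) (R k)))"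
        unfolding F_def by (simp add: mmul_assoc)
      then show ?thesis unfolding z by simp
    qed
    have "opscale (cnj (ak k)) (mm (P k - R k) (mm X (R k))) = 0"
      using arg_cong[OF star, of F] by (simp add: Fadd Fsc f1 f2 f3 F0)
    then have "mm (P k - R k) (mm X (R k)) = 0"
      using ak_nz[OF k] by (metis opscale_scale opscale_one opscale_zero(2) divide_self_if divide_inverse
          mult.commute right_inverse)
    then have "mm (P k) (mm X (R k)) = mm (R k) (mm X (R k))" by (simp add: mmul_diff_left)
    moreover have "mm (P k) (mm X (R k)) = mm X (R k)"
      using bl_P[OF k1(1,3)] unfolding X_def by (simp flip: mmul_assoc)
    ultimately have xr: "mm X (R k) = mm (R k) (mm X (R k))" by simp
    have "mm (R k) X = adj (mm X (R k))" using Xh adj_R by (simp add: adj_mmul)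
    also have "\<dots> = adj (mm (R k) (mm X (R k)))" using xr by simp
    also have "\<dots> = mm (R k) (mm X (R k))" using Xh adj_R by (simp add: adj_mmul mmul_assoc)
    finally show ?thesis using xr by simp
  qed
  then show "mm (R k) (bl \<sigma> k) = mm (bl \<sigma> k) (R k)" unfolding X_def .
  have star2: "opscale (- complex_of_real (\<Gamma> Neg (W k))) (mm (R k) X)
        + opscale (complex_of_real (\<Gamma> Pos (W k))) (mm (adj (Z k)) (mm Y (Z k))) = 0"
    using star comm by (simp add: ak_sum[symmetric] opscale_addc)
  define G where "G = (\<lambda>W. mm (Z k) (mm W (adj (Z k))))"
  have Gadd: "G (A + B) = G A + G B" for A B unfolding G_def by (simp add: mmul_add_left mmul_add_right)
  have Gsc: "G (opscale c A) = opscale c (G A)" for c A unfolding G_def by (simp add: mmul_scale_left mmul_scale_right)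
  have G0: "G 0 = 0" unfolding G_def by simp
  have g1: "G (mm (R k) X) = mm (Z k) (mm X (adj (Z k)))"
    unfolding G_def by (simp flip: mmul_assoc add: ZR[OF k1(1,2)])
  have g2: "G (mm (adj (Z k)) (mm Y (Z k))) = Y"
  proof -
    have "G (mm (adj (Z k)) (mm Y (Z k))) = mm (mm (Z k) (adj (Z k))) (mm Y (mm (Z k) (adj (Z k))))"
      unfolding G_def by (simp add: mmul_assoc)
    also have "\<dots> = mm (P (k + 1)) (mm Y (P (k + 1)))" using ZZadj[OF k1(1,2)] by simp
    also have "\<dots> = Y" unfolding Y_def using bl_P[of "k+1"] bl_P'[of "k+1"] k1 by (simp flip: mmul_assoc)
    finally show ?thesis .
  qed
  have "opscale (- complex_of_real (\<Gamma> Neg (W k))) (mm (Z k) (mm X (adj (Z k))))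
        + opscale (complex_of_real (\<Gamma> Pos (W k))) Y = 0"
    using arg_cong[OF star2, of G] by (simp add: Gadd Gsc g1 g2 G0)
  moreover have "mm (Z k) (mm X (adj (Z k))) = opscale (complex_of_real (cc (k - 1))) (Mz (bl \<sigma> 1) k)"
    unfolding X_def hk using M_step[OF k1(1)] by (simp add: mmul_scale_left mmul_scale_right)
  ultimately have e: "opscale (- complex_of_real (\<Gamma> Neg (W k))) (opscale (complex_of_real (cc (k - 1))) (Mz (bl \<sigma> 1) k))
        + opscale (complex_of_real (\<Gamma> Pos (W k))) Y = 0" by simp
  show "bl \<sigma> (k + 1) = opscale (complex_of_real (cc k)) (Mz (bl \<sigma> 1) k)"
  proof (intro ext)
    fix i j
    have "- complex_of_real (\<Gamma> Neg (W k)) * (complex_of_real (cc (k - 1)) * Mz (bl \<sigma> 1) k i j)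
        + complex_of_real (\<Gamma> Pos (W k)) * Y i j = 0"
      using fun_cong[OF fun_cong[OF e, of i], of j] by simp
    then have "Y i j = complex_of_real (\<Gamma> Neg (W k)) * complex_of_real (cc (k - 1)) * Mz (bl \<sigma> 1) k i j
        / complex_of_real (\<Gamma> Pos (W k))"
      using GpN by (simp add: field_simps)
    then show "bl \<sigma> (k + 1) i j = opscale (complex_of_real (cc k)) (Mz (bl \<sigma> 1) k) i j"
      unfolding Y_def using cc_step[OF k1(1)] by (simp add: field_simps)
  qed
qed

end

context model begin

lemma recur:
  assumes C: "cleanc \<sigma>" and L: "Lgen N n \<Gamma> \<gamma> \<sigma> = 0" and W1: "mm (R 1) (bl \<sigma> 1) = bl \<sigma> 1"
  shows "m < N \<Longrightarrow> bl \<sigma> (m + 1) = opscale (complex_of_real (cc m)) (Mz (bl \<sigma> 1) m)"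
proof (induction m rule: less_induct)
  case (less m)
  show ?case
  proof (cases m)
    case 0
    have "Mz (bl \<sigma> 1) 0 = bl \<sigma> 1" unfolding Mz_def using bl_P[of 1] bl_P'[of 1] N2
      by (simp add: adj_Pk mmul_assoc)
    then show ?thesis using 0 by simp
  next
    case (Suc m')
    have k: "m \<in> {1..N-1}" using Suc less.prems by auto
    have hk: "bl \<sigma> m = opscale (complex_of_real (cc (m - 1))) (Mz (bl \<sigma> 1) (m - 1))"
      using less.IH[of m'] Suc less.prems by (simp del: opscale_apply)
    have hk1: "bl \<sigma> (m - 1) = opscale (complex_of_real (cc (m - 2))) (Mz (bl \<sigma> 1) (m - 2))" if "2 \<le> m"
    proof -
      have "m - 2 < m" "m - 2 < N" "m - 2 + 1 = m - 1" using that less.prems by auto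
      then show ?thesis using less.IH[of "m - 2"] by (simp del: opscale_apply)
    qed
    show ?thesis by (rule step(2)[OF C L k hk hk1]) (use W1 in auto)
  qed
qed

lemma recur_comm:
  assumes C: "cleanc \<sigma>" and L: "Lgen N n \<Gamma> \<gamma> \<sigma> = 0" and W1: "mm (R 1) (bl \<sigma> 1) = bl \<sigma> 1"
    and k: "k \<in> {1..N-1}"
  shows "mm (R k) (bl \<sigma> k) = mm (bl \<sigma> k) (R k)"
proof (rule step(1)[OF C L k])
  have "k - 1 < N" "k - 1 + 1 = k" using k by auto
  then show "bl \<sigma> k = opscale (complex_of_real (cc (k - 1))) (Mz (bl \<sigma> 1) (k - 1))"
    using recur[OF C L W1, of "k - 1"] by (simp del: opscale_apply)
  show "bl \<sigma> (k - 1) = opscale (complex_of_real (cc (k - 2))) (Mz (bl \<sigma> 1) (k - 2))" if "2 \<le> k"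
  proof -
    have "k - 2 < N" "k - 2 + 1 = k - 1" using k that by auto
    then show ?thesis using recur[OF C L W1, of "k - 2"] by (simp del: opscale_apply)
  qed
  show "k = 1 \<Longrightarrow> mm (R 1) (bl \<sigma> 1) = bl \<sigma> 1" using W1 by simp
qed

lemma Q_left:
  assumes X: "X \<in> hops B" and r: "\<And>j. X Pl j = 0" "\<And>j. X Mn j = 0"
  shows "(\<Sum>k\<in>{1..N}. mm (P k) X) = X"
proof (intro ext)
  fix i j
  have "(\<Sum>k\<in>{1..N}. mm (P k) X) i j = (\<Sum>k\<in>{1..N}. if i \<in> E k then X i j else 0)"
    by (simp add: sum_apply2 Pk_left[OF E_sub finB])
  also have "\<dots> = X i j"
  proof (cases i)
    case (St k0 a)
    have "(\<Sum>k\<in>{1..N}. if i \<in> E k then X i j else 0) = (\<Sum>k\<in>{1..N}. if k = k0 then (if a < n k0 then X i j else 0) else 0)"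
      by (intro sum.cong refl) (auto simp: St Eb_def)
    also have "\<dots> = (if k0 \<in> {1..N} then (if a < n k0 then X i j else 0) else 0)"
      by (simp add: sum.delta)
    also have "\<dots> = X i j"
      using X St inB_St by (auto simp: hops_def)
    finally show ?thesis .
  qed (auto simp: Eb_def r)
  finally show "(\<Sum>k\<in>{1..N}. mm (P k) X) i j = X i j" .
qed

lemma Q_right:
  assumes X: "X \<in> hops B" and r: "\<And>j. X j Pl = 0" "\<And>j. X j Mn = 0"
  shows "(\<Sum>k\<in>{1..N}. mm X (P k)) = X"
proof (intro ext)
  fix i j
  have "(\<Sum>k\<in>{1..N}. mm X (P k)) i j = (\<Sum>k\<in>{1..N}. if j \<in> E k then X i j else 0)"
    by (simp add: sum_apply2 Pk_right[OF E_sub finB])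
  also have "\<dots> = X i j"
  proof (cases j)
    case (St k0 a)
    have "(\<Sum>k\<in>{1..N}. if j \<in> E k then X i j else 0) = (\<Sum>k\<in>{1..N}. if k = k0 then (if a < n k0 then X i j else 0) else 0)"
      by (intro sum.cong refl) (auto simp: St Eb_def)
    also have "\<dots> = (if k0 \<in> {1..N} then (if a < n k0 then X i j else 0) else 0)"
      by (simp add: sum.delta)
    also have "\<dots> = X i j"
      using X St inB_St by (auto simp: hops_def)
    finally show ?thesis .
  qed (auto simp: Eb_def r)
  finally show "(\<Sum>k\<in>{1..N}. mm X (P k)) i j = X i j" .
qed

lemma cleanc_rows:
  assumes "cleanc \<sigma>"
  shows "\<sigma> j Pl = 0" "\<sigma> j Mn = 0" "\<sigma> Pl j = 0" "\<sigma> Mn j = 0"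
proof -
  have h: "adj \<sigma> = \<sigma>" "app B \<sigma> (ket Pl) = 0" "app B \<sigma> (ket Mn) = 0" using assms unfolding cleanc_def by auto
  show c1: "\<sigma> j Pl = 0" using fun_cong[OF h(2), of j] by (simp add: app_ket[OF finB])
  show c2: "\<sigma> j Mn = 0" using fun_cong[OF h(3), of j] by (simp add: app_ket[OF finB])
  show "\<sigma> Pl j = 0" using c1 fun_cong[OF fun_cong[OF h(1), of Pl], of j] by (simp add: adj_def)
  show "\<sigma> Mn j = 0" using c2 fun_cong[OF fun_cong[OF h(1), of Mn], of j] by (simp add: adj_def)
qed

lemma blockdiag:
  assumes C: "cleanc \<sigma>" and L: "Lgen N n \<Gamma> \<gamma> \<sigma> = 0"
  shows "\<sigma> = (\<Sum>k\<in>{1..N}. bl \<sigma> k)"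
proof -
  have h: "\<sigma> \<in> hops B" using C unfolding cleanc_def by simp
  have "\<sigma> = (\<Sum>k\<in>{1..N}. mm (P k) \<sigma>)"
    using Q_left[OF h] cleanc_rows[OF C] by simp
  also have "\<dots> = (\<Sum>k\<in>{1..N}. bl \<sigma> k)"
  proof (intro sum.cong refl)
    fix k assume k: "k \<in> {1..N}"
    have hk: "mm (P k) \<sigma> \<in> hops B" using k h by (intro hops_mmul hops_P) auto
    have c: "mm (P k) \<sigma> j Pl = 0" "mm (P k) \<sigma> j Mn = 0" for j
      unfolding mmul_def using cleanc_rows[OF C] by auto
    have "mm (P k) \<sigma> = (\<Sum>l\<in>{1..N}. mm (mm (P k) \<sigma>) (P l))"
      using Q_right[OF hk] c by simp
    also have "\<dots> = (\<Sum>l\<in>{1..N}. if l = k then bl \<sigma> k else 0)"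
    proof (intro sum.cong refl)
      fix l assume l: "l \<in> {1..N}"
      show "mm (mm (P k) \<sigma>) (P l) = (if l = k then bl \<sigma> k else 0)"
      proof (cases "l = k")
        case True then show ?thesis by (simp add: bl_def mmul_assoc)
      next
        case False
        have "mm (P k) (mm \<sigma> (P l)) = 0" using k l False by (intro offdiag[OF C L]) auto
        then show ?thesis using False by (simp add: mmul_assoc)
      qed
    qed
    also have "\<dots> = bl \<sigma> k" using k by (simp add: sum.delta)
    finally show "mm (P k) \<sigma> = bl \<sigma> k" .
  qed
  finally show ?thesis .
qed

definition Lift :: "cop \<Rightarrow> cop" where
  "Lift X = (\<Sum>m<N. opscale (complex_of_real (cc m)) (Mz X m))"

lemma repr:
  assumes C: "cleanc \<sigma>" and L: "Lgen N n \<Gamma> \<gamma> \<sigma> = 0" and W1: "mm (R 1) (bl \<sigma> 1) = bl \<sigma> 1"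
  shows "\<sigma> = Lift (bl \<sigma> 1)"
proof -
  have "\<sigma> = (\<Sum>k\<in>{1..N}. bl \<sigma> k)" by (rule blockdiag[OF C L])
  also have "{1..N} = Suc ` {..<N}" by (simp add: image_Suc_lessThan)
  also have "(\<Sum>k\<in>Suc ` {..<N}. bl \<sigma> k) = (\<Sum>m<N. bl \<sigma> (Suc m))"
    by (rule sum.reindex_cong[where l=Suc]) auto
  also have "\<dots> = Lift (bl \<sigma> 1)" unfolding Lift_def
  proof (intro sum.cong refl)
    fix m assume "m \<in> {..<N}"
    then have "m < N" by simp
    from recur[OF C L W1 this] show "bl \<sigma> (Suc m) = opscale (complex_of_real (cc m)) (Mz (bl \<sigma> 1) m)"
      by (simp only: Suc_eq_plus1)
  qed
  finally show ?thesis .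
qed

end

context model begin

lemma Mz_rows: "rowsin (E (m + 1)) (Mz X m)"
  unfolding Mz_def by (intro rowsin_mmul zp_rows)
lemma Mz_cols: "colsin (E (m + 1)) (Mz X m)"
  unfolding Mz_def by (intro colsin_mmul) (unfold colsin_adj, rule zp_rows)

lemma Lift_left:
  assumes A: "colsin (E j) A" and j: "1 \<le> j" "j \<le> N"
  shows "mm A (Lift X) = opscale (complex_of_real (cc (j - 1))) (mm A (Mz X (j - 1)))"
proof -
  have "mm A (Lift X) = (\<Sum>m<N. opscale (complex_of_real (cc m)) (mm A (Mz X m)))"
    unfolding Lift_def by (simp add: mmul_sum_right mmul_scale_right)
  also have "\<dots> = (\<Sum>m<N. if m = j - 1 then opscale (complex_of_real (cc m)) (mm A (Mz X m)) else 0)"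
  proof (intro sum.cong refl)
    fix m assume "m \<in> {..<N}"
    show "opscale (complex_of_real (cc m)) (mm A (Mz X m)) = (if m = j - 1 then opscale (complex_of_real (cc m)) (mm A (Mz X m)) else 0)"
    proof (cases "m = j - 1")
      case False
      then have "E j \<inter> E (m + 1) = {}" using j by (intro Eb_disj) auto
      then have "mm A (Mz X m) = 0" by (rule mmul_disj[OF A Mz_rows])
      then show ?thesis using False by simp
    qed simp
  qed
  also have "\<dots> = opscale (complex_of_real (cc (j - 1))) (mm A (Mz X (j - 1)))"
  proof -
    have "j - 1 < N" using j by auto
    then show ?thesis by (simp add: sum.delta del: One_nat_def)
  qed
  finally show ?thesis .
qed

lemma Lift_right:
  assumes A: "rowsin (E j) A" and j: "1 \<le> j" "j \<le> N"
  shows "mm (Lift X) A = opscale (complex_of_real (cc (j - 1))) (mm (Mz X (j - 1)) A)"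
proof -
  have "mm (Lift X) A = (\<Sum>m<N. opscale (complex_of_real (cc m)) (mm (Mz X m) A))"
    unfolding Lift_def by (simp add: mmul_sum_left mmul_scale_left)
  also have "\<dots> = (\<Sum>m<N. if m = j - 1 then opscale (complex_of_real (cc m)) (mm (Mz X m) A) else 0)"
  proof (intro sum.cong refl)
    fix m assume "m \<in> {..<N}"
    show "opscale (complex_of_real (cc m)) (mm (Mz X m) A) = (if m = j - 1 then opscale (complex_of_real (cc m)) (mm (Mz X m) A) else 0)"
    proof (cases "m = j - 1")
      case False
      then have "E (m + 1) \<inter> E j = {}" using j by (intro Eb_disj) auto
      then have "mm (Mz X m) A = 0" by (rule mmul_disj[OF Mz_cols A])
      then show ?thesis using False by simp
    qed simp
  qed
  also have "\<dots> = opscale (complex_of_real (cc (j - 1))) (mm (Mz X (j - 1)) A)"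
  proof -
    have "j - 1 < N" using j by auto
    then show ?thesis by (simp add: sum.delta del: One_nat_def)
  qed
  finally show ?thesis .
qed

definition Bp :: "nat \<Rightarrow> cop" where
  "Bp m = mm (adj (zp m)) (zp m)"

lemma Bp_step: "1 \<le> k \<Longrightarrow> Bp k = mm (adj (zp (k - 1))) (mm (R k) (zp (k - 1)))"
  unfolding Bp_def Zabs_def by (simp add: zp_step adj_mmul mmul_assoc)

lemma comm_lift:
  assumes k: "1 \<le> k" "k < N" and c: "mm (Bp k) X = mm X (Bp k)"
  shows "mm (R k) (Mz X (k - 1)) = mm (Mz X (k - 1)) (R k)"
proof -
  let ?z = "zp (k - 1)"
  have co: "mm ?z (adj ?z) = P k" using zp_co[of "k - 1"] k by simp
  have PR: "mm (P k) (R k) = R k" "mm (R k) (P k) = R k" using PR_gen[OF k] RP_gen[OF k] by auto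
  have "mm (R k) (Mz X (k - 1)) = mm (mm (P k) (R k)) (Mz X (k - 1))" using PR by simp
  also have "\<dots> = mm ?z (mm (mm (Bp k) X) (adj ?z))"
    unfolding co[symmetric] Bp_step[OF k(1)] Mz_def by (simp add: mmul_assoc)
  also have "\<dots> = mm ?z (mm (mm X (Bp k)) (adj ?z))" using c by simp
  also have "\<dots> = mm (Mz X (k - 1)) (mm (R k) (P k))"
    unfolding co[symmetric] Bp_step[OF k(1)] Mz_def by (simp add: mmul_assoc)
  also have "\<dots> = mm (Mz X (k - 1)) (R k)" using PR by simp
  finally show ?thesis .
qed

lemma Tk_Lift_zero:
  assumes k: "k \<in> {1..N-1}" and c: "mm (Bp k) X = mm X (Bp k)"
  shows "Tk k (Lift X) = 0"
proof -
  have k1: "1 \<le> k" "k < N" "k \<le> N" "1 \<le> k + 1" "k + 1 \<le> N" using k by auto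
  have GpN: "\<Gamma> Neg (W k) > 0" "\<Gamma> Pos (W k) > 0" using Gp[OF Wk_freqs] k by auto
  let ?M = "Mz X (k - 1)" and ?M' = "Mz X k"
  let ?c = "complex_of_real (cc (k - 1))" and ?c' = "complex_of_real (cc k)"
  have cm: "mm (R k) ?M = mm ?M (R k)" by (rule comm_lift[OF k1(1,2) c])
  have e1: "mm (R k) (Lift X) = opscale ?c (mm (R k) ?M)" using Lift_left[OF colsin_R k1(1,3)] .
  have e2: "mm (Lift X) (R k) = opscale ?c (mm (R k) ?M)" using Lift_right[OF rowsin_R k1(1,3)] cm by simp
  have e3: "mm (P (k + 1)) (Lift X) = opscale ?c' ?M'"
  proof -
    have "mm (P (k + 1)) (Lift X) = opscale ?c' (mm (P (k + 1)) ?M')"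
      using Lift_left[OF colsin_Pk k1(4,5)] by simp
    also have "mm (P (k + 1)) ?M' = ?M'" by (intro Pk_left_id E_sub[OF k1(4,5)] finB Mz_rows)
    finally show ?thesis .
  qed
  have e4: "mm (Lift X) (P (k + 1)) = opscale ?c' ?M'"
  proof -
    have "mm (Lift X) (P (k + 1)) = opscale ?c' (mm ?M' (P (k + 1)))"
      using Lift_right[OF rowsin_Pk k1(4,5)] by simp
    also have "mm ?M' (P (k + 1)) = ?M'" by (intro Pk_right_id E_sub[OF k1(4,5)] finB Mz_cols)
    finally show ?thesis .
  qed
  have e5: "mm (mm (Z k) (Lift X)) (adj (Z k)) = opscale ?c ?M'"
  proof -
    have "mm (mm (Z k) (Lift X)) (adj (Z k)) = opscale ?c (mm (mm (Z k) ?M) (adj (Z k)))"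
      using Lift_left[OF colsin_Zk k1(1,3)] by (simp add: mmul_scale_left)
    also have "mm (mm (Z k) ?M) (adj (Z k)) = ?M'" using M_step[OF k1(1)] by (simp add: mmul_assoc)
    finally show ?thesis .
  qed
  have e6: "mm (mm (adj (Z k)) (Lift X)) (Z k) = opscale ?c' (mm (R k) ?M)"
  proof -
    have "mm (mm (adj (Z k)) (Lift X)) (Z k) = opscale ?c' (mm (mm (adj (Z k)) ?M') (Z k))"
      using Lift_left[OF colsin_adjZ k1(4,5)] by (simp add: mmul_scale_left)
    also have "mm (mm (adj (Z k)) ?M') (Z k) = mm (R k) (mm ?M (R k))"
      unfolding M_step[OF k1(1), symmetric] Zabs_def by (simp add: mmul_assoc)
    also have "\<dots> = mm (R k) ?M" unfolding cm[symmetric] by (simp flip: mmul_assoc add: RR[OF k1(1,2)])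
    finally show ?thesis .
  qed
  have ccs: "cc k = cc (k - 1) * \<Gamma> Neg (W k) / \<Gamma> Pos (W k)" by (rule cc_step[OF k1(1)])
  show ?thesis
  proof (intro ext)
    fix i j
    show "Tk k (Lift X) i j = 0 i j"
      unfolding Tk_def e1 e2 e3 e4 e5 e6 mmul_assoc[symmetric]
      using GpN by (simp add: ccs ak_def bk_def field_simps)
  qed
qed

end

lemma app_colsin:
  assumes "colsin S M" "\<And>i. i \<in> S \<Longrightarrow> v i = 0" shows "app B M v = 0"
proof (intro ext)
  fix i show "app B M v i = 0 i" unfolding app_def zero_fun_apply
  proof (rule sum.neutral, rule ballI)
    fix x show "M i x * v x = 0" by (cases "x \<in> S") (use assms in \<open>auto simp: colsin_def\<close>)
  qed
qed

context model begin

lemma Mz0: "mm (P 1) X = X \<Longrightarrow> adj X = X \<Longrightarrow> Mz X 0 = X"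
proof -
  assume a: "mm (P 1) X = X" "adj X = X"
  have b: "mm X (P 1) = X" using a by (metis adj_Pk adj_mmul)
  show ?thesis unfolding Mz_def using a b by (simp add: adj_Pk)
qed

lemma Lift_hops: "X \<in> hops B \<Longrightarrow> Lift X \<in> hops B"
  unfolding Lift_def Mz_def by (intro hops_sum hops_scale hops_mmul hops_adj zp_hops) auto

lemma Lift_adj: "adj X = X \<Longrightarrow> adj (Lift X) = Lift X"
  unfolding Lift_def Mz_def by (simp add: adj_sum adj_scale adj_mmul mmul_assoc)

lemma Lift_psd: "psd B X \<Longrightarrow> psd B (Lift X)"
  unfolding Lift_def Mz_def
proof (intro psd_sum psd_scale)
  fix m assume "psd B X" "m \<in> {..<N}"
  then show "psd B (mm (zp m) (mm X (adj (zp m))))"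
    using psd_conj[of B X "zp m"] zp_hops[of m] by (simp add: mmul_assoc)
  show "0 \<le> cc m" using cc_pos \<open>m \<in> {..<N}\<close> by (simp add: less_imp_le)
qed

lemma Lift_add: "Lift (X + Y) = Lift X + Lift Y"
  unfolding Lift_def Mz_def by (simp add: mmul_add_left mmul_add_right opscale_add sum.distrib)
lemma Lift_scale: "Lift (opscale c X) = opscale c (Lift X)"
  unfolding Lift_def Mz_def by (simp add: mmul_scale_left mmul_scale_right opscale_sum mult.commute)
lemma Lift_diff: "Lift (X - Y) = Lift X - Lift Y"
  unfolding Lift_def Mz_def by (simp add: mmul_diff_left mmul_diff_right opscale_diff sum_subtractf)

lemma bl_Lift: "mm (P 1) X = X \<Longrightarrow> adj X = X \<Longrightarrow> bl (Lift X) 1 = X"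
proof -
  assume a: "mm (P 1) X = X" "adj X = X"
  have b: "mm X (P 1) = X" using a by (metis adj_Pk adj_mmul)
  have "mm (P 1) (Lift X) = opscale (complex_of_real (cc 0)) (mm (P 1) (Mz X 0))"
    using Lift_left[OF colsin_Pk, of 1 X] N2 by simp
  then have "mm (P 1) (Lift X) = X" using Mz0[OF a] a by simp
  then show ?thesis unfolding bl_def using b by (simp flip: mmul_assoc)
qed

lemma Lift_zero_iff: "mm (P 1) X = X \<Longrightarrow> adj X = X \<Longrightarrow> Lift X = 0 \<Longrightarrow> X = 0"
  using bl_Lift by (metis bl_def mmul_zero_left mmul_zero_right)

lemma app_P_self: "1 \<le> k \<Longrightarrow> k \<le> N \<Longrightarrow> (\<And>i. v i \<noteq> 0 \<Longrightarrow> i \<in> E k) \<Longrightarrow> app B (P k) v = v"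
proof (intro ext)
  fix i assume k: "1 \<le> k" "k \<le> N" and v: "\<And>i. v i \<noteq> 0 \<Longrightarrow> i \<in> E k"
  have "app B (P k) v i = (\<Sum>l\<in>B. if l = i then (if i \<in> E k then v i else 0) else 0)"
    unfolding app_def by (intro sum.cong refl) (auto simp: Pk_apply)
  also have "\<dots> = (if i \<in> B then (if i \<in> E k then v i else 0) else 0)" using finB by (simp add: sum.delta)
  also have "\<dots> = v i" using v E_sub[OF k] by auto
  finally show "app B (P k) v i = v i" .
qed

lemma Pf1: "app B (P 1) f1 = f1" using app_P_self[of 1 f1] N2 phi_nz by auto
lemma PfN: "app B (P N) fN = fN" using app_P_self[of N fN] N2 phi_nz by auto

definition valid :: "cop \<Rightarrow> bool" where
  "valid X \<longleftrightarrow> X \<in> hops B \<and> adj X = X \<and> mm (P 1) X = X \<and> app B X f1 = 0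
     \<and> app B (Mz X (N - 1)) fN = 0 \<and> (\<forall>m\<in>{1..N-1}. mm (Bp m) X = mm X (Bp m))"

lemma Lift_cleanc:
  assumes V: "valid X"
  shows "cleanc (Lift X)"
proof -
  have h: "X \<in> hops B" "adj X = X" "mm (P 1) X = X" "app B X f1 = 0" "app B (Mz X (N - 1)) fN = 0"
    using V unfolding valid_def by auto
  have appL: "app B (Lift X) v = (\<Sum>m<N. (\<lambda>i. complex_of_real (cc m) * app B (Mz X m) v i))" for v
    unfolding Lift_def by (simp add: app_sum app_scale)
  have z1: "app B (Mz X m) v = 0" if "\<And>i. i \<in> E (m + 1) \<Longrightarrow> v i = 0" for m v
    by (rule app_colsin[OF Mz_cols that])
  have "app B (Mz X m) (ket Pl) = 0" for m by (rule z1) (auto simp: ket_def Eb_def)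
  then have kPl: "app B (Lift X) (ket Pl) = 0" unfolding appL by (intro sum.neutral ballI ext) simp
  have "app B (Mz X m) (ket Mn) = 0" for m by (rule z1) (auto simp: ket_def Eb_def)
  then have kMn: "app B (Lift X) (ket Mn) = 0" unfolding appL by (intro sum.neutral ballI ext) simp
  have kf1: "app B (Lift X) f1 = 0"
  proof -
    have "app B (Mz X m) f1 = 0" for m
    proof (cases m)
      case 0 then show ?thesis using Mz0[OF h(3,2)] h(4) by simp
    next
      case (Suc m')
      then show ?thesis by (intro z1) (use phi_nz Eb_def in fastforce)
    qed
    then show ?thesis unfolding appL by (intro sum.neutral ballI ext) simp
  qed
  have kfN: "app B (Lift X) fN = 0"
  proof -
    have "app B (Mz X m) fN = 0" if "m < N" for m
    proof (cases "m = N - 1")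
      case True then show ?thesis using h(5) by simp
    next
      case False
      then have "m + 1 \<noteq> N" using that by auto
      then show ?thesis by (intro z1) (use phi_nz Eb_def in fastforce)
    qed
    then show ?thesis unfolding appL by (intro sum.neutral ballI ext) simp
  qed
  show ?thesis unfolding cleanc_def
    using Lift_hops[OF h(1)] Lift_adj[OF h(2)] kPl kMn kf1 kfN by simp
qed

lemma Lift_inv:
  assumes V: "valid X"
  shows "Lgen N n \<Gamma> \<gamma> (Lift X) = 0"
proof -
  have C: "cleanc (Lift X)" by (rule Lift_cleanc[OF V])
  have "Lgen N n \<Gamma> \<gamma> (Lift X) = (\<Sum>k\<in>{1..N-1}. Tk k (Lift X))"
    using C unfolding cleanc_def by (intro clean) auto
  also have "\<dots> = 0"
    using V unfolding valid_def by (intro sum.neutral ballI Tk_Lift_zero) auto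
  finally show ?thesis .
qed

end

context model begin

lemma Bp_hops: "m < N \<Longrightarrow> Bp m \<in> hops B"
  unfolding Bp_def by (intro hops_mmul hops_adj zp_hops)
lemma Bp_adj: "adj (Bp m) = Bp m"
  unfolding Bp_def by (simp add: adj_mmul)
lemma Bp0: "Bp 0 = P 1"
  unfolding Bp_def using PP_same[of 1] N2 by (simp add: adj_Pk)

lemma zp_Bp: "m \<le> m' \<Longrightarrow> m' < N \<Longrightarrow> mm (zp m') (Bp m) = zp m'"
proof (induction m' rule: dec_induct)
  case base
  have "mm (zp m) (Bp m) = mm (mm (zp m) (adj (zp m))) (zp m)" unfolding Bp_def by (simp add: mmul_assoc)
  also have "\<dots> = mm (P (m + 1)) (zp m)" using zp_co base by simp
  also have "\<dots> = zp m" using E_sub[of "m+1"] base by (intro Pk_left_id finB zp_rows) auto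
  finally show ?case .
next
  case (step m')
  then show ?case by (simp add: mmul_assoc)
qed

lemma Bp_nest: assumes "m \<le> m'" "m' < N"
  shows "mm (Bp m') (Bp m) = Bp m'" "mm (Bp m) (Bp m') = Bp m'"
proof -
  have "mm (Bp m') (Bp m) = mm (adj (zp m')) (mm (zp m') (Bp m))" unfolding Bp_def[of m'] by (simp add: mmul_assoc)
  also have "\<dots> = mm (adj (zp m')) (zp m')" using zp_Bp[OF assms] by simp
  also have "\<dots> = Bp m'" unfolding Bp_def ..
  finally show a: "mm (Bp m') (Bp m) = Bp m'" .
  show "mm (Bp m) (Bp m') = Bp m'" by (metis a Bp_adj adj_mmul)
qed

lemma Bp_comm: "m < N \<Longrightarrow> m' < N \<Longrightarrow> mm (Bp m) (Bp m') = mm (Bp m') (Bp m)"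
  by (cases "m \<le> m'") (auto simp: Bp_nest)

lemma Bp_idem: "m < N \<Longrightarrow> mm (Bp m) (Bp m) = Bp m"
  using Bp_nest[of m m] by simp

lemma P1_Bp: "m < N \<Longrightarrow> mm (P 1) (Bp m) = Bp m"
  using Bp_nest(2)[of 0 m] Bp0 by simp

lemma valid_bl:
  assumes C: "cleanc \<sigma>" and L: "Lgen N n \<Gamma> \<gamma> \<sigma> = 0" and W1: "mm (R 1) (bl \<sigma> 1) = bl \<sigma> 1"
  shows "valid (bl \<sigma> 1)"
proof -
  let ?X = "bl \<sigma> 1"
  have h: "\<sigma> \<in> hops B" "adj \<sigma> = \<sigma>" "app B \<sigma> f1 = 0" "app B \<sigma> fN = 0"
    using C unfolding cleanc_def by auto
  have Xh: "?X \<in> hops B" unfolding bl_def using h(1) N2 by (intro hops_mmul hops_P) auto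
  have Xa: "adj ?X = ?X" by (rule bl_herm[OF h(2)])
  have XP: "mm (P 1) ?X = ?X" using bl_P[of 1] N2 by simp
  have Xf: "app B ?X f1 = 0" unfolding bl_def app_mmul Pf1 h(3) by simp
  have XfN: "app B (Mz ?X (N - 1)) fN = 0"
  proof -
    have e: "bl \<sigma> N = opscale (complex_of_real (cc (N - 1))) (Mz ?X (N - 1))"
      using recur[OF C L W1, of "N - 1"] N2 by simp
    have "app B (bl \<sigma> N) fN = 0" unfolding bl_def app_mmul PfN h(4) by simp
    then have "(\<lambda>i. complex_of_real (cc (N - 1)) * app B (Mz ?X (N - 1)) fN i) = 0"
      unfolding e app_scale .
    moreover have "cc (N - 1) \<noteq> 0" using cc_pos[of "N - 1"] N2 by simp
    ultimately show ?thesis by (auto simp: fun_eq_iff)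
  qed
  have comm: "mm (Bp m) ?X = mm ?X (Bp m)" if "m < N" for m
    using that
  proof (induction m)
    case 0 then show ?case using XP Xa Bp0 by (metis adj_Pk adj_mmul)
  next
    case (Suc m)
    let ?z = "zp m"
    have k: "Suc m \<in> {1..N-1}" using Suc by auto
    have c1: "mm (R (Suc m)) (bl \<sigma> (Suc m)) = mm (bl \<sigma> (Suc m)) (R (Suc m))" by (rule recur_comm[OF C L W1 k])
    have e: "bl \<sigma> (Suc m) = opscale (complex_of_real (cc m)) (Mz ?X m)"
      using recur[OF C L W1, of m] Suc by simp
    have ccz: "complex_of_real (cc m) \<noteq> 0" using cc_pos[of m] Suc by simp
    have c2: "mm (R (Suc m)) (Mz ?X m) = mm (Mz ?X m) (R (Suc m))"
    proof -
      have "opscale (complex_of_real (cc m)) (mm (R (Suc m)) (Mz ?X m)) = opscale (complex_of_real (cc m)) (mm (Mz ?X m) (R (Suc m)))"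
        using c1 unfolding e by (simp add: mmul_scale_left mmul_scale_right)
      then show ?thesis using ccz by (metis opscale_scale opscale_one right_inverse mult.commute)
    qed
    have bs: "Bp (Suc m) = mm (adj ?z) (mm (R (Suc m)) ?z)" using Bp_step[of "Suc m"] by simp
    have "mm (mm (Bp (Suc m)) ?X) (Bp m) = mm (adj ?z) (mm (mm (R (Suc m)) (Mz ?X m)) ?z)"
      unfolding bs Bp_def[of m] Mz_def by (simp add: mmul_assoc)
    also have "\<dots> = mm (adj ?z) (mm (mm (Mz ?X m) (R (Suc m))) ?z)" using c2 by simp
    also have "\<dots> = mm (mm (Bp m) ?X) (Bp (Suc m))"
      unfolding bs Bp_def[of m] Mz_def by (simp add: mmul_assoc)
    finally have f: "mm (mm (Bp (Suc m)) ?X) (Bp m) = mm (mm (Bp m) ?X) (Bp (Suc m))" .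
    have IH: "mm (Bp m) ?X = mm ?X (Bp m)" using Suc by simp
    have n1: "mm (Bp (Suc m)) (Bp m) = Bp (Suc m)" "mm (Bp m) (Bp (Suc m)) = Bp (Suc m)"
      using Bp_nest[of m "Suc m"] Suc by auto
    have "mm (mm (Bp (Suc m)) ?X) (Bp m) = mm (Bp (Suc m)) ?X"
      using IH n1 by (metis mmul_assoc)
    moreover have "mm (mm (Bp m) ?X) (Bp (Suc m)) = mm ?X (Bp (Suc m))"
      using IH n1 by (metis mmul_assoc)
    ultimately show ?case using f by simp
  qed
  show ?thesis unfolding valid_def using Xh Xa XP Xf XfN comm by auto
qed

end

lemma kernel_from_orth:
  assumes "finite B" "\<rho> \<in> hops B" "adj \<rho> = \<rho>" "u \<in> hvecs B" "\<forall>v\<in>hvecs B. inner_h B u (app B \<rho> v) = 0"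
  shows "app B \<rho> u = 0"
proof -
  let ?w = "app B \<rho> u"
  have w: "?w \<in> hvecs B" by (rule hvecs_app[OF assms(2)])
  have "inner_h B u (app B \<rho> ?w) = inner_h B ?w ?w"
    using inner_adj[of B u \<rho> ?w] assms(3) by simp
  then have "inner_h B ?w ?w = 0" using assms(5) w by simp
  then have "\<forall>i\<in>B. ?w i = 0" using inner_self_zero[OF assms(1)] by blast
  then show ?thesis using w unfolding hvecs_def by (intro ext) auto
qed

lemma convex_comb_eq: "convex_comb t A C = opscale (complex_of_real t) A + opscale (complex_of_real (1 - t)) C"
  unfolding convex_comb_def by (intro ext) simp

lemma inherit:
  assumes fin: "finite B" and X: "X \<in> hops B" "psd B X" and Y: "Y \<in> hops B" "psd B Y"
    and t: "0 < t" "t < 1" and v: "v \<in> hvecs B" and z: "app B (convex_comb t X Y) v = 0"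
  shows "app B X v = 0 \<and> app B Y v = 0"
proof -
  let ?a = "inner_h B v (app B X v)" and ?b = "inner_h B v (app B Y v)"
  have "inner_h B v (app B (convex_comb t X Y) v) = complex_of_real t * ?a + complex_of_real (1 - t) * ?b"
    unfolding convex_comb_eq app_add inner_add_right inner_app_scale ..
  then have e: "complex_of_real t * ?a + complex_of_real (1 - t) * ?b = 0" using z by simp
  have pa: "Im ?a = 0" "Re ?a \<ge> 0" using X(2) v unfolding psd_def by auto
  have pb: "Im ?b = 0" "Re ?b \<ge> 0" using Y(2) v unfolding psd_def by auto
  have "t * Re ?a + (1 - t) * Re ?b = 0" using arg_cong[OF e, of Re] by simp
  moreover have "t * Re ?a \<ge> 0" "(1 - t) * Re ?b \<ge> 0" using pa pb t by auto
  ultimately have "t * Re ?a = 0" "(1 - t) * Re ?b = 0" by linarith+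
  then have "Re ?a = 0" "Re ?b = 0" using t by auto
  then have "?a = 0" "?b = 0" using pa pb by (auto simp: complex_eq_iff)
  then show ?thesis using psd_kernel[OF X(1,2) fin v] psd_kernel[OF Y(1,2) fin v] by auto
qed

lemma cols_zero:
  assumes fin: "finite B" and M: "M \<in> hops B" "K \<in> hops B" and z: "\<And>j. j \<in> B \<Longrightarrow> app B M (app B K (ket j)) = 0"
  shows "mmul B M K = 0"
proof (rule hops_eqI[OF hops_mmul[OF M] hops_zero])
  fix i j assume "i \<in> B" "j \<in> B"
  have "app B (mmul B M K) (ket j) = 0" using z[OF \<open>j \<in> B\<close>] by (simp add: app_mmul)
  then show "mmul B M K i j = 0 i j" using fin \<open>j \<in> B\<close> by (simp add: app_ket fun_eq_iff)
qed

lemma Dis_scale_rho: "Dis B L (opscale c X) = opscale c (Dis B L X)"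
  unfolding Dis_def by (simp add: mmul_scale_left mmul_scale_right opscale_diff opscale_add)

lemma Lgen_scale: "Lgen N n \<Gamma> \<gamma> (opscale c X) = opscale c (Lgen N n \<Gamma> \<gamma> X)"
  unfolding Lgen_op by (simp add: Dis_scale_rho mmul_scale_left mmul_scale_right opscale_diff opscale_add
      opscale_sum mult.commute)

lemma state_scale:
  assumes "X \<in> hops B" "psd B X" "trace_h B X = complex_of_real l" "l > 0"
  shows "is_state B (opscale (complex_of_real (inverse l)) X)"
proof -
  have "psd B (opscale (complex_of_real (inverse l)) X)" by (rule psd_scale) (use assms in auto)
  moreover have "trace_h B (opscale (complex_of_real (inverse l)) X) = 1"
    using assms by (simp add: trace_scale)
  ultimately show ?thesis unfolding is_state_alt using assms by (auto intro!: hops_scale)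
qed

context model begin

lemma W_mem:
  assumes u: "u \<in> hvecs B"
  shows "app B (P 1 - R 1) u \<in> Wfree N n \<Gamma>"
proof -
  define v where "v = app B (P 1 - R 1) u"
  have N1: "1 < N" using N2 by simp
  have rows: "rowsin (E 1) (P 1 - R 1)" by (intro rowsin_diff rowsin_Pk rowsin_R)
  have vE: "v i = 0" if "i \<notin> E 1" for i
    using rows that unfolding rowsin_def app_def v_def by simp
  have vh: "v \<in> hvecs B" unfolding v_def by (intro hvecs_app hops_diff hops_P hops_R) (use N2 in auto)
  have col0: "app B M v = 0" if "colsin (E k) M" "k \<noteq> 1" for M k
    by (rule app_colsin[OF that(1)]) (use vE Eb_disj[OF that(2)] in blast)
  have Z1: "app B (Z 1) v = 0"
  proof -
    have "mm (Z 1) (P 1 - R 1) = 0" using ZP[of 1] ZR[of 1] N1 by (simp add: mmul_diff_right)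
    then show ?thesis unfolding v_def by (simp flip: app_mmul)
  qed
  have appZ: "app B (Z k) v = 0" if "k \<in> {1..N-1}" for k
    using that Z1 col0[OF colsin_Zk, of k] by (cases "k = 1") auto
  have appZa: "app B (adj (Z k)) v = 0" if "k \<in> {1..N-1}" for k
    using that col0[OF colsin_adjZ, of k] by auto
  have iPl: "inner_h B (ket Pl) v = 0" using vE[of Pl] finB by (simp add: inner_ket Eb_def)
  have iMn: "inner_h B (ket Mn) v = 0" using vE[of Mn] finB by (simp add: inner_ket Eb_def)
  have if1: "inner_h B f1 v = 0"
  proof -
    have "adj (P 1 - R 1) = P 1 - R 1" by (simp add: adj_diff adj_Pk adj_R)
    then have "inner_h B f1 v = inner_h B (app B (P 1 - R 1) f1) u" unfolding v_def by (metis inner_adj)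
    also have "app B (P 1 - R 1) f1 = 0" unfolding app_diff Pf1 R1f1 by simp
    finally show ?thesis by (simp only: inner_zero_left)
  qed
  have ifN: "inner_h B fN v = 0"
  proof -
    have h0: "\<And>i. cnj (fN i) * v i = 0"
    proof -
      fix i show "cnj (fN i) * v i = 0"
      proof (cases "i \<in> E 1")
        case True
        then have "i \<notin> E N" using Eb_disj[of 1 N n] N2 by auto
        then have "fN i = 0" using phi_nz by blast
        then show ?thesis by simp
      next
        case False then show ?thesis using vE[OF False] by simp
      qed
    qed
    show ?thesis unfolding inner_h_def by (rule sum.neutral, rule ballI, rule h0)
  qed
  have kz: "\<And>c x y. inner_h B y v = 0 \<Longrightarrow> app B (opscale c (ketbra x y)) v = 0"
    by (simp add: app_scale app_ketbra fun_eq_iff)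
  have kz2: "\<And>c M. app B M v = 0 \<Longrightarrow> app B (opscale c M) v = 0"
    by (simp add: app_scale fun_eq_iff)
  show ?thesis
  proof -
  have K: "app B (Kraus N n \<Gamma> e w) v = 0 \<and> app B (adj (Kraus N n \<Gamma> e w)) v = 0"
    if w: "w \<in> freqs N" and e: "e = Neg \<or> e = Pos" for w e
  proof -
    have "app B (Kraus N n \<Gamma> e w) v = 0 \<and> app B (adj (Kraus N n \<Gamma> e w)) v = 0"
    proof -
      consider "w = WPlus" | "w = WMinus" | k where "w = W k" "k \<in> {1..N-1}"
        using w unfolding freqs_eq by auto
      then show ?thesis
      proof cases
        case 1
        have if1': "inner_h B (phi n (Suc 0) 0) v = 0" using if1 by simp
        show ?thesis using e 1
          by (auto simp: Kraus_simps adj_scale adj_ketbra intro!: kz iPl if1')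
      next
        case 2 then show ?thesis using e
          by (auto simp: Kraus_simps adj_scale adj_ketbra intro!: kz iMn ifN)
      next
        case 3 then show ?thesis using e
          by (auto simp: Kraus_simps adj_scale intro!: kz2 appZ appZa)
      qed
    qed
    then show ?thesis .
  qed
  show ?thesis unfolding v_def[symmetric] Wfree_def kernel_h_def using K vh by (auto simp: zero_fun_def)
  qed
qed

end

lemma tr_pos:
  assumes "finite B" "Y \<in> hops B" "psd B Y" "Y \<noteq> 0"
  shows "Re (trace_h B Y) > 0 \<and> trace_h B Y = complex_of_real (Re (trace_h B Y))"
proof -
  have p: "Im (trace_h B Y) = 0" "Re (trace_h B Y) \<ge> 0" using psd_trace_real[OF assms(1,3)] by auto
  have "trace_h B Y \<noteq> 0" using psd_trace_zero[OF assms(2,3,1)] assms(4) by blast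
  then have "Re (trace_h B Y) \<noteq> 0" using p by (auto simp: complex_eq_iff)
  then show ?thesis using p by (auto simp: complex_eq_iff)
qed

context model begin

lemma bl_scale: "bl (opscale c X) k = opscale c (bl X k)"
  unfolding bl_def by (simp add: mmul_scale_left mmul_scale_right)
lemma bl_add: "bl (X + Y) k = bl X k + bl Y k"
  unfolding bl_def by (simp add: mmul_add_left mmul_add_right)
lemma bl_diff: "bl (X - Y) k = bl X k - bl Y k"
  unfolding bl_def by (simp add: mmul_diff_left mmul_diff_right)
lemma Lift_zero: "Lift 0 = 0"
  using Lift_scale[of 0 0] by simp

lemma hyp_extract:
  assumes S: "is_state B \<rho>" and sup: "supported_on B \<rho> (Vsub N n \<inter> ortho_compl B (Wfree N n \<Gamma>))"
  shows "app B \<rho> (ket Pl) = 0" "app B \<rho> (ket Mn) = 0" "mm \<rho> (P 1 - R 1) = 0"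
proof -
  have h: "\<rho> \<in> hops B" "psd B \<rho>" using S unfolding is_state_alt by auto
  have a: "adj \<rho> = \<rho>" by (rule psd_herm[OF h finB])
  have rng: "app B \<rho> v \<in> Vsub N n \<inter> ortho_compl B (Wfree N n \<Gamma>)" if "v \<in> hvecs B" for v
    using sup that unfolding supported_on_def op_range_def by blast
  have oPl: "\<forall>v\<in>hvecs B. inner_h B (ket Pl) (app B \<rho> v) = 0"
    using rng unfolding Vsub_def Let_def ortho_compl_def by blast
  have oMn: "\<forall>v\<in>hvecs B. inner_h B (ket Mn) (app B \<rho> v) = 0"
    using rng unfolding Vsub_def Let_def ortho_compl_def by blast
  show "app B \<rho> (ket Pl) = 0" by (rule kernel_from_orth[OF finB h(1) a ket_Pl_hv oPl])
  show "app B \<rho> (ket Mn) = 0" by (rule kernel_from_orth[OF finB h(1) a ket_Mn_hv oMn])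
  have oW: "\<forall>v\<in>hvecs B. inner_h B w (app B \<rho> v) = 0" if "w \<in> Wfree N n \<Gamma>" for w
    using rng that unfolding ortho_compl_def by blast
  show "mm \<rho> (P 1 - R 1) = 0"
  proof (rule cols_zero[OF finB h(1)])
    show "P 1 - R 1 \<in> hops B" using N2 by (intro hops_diff hops_P hops_R) auto
    fix j assume j: "j \<in> B"
    have w: "app B (P 1 - R 1) (ket j) \<in> Wfree N n \<Gamma>" by (rule W_mem[OF ket_hvecs[OF j]])
    have wh: "app B (P 1 - R 1) (ket j) \<in> hvecs B"
      using N2 by (intro hvecs_app hops_diff hops_P hops_R) auto
    show "app B \<rho> (app B (P 1 - R 1) (ket j)) = 0" by (rule kernel_from_orth[OF finB h(1) a wh oW[OF w]])
  qed
qed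

lemma good:
  assumes h: "\<sigma> \<in> hops B" "psd B \<sigma>" "Lgen N n \<Gamma> \<gamma> \<sigma> = 0"
    and k: "app B \<sigma> (ket Pl) = 0" "app B \<sigma> (ket Mn) = 0" "mm \<sigma> (P 1 - R 1) = 0"
  shows "cleanc \<sigma>" "mm (R 1) (bl \<sigma> 1) = bl \<sigma> 1" "\<sigma> = Lift (bl \<sigma> 1)" "valid (bl \<sigma> 1)"
proof -
  have a: "adj \<sigma> = \<sigma>" by (rule psd_herm[OF h(1,2) finB])
  have f: "app B \<sigma> f1 = 0" "app B \<sigma> fN = 0" using f_kernel[OF h k(1,2)] by auto
  show C: "cleanc \<sigma>" unfolding cleanc_def using h(1) a k(1,2) f by simp
  have sP: "mm \<sigma> (P 1) = mm \<sigma> (R 1)" using k(3) by (simp add: mmul_diff_right)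
  have Ps: "mm (P 1) \<sigma> = mm (R 1) \<sigma>" using arg_cong[OF sP, of adj] a by (simp add: adj_mmul adj_Pk adj_R)
  have RP: "mm (R 1) (P 1) = R 1" using RP_gen[of 1 1] N2 by simp
  have "mm (R 1) (bl \<sigma> 1) = mm (mm (mm (R 1) (P 1)) \<sigma>) (P 1)" unfolding bl_def by (simp only: mmul_assoc)
  also have "\<dots> = mm (mm (P 1) \<sigma>) (P 1)" unfolding RP Ps ..
  also have "\<dots> = bl \<sigma> 1" unfolding bl_def by (simp only: mmul_assoc)
  finally show W1: "mm (R 1) (bl \<sigma> 1) = bl \<sigma> 1" .
  show "\<sigma> = Lift (bl \<sigma> 1)" by (rule repr[OF C h(3) W1])
  show "valid (bl \<sigma> 1)" by (rule valid_bl[OF C h(3) W1])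
qed

lemma tau_eq:
  assumes "\<sigma> = Lift X" "valid X" "mm (R 1) X = X"
  shows "mm (R 1) \<sigma> = X"
proof -
  have v: "mm (P 1) X = X" "adj X = X" using assms(2) unfolding valid_def by auto
  have "mm (R 1) \<sigma> = opscale (complex_of_real (cc 0)) (mm (R 1) (Mz X 0))"
    using Lift_left[OF colsin_R, of 1 X] N2 assms(1) by simp
  then show ?thesis using Mz0[OF v] assms(3) by simp
qed

lemma Lift_state:
  assumes V: "valid Y" and p: "psd B Y" and nz: "Y \<noteq> 0"
  defines "l \<equiv> Re (trace_h B (Lift Y))"
  shows "l > 0" "trace_h B (Lift Y) = complex_of_real l"
    "invariant_state N n \<Gamma> \<gamma> (opscale (complex_of_real (inverse l)) (Lift Y))"
    "bl (opscale (complex_of_real (inverse l)) (Lift Y)) 1 = opscale (complex_of_real (inverse l)) Y"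
proof -
  have v: "Y \<in> hops B" "adj Y = Y" "mm (P 1) Y = Y" using V unfolding valid_def by auto
  have Lh: "Lift Y \<in> hops B" by (rule Lift_hops[OF v(1)])
  have Lp: "psd B (Lift Y)" by (rule Lift_psd[OF p])
  have Lnz: "Lift Y \<noteq> 0" using Lift_zero_iff[OF v(3,2)] nz by blast
  show l: "l > 0" "trace_h B (Lift Y) = complex_of_real l" using tr_pos[OF finB Lh Lp Lnz] l_def by auto
  have "Lgen N n \<Gamma> \<gamma> (opscale (complex_of_real (inverse l)) (Lift Y)) = 0"
    by (simp add: Lgen_scale Lift_inv[OF V])
  moreover have "is_state B (opscale (complex_of_real (inverse l)) (Lift Y))"
    by (rule state_scale[OF Lh Lp l(2) l(1)])
  ultimately show "invariant_state N n \<Gamma> \<gamma> (opscale (complex_of_real (inverse l)) (Lift Y))"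
    unfolding invariant_state_def by (simp add: zero_fun_def)
  show "bl (opscale (complex_of_real (inverse l)) (Lift Y)) 1 = opscale (complex_of_real (inverse l)) Y"
    unfolding bl_scale bl_Lift[OF v(3,2)] ..
qed

end

context model begin

lemma valid_props:
  assumes "valid X"
  shows "X \<in> hops B" "adj X = X" "mm (P 1) X = X" "mm X (P 1) = X" "app B X f1 = 0"
    "app B (Mz X (N - 1)) fN = 0" "\<And>m. m \<in> {1..N-1} \<Longrightarrow> mm (Bp m) X = mm X (Bp m)"
  using assms unfolding valid_def by (auto, metis adj_Pk adj_mmul)

lemma valid_Bp:
  assumes V: "valid X" and p: "psd B X" and m: "m \<in> {1..N-1}"
  shows "valid (mm (Bp m) X)" "valid (X - mm (Bp m) X)" "psd B (mm (Bp m) X)" "psd B (X - mm (Bp m) X)"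
proof -
  note v = valid_props[OF V]
  have mN: "m < N" "m \<le> N - 1" using m by auto
  let ?Q = "Bp m"
  have c: "mm ?Q X = mm X ?Q" using v(7)[OF m] .
  have Qh: "?Q \<in> hops B" by (rule Bp_hops[OF mN(1)])
  have QQ: "mm ?Q ?Q = ?Q" by (rule Bp_idem[OF mN(1)])
  have PQ: "mm (P 1) ?Q = ?Q" by (rule P1_Bp[OF mN(1)])
  have QP: "mm ?Q (P 1) = ?Q" using PQ by (metis Bp_adj adj_Pk adj_mmul)
  have zQ: "mm (zp (N - 1)) ?Q = zp (N - 1)" using zp_Bp[of m "N - 1"] mN N2 by simp
  have MzQ: "Mz (mm ?Q X) (N - 1) = Mz X (N - 1)"
    unfolding Mz_def mmul_assoc[symmetric] zQ by (rule refl)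
  have cm: "mm (Bp k) (mm ?Q X) = mm (mm ?Q X) (Bp k)" if k: "k \<in> {1..N-1}" for k
  proof -
    have kN: "k < N" using k by auto
    have "mm (Bp k) (mm ?Q X) = mm ?Q (mm (Bp k) X)"
      using Bp_comm[OF kN mN(1)] by (simp flip: mmul_assoc)
    also have "\<dots> = mm (mm ?Q X) (Bp k)" using v(7)[OF k] by (simp add: mmul_assoc)
    finally show ?thesis .
  qed
  show V1: "valid (mm ?Q X)"
    unfolding valid_def
  proof (intro conjI ballI)
    show "mm ?Q X \<in> hops B" by (intro hops_mmul Qh v(1))
    show "adj (mm ?Q X) = mm ?Q X" using c v(2) Bp_adj by (simp add: adj_mmul)
    show "mm (P 1) (mm ?Q X) = mm ?Q X" using PQ by (simp flip: mmul_assoc)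
    show "app B (mm ?Q X) f1 = 0" using v(5) by (simp add: app_mmul)
    show "app B (Mz (mm ?Q X) (N - 1)) fN = 0" using v(6) MzQ by simp
    fix k assume "k \<in> {1..N-1}" then show "mm (Bp k) (mm ?Q X) = mm (mm ?Q X) (Bp k)" by (rule cm)
  qed
  show "valid (X - mm ?Q X)"
    unfolding valid_def
  proof (intro conjI ballI)
    show "X - mm ?Q X \<in> hops B" by (intro hops_diff hops_mmul Qh v(1))
    show "adj (X - mm ?Q X) = X - mm ?Q X" using c v(2) Bp_adj by (simp add: adj_mmul adj_diff)
    show "mm (P 1) (X - mm ?Q X) = X - mm ?Q X" using PQ v(3) by (simp add: mmul_diff_right flip: mmul_assoc)
    show "app B (X - mm ?Q X) f1 = 0" using v(5) by (simp add: app_mmul app_diff)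
    show "app B (Mz (X - mm ?Q X) (N - 1)) fN = 0"
      using v(6) MzQ by (simp add: Mz_def mmul_diff_left mmul_diff_right app_diff)
    fix k assume k: "k \<in> {1..N-1}"
    show "mm (Bp k) (X - mm ?Q X) = mm (X - mm ?Q X) (Bp k)"
      using cm[OF k] v(7)[OF k] by (simp add: mmul_diff_left mmul_diff_right)
  qed
  have "mm (mm ?Q X) (adj ?Q) = mm ?Q (mm X ?Q)" using Bp_adj by (simp add: mmul_assoc)
  also have "\<dots> = mm ?Q (mm ?Q X)" using c by simp
  also have "\<dots> = mm (mm ?Q ?Q) X" by (simp add: mmul_assoc)
  also have "\<dots> = mm ?Q X" using QQ by simp
  finally have e1: "mm ?Q X = mm (mm ?Q X) (adj ?Q)" by simp
  show "psd B (mm ?Q X)" using psd_conj[OF p Qh] e1 by simp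
  have QQX: "mm ?Q (mm ?Q X) = mm ?Q X" using QQ by (simp flip: mmul_assoc)
  let ?D = "P 1 - ?Q"
  have Dh: "?D \<in> hops B" using N2 by (intro hops_diff hops_P Qh) auto
  have "mm (mm ?D X) (adj ?D) = X - mm ?Q X"
  proof -
    have aD: "adj ?D = ?D" by (simp add: adj_diff adj_Pk Bp_adj)
    have "mm (mm ?D X) ?D = mm (mm (P 1) X) (P 1) - mm (mm (P 1) X) ?Q - mm (mm ?Q X) (P 1) + mm (mm ?Q X) ?Q"
      by (simp add: mmul_diff_left mmul_diff_right)
    also have "\<dots> = X - mm ?Q X"
      using v(3,4) QP QQ c QQX by (simp add: mmul_assoc flip: c)
    finally show ?thesis using aD by simp
  qed
  then show "psd B (X - mm ?Q X)" using psd_conj[OF p Dh] by simp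
qed

end

context model begin

lemma valid_sub:
  assumes V: "valid X" and p: "psd B X" and mu: "\<mu> \<in> hops B" "psd B \<mu>"
    and inh: "\<And>v. v \<in> hvecs B \<Longrightarrow> app B X v = 0 \<Longrightarrow> app B \<mu> v = 0"
    and cs: "\<And>m. m \<in> {1..N-1} \<Longrightarrow> mm (Bp m) X = X \<or> mm (Bp m) X = 0"
  shows "valid \<mu>"
proof -
  note v = valid_props[OF V]
  have a: "adj \<mu> = \<mu>" by (rule psd_herm[OF mu finB])
  have colX: "X i j = 0" if "j \<notin> E 1" for i j
  proof -
    have "X i j = mm X (P 1) i j" using v(4) by simp
    also have "\<dots> = 0" using that E_sub[of 1] N2 by (simp add: Pk_right[OF _ finB])
    finally show ?thesis .
  qed
  have colmu: "\<mu> i j = 0" if "j \<in> B" "j \<notin> E 1" for i j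
  proof -
    have "app B X (ket j) = 0" using that finB by (auto simp: app_ket colX fun_eq_iff)
    then have "app B \<mu> (ket j) = 0" by (intro inh ket_hvecs that)
    then show ?thesis using that finB by (simp add: app_ket fun_eq_iff)
  qed
  have rowmu: "rowsin (E 1) \<mu>"
    unfolding rowsin_def
  proof (intro allI impI)
    fix i j assume i: "i \<notin> E 1"
    show "\<mu> i j = 0"
    proof (cases "i \<in> B")
      case True
      have "\<mu> i j = cnj (\<mu> j i)" using fun_cong[OF fun_cong[OF a, of i], of j] by (simp add: adj_def)
      then show ?thesis using colmu[OF True i] by simp
    next
      case False then show ?thesis using mu(1) by (simp add: hops_def)
    qed
  qed
  have P1mu: "mm (P 1) \<mu> = \<mu>" using E_sub[of 1] N2 by (intro Pk_left_id finB rowmu) auto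
  have muP1: "mm \<mu> (P 1) = \<mu>" using P1mu a by (metis adj_Pk adj_mmul)
  have f1: "app B \<mu> f1 = 0" by (intro inh hvecs_f1 v(5))
  have fN: "app B (Mz \<mu> (N - 1)) fN = 0"
  proof -
    let ?z = "zp (N - 1)"
    define u where "u = app B (adj ?z) fN"
    have zh: "?z \<in> hops B" using zp_hops[of "N - 1"] N2 by simp
    have uh: "u \<in> hvecs B" unfolding u_def by (intro hvecs_app hops_adj zh)
    have "inner_h B u (app B X u) = inner_h B fN (app B (Mz X (N - 1)) fN)"
      unfolding u_def Mz_def by (simp add: app_mmul inner_adj)
    also have "\<dots> = 0" using v(6) by simp
    finally have "app B X u = 0" by (rule psd_kernel[OF v(1) p finB uh])
    then have "app B \<mu> u = 0" by (rule inh[OF uh])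
    then show ?thesis unfolding Mz_def u_def by (simp add: app_mmul)
  qed
  have comm: "mm (Bp m) \<mu> = mm \<mu> (Bp m)" if m: "m \<in> {1..N-1}" for m
  proof -
    have mN: "m < N" using m by auto
    have Qh: "Bp m \<in> hops B" by (rule Bp_hops[OF mN])
    have XQ: "mm X (Bp m) = adj (mm (Bp m) X)" using v(2) Bp_adj by (simp add: adj_mmul)
    show ?thesis
    proof (cases "mm (Bp m) X = X")
      case True
      then have XQ': "mm X (Bp m) = X" using XQ v(2) by simp
      let ?D = "P 1 - Bp m"
      have Dh: "?D \<in> hops B" using N2 by (intro hops_diff hops_P Qh) auto
      have "mm \<mu> ?D = 0"
      proof (rule cols_zero[OF finB mu(1) Dh])
        fix j assume j: "j \<in> B"
        have "app B X (app B ?D (ket j)) = app B (mm X ?D) (ket j)" by (simp add: app_mmul)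
        also have "mm X ?D = 0" using v(4) XQ' by (simp add: mmul_diff_right)
        finally have "app B X (app B ?D (ket j)) = 0" by (simp only: app_zero)
        then show "app B \<mu> (app B ?D (ket j)) = 0" by (intro inh hvecs_app Dh)
      qed
      then have "mm \<mu> (Bp m) = \<mu>" using muP1 by (simp add: mmul_diff_right)
      moreover then have "mm (Bp m) \<mu> = \<mu>" using a Bp_adj by (metis adj_mmul)
      ultimately show ?thesis by simp
    next
      case False
      then have Q0: "mm (Bp m) X = 0" using cs[OF m] by simp
      then have XQ0: "mm X (Bp m) = 0" using XQ by simp
      have "mm \<mu> (Bp m) = 0"
      proof (rule cols_zero[OF finB mu(1) Qh])
        fix j assume j: "j \<in> B"
        have "app B X (app B (Bp m) (ket j)) = 0" using XQ0 by (simp flip: app_mmul)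
        then show "app B \<mu> (app B (Bp m) (ket j)) = 0" by (intro inh hvecs_app Qh)
      qed
      moreover then have "mm (Bp m) \<mu> = 0" using a Bp_adj by (metis adj_mmul adj_zero)
      ultimately show ?thesis by simp
    qed
  qed
  show ?thesis unfolding valid_def using mu(1) a P1mu f1 fN comm by auto
qed

end

context model begin

lemma inv_props:
  assumes "invariant_state N n \<Gamma> \<gamma> \<sigma>"
  shows "\<sigma> \<in> hops B" "psd B \<sigma>" "trace_h B \<sigma> = 1" "Lgen N n \<Gamma> \<gamma> \<sigma> = 0"
  using assms unfolding invariant_state_def is_state_alt by (auto simp: zero_fun_def)

lemma bl_psd: "\<sigma> \<in> hops B \<Longrightarrow> psd B \<sigma> \<Longrightarrow> psd B (bl \<sigma> 1)"
  using psd_conj[of B \<sigma> "P 1"] hops_P[of 1] N2 unfolding bl_def by (simp add: adj_Pk mmul_assoc)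

lemma bl_hops: "\<sigma> \<in> hops B \<Longrightarrow> bl \<sigma> 1 \<in> hops B"
  unfolding bl_def using N2 by (intro hops_mmul hops_P) auto

lemma ket_vec_zero: "app B \<sigma> v = 0 \<Longrightarrow> app B (opscale c \<sigma>) v = 0"
  by (simp add: app_scale fun_eq_iff)

lemma main:
  assumes inv: "invariant_state N n \<Gamma> \<gamma> \<rho>"
    and sup: "supported_on B \<rho> (Vsub N n \<inter> ortho_compl B (Wfree N n \<Gamma>))"
  shows "invariant_extremal N n \<Gamma> \<gamma> \<rho> \<longleftrightarrow>
         extremal_state B (opscale (inverse (trace_h B (mm (R 1) \<rho>))) (mm (R 1) \<rho>))"
proof -
  note rp = inv_props[OF inv]
  have S: "is_state B \<rho>" using inv unfolding invariant_state_def by simp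
  note ex = hyp_extract[OF S sup]
  note g = good[OF rp(1,2,4) ex]
  define X where "X = bl \<rho> 1"
  have rep: "\<rho> = Lift X" using g(3) unfolding X_def .
  have V: "valid X" using g(4) unfolding X_def .
  have W1: "mm (R 1) X = X" using g(2) unfolding X_def .
  have Xh: "X \<in> hops B" unfolding X_def by (rule bl_hops[OF rp(1)])
  have Xp: "psd B X" unfolding X_def by (rule bl_psd[OF rp(1,2)])
  have Xnz: "X \<noteq> 0"
  proof
    assume "X = 0"
    then have "\<rho> = 0" using rep Lift_zero by simp
    then show False using rp(3) by simp
  qed
  define a where "a = Re (trace_h B X)"
  have a: "a > 0" "trace_h B X = complex_of_real a" using tr_pos[OF finB Xh Xp Xnz] a_def by auto
  have tauX: "mm (R 1) \<rho> = X" by (rule tau_eq[OF rep V W1])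
  define \<tau> where "\<tau> = opscale (complex_of_real (inverse a)) X"
  have tau_form: "opscale (inverse (trace_h B (mm (R 1) \<rho>))) (mm (R 1) \<rho>) = \<tau>"
    unfolding tauX a(2) \<tau>_def by simp
  have Xtau: "X = opscale (complex_of_real a) \<tau>" unfolding \<tau>_def using a(1) by simp
  have tau_state: "is_state B \<tau>" unfolding \<tau>_def by (rule state_scale[OF Xh Xp a(2) a(1)])
  have rho_inh: "app B \<sigma> v = 0"
    if "invariant_state N n \<Gamma> \<gamma> \<sigma>" "invariant_state N n \<Gamma> \<gamma> \<sigma>'" "0 < t" "t < 1"
       "\<rho> = convex_comb t \<sigma> \<sigma>'" "v \<in> hvecs B" "app B \<rho> v = 0" for \<sigma> \<sigma>' t v
    using inherit[OF finB inv_props(1,2)[OF that(1)] inv_props(1,2)[OF that(2)] that(3,4,6)] that(5,7) by simp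
  have rho_inh': "app B \<sigma>' v = 0"
    if "invariant_state N n \<Gamma> \<gamma> \<sigma>" "invariant_state N n \<Gamma> \<gamma> \<sigma>'" "0 < t" "t < 1"
       "\<rho> = convex_comb t \<sigma> \<sigma>'" "v \<in> hvecs B" "app B \<rho> v = 0" for \<sigma> \<sigma>' t v
    using inherit[OF finB inv_props(1,2)[OF that(1)] inv_props(1,2)[OF that(2)] that(3,4,6)] that(5,7) by simp
  have D1h: "P 1 - R 1 \<in> hops B" using N2 by (intro hops_diff hops_P hops_R) auto
  have good_sub: "mm \<sigma> (P 1 - R 1) = 0 \<and> app B \<sigma> (ket Pl) = 0 \<and> app B \<sigma> (ket Mn) = 0"
    if I: "invariant_state N n \<Gamma> \<gamma> \<sigma>" and kk: "\<And>v. v \<in> hvecs B \<Longrightarrow> app B \<rho> v = 0 \<Longrightarrow> app B \<sigma> v = 0" for \<sigma>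
  proof (intro conjI)
    show "mm \<sigma> (P 1 - R 1) = 0"
    proof (rule cols_zero[OF finB inv_props(1)[OF I] D1h])
      fix j assume j: "j \<in> B"
      have "app B \<rho> (app B (P 1 - R 1) (ket j)) = 0" using ex(3) by (simp flip: app_mmul)
      then show "app B \<sigma> (app B (P 1 - R 1) (ket j)) = 0" by (intro kk hvecs_app D1h)
    qed
    show "app B \<sigma> (ket Pl) = 0" by (intro kk ket_Pl_hv ex(1))
    show "app B \<sigma> (ket Mn) = 0" by (intro kk ket_Mn_hv ex(2))
  qed
  show ?thesis unfolding tau_form
  proof
    assume IE: "invariant_extremal N n \<Gamma> \<gamma> \<rho>"
    show "extremal_state B \<tau>"
      unfolding extremal_state_def
    proof (intro conjI notI tau_state)
      assume "\<exists>\<mu>1 \<mu>2 s. is_state B \<mu>1 \<and> is_state B \<mu>2 \<and> \<mu>1 \<noteq> \<mu>2 \<and> 0 < s \<and> s < 1 \<and> \<tau> = convex_comb s \<mu>1 \<mu>2"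
      then obtain \<mu>1 \<mu>2 s where mu: "is_state B \<mu>1" "is_state B \<mu>2" "\<mu>1 \<noteq> \<mu>2" "0 < s" "s < 1"
        "\<tau> = convex_comb s \<mu>1 \<mu>2" by blast
      have noIE: False if "invariant_state N n \<Gamma> \<gamma> \<sigma>1" "invariant_state N n \<Gamma> \<gamma> \<sigma>2" "\<sigma>1 \<noteq> \<sigma>2"
        "0 < t" "t < 1" "\<rho> = convex_comb t \<sigma>1 \<sigma>2" for \<sigma>1 \<sigma>2 t
        using IE that unfolding invariant_extremal_def by blast
      show False
      proof (cases "\<exists>m\<in>{1..N-1}. mm (Bp m) X \<noteq> X \<and> mm (Bp m) X \<noteq> 0")
        case True
        then obtain m where m: "m \<in> {1..N-1}" "mm (Bp m) X \<noteq> X" "mm (Bp m) X \<noteq> 0" by blast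
        have mN: "m < N" using m by auto
        define Y1 where "Y1 = mm (Bp m) X"
        define Y2 where "Y2 = X - Y1"
        have VY: "valid Y1" "valid Y2" "psd B Y1" "psd B Y2"
          using valid_Bp[OF V Xp m(1)] unfolding Y1_def Y2_def by auto
        have nz: "Y1 \<noteq> 0" "Y2 \<noteq> 0" using m unfolding Y1_def Y2_def by auto
        define l1 where "l1 = Re (trace_h B (Lift Y1))"
        define l2 where "l2 = Re (trace_h B (Lift Y2))"
        note s1 = Lift_state[OF VY(1,3) nz(1), folded l1_def]
        note s2 = Lift_state[OF VY(2,4) nz(2), folded l2_def]
        define \<sigma>1 where "\<sigma>1 = opscale (complex_of_real (inverse l1)) (Lift Y1)"
        define \<sigma>2 where "\<sigma>2 = opscale (complex_of_real (inverse l2)) (Lift Y2)"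
        have L1: "Lift Y1 = opscale (complex_of_real l1) \<sigma>1" unfolding \<sigma>1_def using s1(1) by simp
        have L2: "Lift Y2 = opscale (complex_of_real l2) \<sigma>2" unfolding \<sigma>2_def using s2(1) by simp
        have rs: "\<rho> = Lift Y1 + Lift Y2" unfolding rep Y2_def by (simp flip: Lift_add)
        have "1 = complex_of_real l1 + complex_of_real l2"
          using rp(3) s1(2) s2(2) unfolding rs by (simp add: trace_add)
        then have l12: "l1 + l2 = 1" by (metis of_real_1 of_real_add of_real_eq_iff)
        have l2e: "l2 = 1 - l1" using l12 by simp
        have cc: "\<rho> = convex_comb l1 \<sigma>1 \<sigma>2"
          unfolding convex_comb_eq rs L1 L2 l2e ..
        have ne: "\<sigma>1 \<noteq> \<sigma>2"
        proof
          assume eq: "\<sigma>1 = \<sigma>2"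
          have b1: "bl \<sigma>1 1 = opscale (complex_of_real (inverse l1)) Y1" using s1(4) unfolding \<sigma>1_def .
          have b2: "bl \<sigma>2 1 = opscale (complex_of_real (inverse l2)) Y2" using s2(4) unfolding \<sigma>2_def .
          have QY1: "mm (Bp m) Y1 = Y1" unfolding Y1_def using Bp_idem[OF mN] by (simp flip: mmul_assoc)
          have QY2: "mm (Bp m) Y2 = 0" unfolding Y2_def using QY1 by (simp add: mmul_diff_right Y1_def)
          have "opscale (complex_of_real (inverse l1)) Y1 = opscale (complex_of_real (inverse l2)) Y2"
            using b1 b2 eq by simp
          then have "mm (Bp m) (opscale (complex_of_real (inverse l1)) Y1) = mm (Bp m) (opscale (complex_of_real (inverse l2)) Y2)"
            by simp
          then have "opscale (complex_of_real (inverse l1)) Y1 = 0" by (simp add: mmul_scale_right QY1 QY2)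
          then have "opscale (complex_of_real l1) (opscale (complex_of_real (inverse l1)) Y1) = 0" by simp
          then have "Y1 = 0" using s1(1) by simp
          then show False using nz by simp
        qed
        show False by (rule noIE[OF s1(3)[folded \<sigma>1_def] s2(3)[folded \<sigma>2_def] ne _ _ cc]) (use s1(1) s2(1) l12 in auto)
      next
        case False
        then have cs: "\<And>m. m \<in> {1..N-1} \<Longrightarrow> mm (Bp m) X = X \<or> mm (Bp m) X = 0" by blast
        have muh: "\<mu>1 \<in> hops B" "psd B \<mu>1" "trace_h B \<mu>1 = 1" "\<mu>2 \<in> hops B" "psd B \<mu>2" "trace_h B \<mu>2 = 1"
          using mu unfolding is_state_alt by auto
        have inhX: "app B \<mu>1 v = 0 \<and> app B \<mu>2 v = 0" if "v \<in> hvecs B" "app B X v = 0" for v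
        proof -
          have "app B \<tau> v = 0" unfolding \<tau>_def by (rule ket_vec_zero[OF that(2)])
          then show ?thesis using inherit[OF finB muh(1,2) muh(4,5) mu(4,5) that(1)] mu(6) by simp
        qed
        have Vm1: "valid \<mu>1" by (rule valid_sub[OF V Xp muh(1,2) _ cs]) (use inhX in blast)
        have Vm2: "valid \<mu>2" by (rule valid_sub[OF V Xp muh(4,5) _ cs]) (use inhX in blast)
        have nz: "\<mu>1 \<noteq> 0" "\<mu>2 \<noteq> 0" using muh by auto
        define l1 where "l1 = Re (trace_h B (Lift \<mu>1))"
        define l2 where "l2 = Re (trace_h B (Lift \<mu>2))"
        note s1 = Lift_state[OF Vm1 muh(2) nz(1), folded l1_def]
        note s2 = Lift_state[OF Vm2 muh(5) nz(2), folded l2_def]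
        define \<sigma>1 where "\<sigma>1 = opscale (complex_of_real (inverse l1)) (Lift \<mu>1)"
        define \<sigma>2 where "\<sigma>2 = opscale (complex_of_real (inverse l2)) (Lift \<mu>2)"
        have L1: "Lift \<mu>1 = opscale (complex_of_real l1) \<sigma>1" unfolding \<sigma>1_def using s1(1) by simp
        have L2: "Lift \<mu>2 = opscale (complex_of_real l2) \<sigma>2" unfolding \<sigma>2_def using s2(1) by simp
        define t where "t = a * s * l1"
        have rs: "\<rho> = opscale (complex_of_real t) \<sigma>1 + opscale (complex_of_real (a * (1 - s) * l2)) \<sigma>2"
          unfolding rep Xtau mu(6) convex_comb_eq t_def
          by (simp add: Lift_scale Lift_add L1 L2 opscale_add)
        have "1 = complex_of_real t + complex_of_real (a * (1 - s) * l2)"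
          using rp(3) inv_props(3)[OF s1(3)] inv_props(3)[OF s2(3)]
          unfolding rs \<sigma>1_def[symmetric] \<sigma>2_def[symmetric] by (simp add: trace_add trace_scale)
        then have tt: "t + a * (1 - s) * l2 = 1" by (metis of_real_1 of_real_add of_real_eq_iff)
        have tp: "0 < t" "0 < a * (1 - s) * l2" unfolding t_def using a(1) mu(4,5) s1(1) s2(1) by auto
        have te: "a * (1 - s) * l2 = 1 - t" using tt by simp
        have cc: "\<rho> = convex_comb t \<sigma>1 \<sigma>2" unfolding convex_comb_eq rs te ..
        have ne: "\<sigma>1 \<noteq> \<sigma>2"
        proof
          assume eq: "\<sigma>1 = \<sigma>2"
          have b1: "bl \<sigma>1 1 = opscale (complex_of_real (inverse l1)) \<mu>1" using s1(4) unfolding \<sigma>1_def .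
          have b2: "bl \<sigma>2 1 = opscale (complex_of_real (inverse l2)) \<mu>2" using s2(4) unfolding \<sigma>2_def .
          have e: "opscale (complex_of_real (inverse l1)) \<mu>1 = opscale (complex_of_real (inverse l2)) \<mu>2"
            using b1 b2 eq by simp
          have "complex_of_real (inverse l1) = complex_of_real (inverse l2)"
            using arg_cong[OF e, of "trace_h B"] muh by (simp add: trace_scale)
          then have ll: "l1 = l2" by simp
          have "opscale (complex_of_real l1) (opscale (complex_of_real (inverse l1)) \<mu>1)
              = opscale (complex_of_real l1) (opscale (complex_of_real (inverse l2)) \<mu>2)" using e by simp
          then have "\<mu>1 = \<mu>2" using ll s1(1) by simp
          then show False using mu(3) by simp
        qed
        show False by (rule noIE[OF s1(3)[folded \<sigma>1_def] s2(3)[folded \<sigma>2_def] ne tp(1) _ cc]) (use tt tp in linarith)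
      qed
    qed
  next
    assume E: "extremal_state B \<tau>"
    show "invariant_extremal N n \<Gamma> \<gamma> \<rho>"
      unfolding invariant_extremal_def
    proof (intro conjI notI inv)
      assume "\<exists>\<sigma>1 \<sigma>2 t. invariant_state N n \<Gamma> \<gamma> \<sigma>1 \<and> invariant_state N n \<Gamma> \<gamma> \<sigma>2 \<and> \<sigma>1 \<noteq> \<sigma>2 \<and>
          0 < t \<and> t < 1 \<and> \<rho> = convex_comb t \<sigma>1 \<sigma>2"
      then obtain \<sigma>1 \<sigma>2 t where sg: "invariant_state N n \<Gamma> \<gamma> \<sigma>1" "invariant_state N n \<Gamma> \<gamma> \<sigma>2" "\<sigma>1 \<noteq> \<sigma>2"
        "0 < t" "t < 1" "\<rho> = convex_comb t \<sigma>1 \<sigma>2" by blast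
      note p1 = inv_props[OF sg(1)] and p2 = inv_props[OF sg(2)]
      have k1: "app B \<sigma>1 v = 0" if "v \<in> hvecs B" "app B \<rho> v = 0" for v
        by (rule rho_inh[OF sg(1,2,4,5,6) that])
      have k2: "app B \<sigma>2 v = 0" if "v \<in> hvecs B" "app B \<rho> v = 0" for v
        by (rule rho_inh'[OF sg(1,2,4,5,6) that])
      note gs1 = good_sub[OF sg(1) k1] and gs2 = good_sub[OF sg(2) k2]
      note g1 = good[OF p1(1,2,4) gs1[THEN conjunct2, THEN conjunct1] gs1[THEN conjunct2, THEN conjunct2] gs1[THEN conjunct1]]
      note g2 = good[OF p2(1,2,4) gs2[THEN conjunct2, THEN conjunct1] gs2[THEN conjunct2, THEN conjunct2] gs2[THEN conjunct1]]
      define X1 where "X1 = bl \<sigma>1 1"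
      define X2 where "X2 = bl \<sigma>2 1"
      have r1: "\<sigma>1 = Lift X1" using g1(3) unfolding X1_def .
      have r2: "\<sigma>2 = Lift X2" using g2(3) unfolding X2_def .
      have X1p: "X1 \<in> hops B" "psd B X1" unfolding X1_def by (rule bl_hops[OF p1(1)], rule bl_psd[OF p1(1,2)])
      have X2p: "X2 \<in> hops B" "psd B X2" unfolding X2_def by (rule bl_hops[OF p2(1)], rule bl_psd[OF p2(1,2)])
      have X1nz: "X1 \<noteq> 0" using r1 Lift_zero p1(3) by force
      have X2nz: "X2 \<noteq> 0" using r2 Lift_zero p2(3) by force
      define a1 where "a1 = Re (trace_h B X1)"
      define a2 where "a2 = Re (trace_h B X2)"
      have a1: "a1 > 0" "trace_h B X1 = complex_of_real a1" using tr_pos[OF finB X1p X1nz] a1_def by auto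
      have a2: "a2 > 0" "trace_h B X2 = complex_of_real a2" using tr_pos[OF finB X2p X2nz] a2_def by auto
      have Xc: "X = opscale (complex_of_real t) X1 + opscale (complex_of_real (1 - t)) X2"
        unfolding X_def X1_def X2_def sg(6) convex_comb_eq by (simp add: bl_add bl_scale)
      have "complex_of_real a = complex_of_real (t * a1 + (1 - t) * a2)"
        using arg_cong[OF Xc, of "trace_h B"] a(2) a1(2) a2(2) by (simp add: trace_add trace_scale)
      then have aa: "a = t * a1 + (1 - t) * a2" by (simp only: of_real_eq_iff)
      define \<tau>1 where "\<tau>1 = opscale (complex_of_real (inverse a1)) X1"
      define \<tau>2 where "\<tau>2 = opscale (complex_of_real (inverse a2)) X2"
      have ts1: "is_state B \<tau>1" unfolding \<tau>1_def by (rule state_scale[OF X1p a1(2) a1(1)])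
      have ts2: "is_state B \<tau>2" unfolding \<tau>2_def by (rule state_scale[OF X2p a2(2) a2(1)])
      define s where "s = t * a1 / a"
      have h1: "(1 - t) * a2 > 0" using sg(5) a2(1) by simp
      have h2: "t * a1 > 0" using sg(4) a1(1) by simp
      have h3: "t * a1 < a" using aa h1 by linarith
      have sp: "0 < s" "s < 1" unfolding s_def using h2 h3 a(1) by auto
      have e1: "s * inverse a1 = inverse a * t" unfolding s_def using a1(1) a(1) by (simp add: field_simps)
      have am: "a - t * a1 = (1 - t) * a2" using aa by simp
      have "1 - s = (a - t * a1) / a" unfolding s_def using a(1) by (simp add: field_simps)
      then have e2: "(1 - s) * inverse a2 = inverse a * (1 - t)" unfolding am using a2(1) a(1)
        by (simp add: field_simps)
      have tc: "\<tau> = convex_comb s \<tau>1 \<tau>2"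
      proof (intro ext)
        fix i j
        have "\<tau> i j = complex_of_real (inverse a * t) * X1 i j + complex_of_real (inverse a * (1 - t)) * X2 i j"
          unfolding \<tau>_def Xc by (simp add: algebra_simps)
        also have "\<dots> = convex_comb s \<tau>1 \<tau>2 i j"
          unfolding e1[symmetric] e2[symmetric] convex_comb_def \<tau>1_def \<tau>2_def by (simp add: algebra_simps)
        finally show "\<tau> i j = convex_comb s \<tau>1 \<tau>2 i j" .
      qed
      have teq: "\<tau>1 = \<tau>2" using E ts1 ts2 sp tc unfolding extremal_state_def by blast
      have X1e: "X1 = opscale (complex_of_real a1) \<tau>1" unfolding \<tau>1_def using a1(1) by simp
      have X2e: "X2 = opscale (complex_of_real a2) \<tau>1" unfolding teq \<tau>2_def using a2(1) by simp
      have c1: "complex_of_real a1 * trace_h B (Lift \<tau>1) = 1" using p1(3) unfolding r1 X1e Lift_scale trace_scale .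
      have c2: "complex_of_real a2 * trace_h B (Lift \<tau>1) = 1" using p2(3) unfolding r2 X2e Lift_scale trace_scale .
      have Tnz: "trace_h B (Lift \<tau>1) \<noteq> 0" using c1 by auto
      have "(complex_of_real a1 - complex_of_real a2) * trace_h B (Lift \<tau>1) = 0"
        using c1 c2 by (simp add: left_diff_distrib)
      then have "complex_of_real a1 = complex_of_real a2" using Tnz by simp
      then have "a1 = a2" by simp
      then have "\<sigma>1 = \<sigma>2" unfolding r1 r2 X1e X2e by simp
      then show False using sg(3) by simp
    qed
  qed
qed

end

theorem lemma3p20:
  fixes N :: nat and n :: "nat \<Rightarrow> nat"
    and \<Gamma> \<gamma> :: "sgn \<Rightarrow> freq \<Rightarrow> real" and \<rho> :: cop
  assumes "N \<ge> 2"
    and "\<forall>k. 1 \<le> k \<and> k < N \<longrightarrow> n (k + 1) \<le> n k"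
    and "n N \<ge> 1"
    and "\<forall>w\<in>freqs N. \<forall>e. \<Gamma> e w > 0"
    and "invariant_state N n \<Gamma> \<gamma> \<rho>"
    and "supported_on (basis N n) \<rho> (Vsub N n \<inter> ortho_compl (basis N n) (Wfree N n \<Gamma>))"
  shows "invariant_extremal N n \<Gamma> \<gamma> \<rho> \<longleftrightarrow>
         extremal_state (basis N n)
           (opscale (inverse (trace_h (basis N n) (mmul (basis N n) (Zabs N n 1) \<rho>)))
                    (mmul (basis N n) (Zabs N n 1) \<rho>))"
proof -
  interpret model N n \<Gamma> \<gamma> using assms(1-4) by unfold_locales
  show ?thesis by (rule main[OF assms(5) assms(6)])
qed

end
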